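(* Let $k$ be a field, $\Delta$ a finite connected quiver without oriented cycles, and $M$ a generic $k\Delta$-module. If $i$ is a sink of $\Delta$, then $\operatorname{\bold{Dim}}\sigma_i M=\sigma_i\operatorname{\bold{Dim}}M$. If $i$ is a source of $\Delta$, then $\operatorname{\bold{Dim}}\sigma_i^- M=\sigma_i\operatorname{\bold{Dim}}M$.
   Context: Modules over $k\Delta$ are representations $M=(M_i,M_\alpha)$ of $\Delta$, possibly infinite-dimensional. For an arrow $\alpha$, $s(\alpha)$ and $t(\alpha)$ denote its start and terminal vertex. $E(M)=\operatorname{End}(M)^{\mathrm{op}}$; $M$ and each $M_i$ are $E(M)$-modules. $M$ is endo-finite if it has finite length as $E(M)$-module, and generic if it is indecomposable, endo-finite and of infinite length. For endo-finite $M$ the endo-length vector $\operatorname{\bold{Dim}}M\in\mathbb Z^{\Delta_0}$ is given by $(\operatorname{\bold{Dim}}M)_i=$ length of $M_i$ as $E(M)$-module. For a vertex $i$, $\sigma_i\Delta$ is the quiver obtained by reversing all arrows incident with $i$. For a sink $i$, the reflection functor $\sigma_i$ sends $M$ to the representation of $\sigma_i\Delta$ with $(\sigma_iM)_j=M_j$ for $j\neq i$ and $(\sigma_iM)_i$ the kernel of the map $\bigoplus_{t(\alpha)=i}M_{s(\alpha)}\to M_i$ with components $M_\alpha$, the reversed arrows acting by the components of the inclusion; dually for a source $i$, $\sigma_i^-M$ has $(\sigma_i^-M)_i$ the cokernel of $M_i\to\bigoplus_{s(\alpha)=i}M_{t(\alpha)}$. The reflection $\sigma_i\colon\mathbb Z^{\Delta_0}\to\mathbb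 Z^{\Delta_0}$ is $(\sigma_ix)_j=x_j$ for $j\ne i$ and $(\sigma_ix)_i=-x_i+\sum_\alpha x_{j(\alpha)}$, the sum over arrows $\alpha$ incident with $i$ and $j(\alpha)$ the other endpoint of $\alpha$. *)

theory Defs
  imports Main
begin

text \<open>A representation over a field 'k is given by subspaces
Mv j of the ambient k-vector space of functions 'w => 'k (every k-vector space,
possibly infinite-dimensional, is isomorphic to such a subspace), together with
maps Ma alpha, k-linear from Mv (s alpha) to Mv (t alpha).\<close>

definition is_subspace :: "('w \<Rightarrow> 'k::field) set \<Rightarrow> bool" where
  "is_subspace S \<longleftrightarrow> (\<lambda>_. 0) \<in> S \<and> (\<forall>x\<in>S. \<forall>y\<in>S. (\<lambda>u. x u + y u) \<in> S)
     \<and> (\<forall>c. \<forall>x\<in>S. (\<lambda>u. c * x u) \<in> S)"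

definition lin_on :: "('w \<Rightarrow> 'k::field) set \<Rightarrow> (('w \<Rightarrow> 'k) \<Rightarrow> ('z \<Rightarrow> 'k)) \<Rightarrow> bool" where
  "lin_on S f \<longleftrightarrow> (\<forall>x\<in>S. \<forall>y\<in>S. f (\<lambda>u. x u + y u) = (\<lambda>u. f x u + f y u))
     \<and> (\<forall>c. \<forall>x\<in>S. f (\<lambda>u. c * x u) = (\<lambda>u. c * f x u))"

definition finite_quiver :: "'v set \<Rightarrow> 'a set \<Rightarrow> ('a \<Rightarrow> 'v) \<Rightarrow> ('a \<Rightarrow> 'v) \<Rightarrow> bool" where
  "finite_quiver V A s t \<longleftrightarrow> finite V \<and> finite A \<and> (\<forall>\<alpha>\<in>A. s \<alpha> \<in> V \<and> t \<alpha> \<in> V)"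

definition connected_quiver :: "'v set \<Rightarrow> 'a set \<Rightarrow> ('a \<Rightarrow> 'v) \<Rightarrow> ('a \<Rightarrow> 'v) \<Rightarrow> bool" where
  "connected_quiver V A s t \<longleftrightarrow> V \<noteq> {} \<and>
     (\<forall>u\<in>V. \<forall>v\<in>V. (\<lambda>x y. \<exists>\<alpha>\<in>A. (s \<alpha> = x \<and> t \<alpha> = y) \<or> (s \<alpha> = y \<and> t \<alpha> = x))\<^sup>*\<^sup>* u v)"

definition no_oriented_cycles :: "'v set \<Rightarrow> 'a set \<Rightarrow> ('a \<Rightarrow> 'v) \<Rightarrow> ('a \<Rightarrow> 'v) \<Rightarrow> bool" where
  "no_oriented_cycles V A s t \<longleftrightarrow> (\<forall>v. \<not> (\<lambda>x y. \<exists>\<alpha>\<in>A. s \<alpha> = x \<and> t \<alpha> = y)\<^sup>+\<^sup>+ v v)"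

definition is_sink :: "'v set \<Rightarrow> 'a set \<Rightarrow> ('a \<Rightarrow> 'v) \<Rightarrow> ('a \<Rightarrow> 'v) \<Rightarrow> 'v \<Rightarrow> bool" where
  "is_sink V A s t i \<longleftrightarrow> i \<in> V \<and> (\<forall>\<alpha>\<in>A. s \<alpha> \<noteq> i)"

definition is_source :: "'v set \<Rightarrow> 'a set \<Rightarrow> ('a \<Rightarrow> 'v) \<Rightarrow> ('a \<Rightarrow> 'v) \<Rightarrow> 'v \<Rightarrow> bool" where
  "is_source V A s t i \<longleftrightarrow> i \<in> V \<and> (\<forall>\<alpha>\<in>A. t \<alpha> \<noteq> i)"

definition rev_s :: "'v \<Rightarrow> ('a \<Rightarrow> 'v) \<Rightarrow> ('a \<Rightarrow> 'v) \<Rightarrow> 'a \<Rightarrow> 'v" where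
  "rev_s i s t \<alpha> = (if s \<alpha> = i \<or> t \<alpha> = i then t \<alpha> else s \<alpha>)"

definition rev_t :: "'v \<Rightarrow> ('a \<Rightarrow> 'v) \<Rightarrow> ('a \<Rightarrow> 'v) \<Rightarrow> 'a \<Rightarrow> 'v" where
  "rev_t i s t \<alpha> = (if s \<alpha> = i \<or> t \<alpha> = i then s \<alpha> else t \<alpha>)"

definition refl_vec :: "'v set \<Rightarrow> 'a set \<Rightarrow> ('a \<Rightarrow> 'v) \<Rightarrow> ('a \<Rightarrow> 'v) \<Rightarrow> 'v \<Rightarrow> ('v \<Rightarrow> int) \<Rightarrow> ('v \<Rightarrow> int)" where
  "refl_vec V A s t i x = (\<lambda>j. if j = i then
      - x i + (\<Sum>\<alpha>\<in>{\<alpha>\<in>A. s \<alpha> = i \<or> t \<alpha> = i}. x (if s \<alpha> = i then t \<alpha> else s \<alpha>))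
    else x j)"

definition is_rep :: "'v set \<Rightarrow> 'a set \<Rightarrow> ('a \<Rightarrow> 'v) \<Rightarrow> ('a \<Rightarrow> 'v)
   \<Rightarrow> ('v \<Rightarrow> ('w \<Rightarrow> 'k::field) set) \<Rightarrow> ('a \<Rightarrow> ('w \<Rightarrow> 'k) \<Rightarrow> ('w \<Rightarrow> 'k)) \<Rightarrow> bool" where
  "is_rep V A s t Mv Ma \<longleftrightarrow> (\<forall>j\<in>V. is_subspace (Mv j)) \<and>
     (\<forall>\<alpha>\<in>A. lin_on (Mv (s \<alpha>)) (Ma \<alpha>) \<and> Ma \<alpha> ` Mv (s \<alpha>) \<subseteq> Mv (t \<alpha>))"

text \<open>Families (elements of the direct sum of the Mv j, j in V).\<close>
definition fzero :: "'v \<Rightarrow> 'w \<Rightarrow> 'k::field" where "fzero = (\<lambda>j u. 0)"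
definition fadd :: "('v \<Rightarrow> 'w \<Rightarrow> 'k::field) \<Rightarrow> ('v \<Rightarrow> 'w \<Rightarrow> 'k) \<Rightarrow> ('v \<Rightarrow> 'w \<Rightarrow> 'k)" where
  "fadd x y = (\<lambda>j u. x j u + y j u)"
definition fscale :: "'k::field \<Rightarrow> ('v \<Rightarrow> 'w \<Rightarrow> 'k) \<Rightarrow> ('v \<Rightarrow> 'w \<Rightarrow> 'k)" where
  "fscale c x = (\<lambda>j u. c * x j u)"

definition tot :: "'v set \<Rightarrow> ('v \<Rightarrow> ('w \<Rightarrow> 'k::field) set) \<Rightarrow> ('v \<Rightarrow> 'w \<Rightarrow> 'k) set" where
  "tot V Mv = {x. (\<forall>j\<in>V. x j \<in> Mv j) \<and> (\<forall>j. j \<notin> V \<longrightarrow> x j = (\<lambda>_. 0))}"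

definition fsubspace :: "('v \<Rightarrow> 'w \<Rightarrow> 'k::field) set \<Rightarrow> bool" where
  "fsubspace S \<longleftrightarrow> fzero \<in> S \<and> (\<forall>x\<in>S. \<forall>y\<in>S. fadd x y \<in> S) \<and> (\<forall>c. \<forall>x\<in>S. fscale c x \<in> S)"

text \<open>kDelta-submodules of M: closed under the idempotents e_j and the arrows.\<close>
definition ksub :: "'v set \<Rightarrow> 'a set \<Rightarrow> ('a \<Rightarrow> 'v) \<Rightarrow> ('a \<Rightarrow> 'v)
   \<Rightarrow> ('v \<Rightarrow> ('w \<Rightarrow> 'k::field) set) \<Rightarrow> ('a \<Rightarrow> ('w \<Rightarrow> 'k) \<Rightarrow> ('w \<Rightarrow> 'k)) \<Rightarrow> ('v \<Rightarrow> 'w \<Rightarrow> 'k) set \<Rightarrow> bool" where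
  "ksub V A s t Mv Ma S \<longleftrightarrow> S \<subseteq> tot V Mv \<and> fsubspace S \<and>
     (\<forall>j\<in>V. \<forall>x\<in>S. (\<lambda>l. if l = j then x j else (\<lambda>_. 0)) \<in> S) \<and>
     (\<forall>\<alpha>\<in>A. \<forall>x\<in>S. (\<lambda>l. if l = t \<alpha> then Ma \<alpha> (x (s \<alpha>)) else (\<lambda>_. 0)) \<in> S)"

text \<open>Endomorphisms of the representation; E(M) = End(M)^op acts on M and on each M_i.\<close>
definition endos :: "'v set \<Rightarrow> 'a set \<Rightarrow> ('a \<Rightarrow> 'v) \<Rightarrow> ('a \<Rightarrow> 'v)
   \<Rightarrow> ('v \<Rightarrow> ('w \<Rightarrow> 'k::field) set) \<Rightarrow> ('a \<Rightarrow> ('w \<Rightarrow> 'k) \<Rightarrow> ('w \<Rightarrow> 'k))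
   \<Rightarrow> ('v \<Rightarrow> ('w \<Rightarrow> 'k) \<Rightarrow> ('w \<Rightarrow> 'k)) set" where
  "endos V A s t Mv Ma = {\<phi>. (\<forall>j\<in>V. lin_on (Mv j) (\<phi> j) \<and> \<phi> j ` Mv j \<subseteq> Mv j) \<and>
     (\<forall>\<alpha>\<in>A. \<forall>x\<in>Mv (s \<alpha>). \<phi> (t \<alpha>) (Ma \<alpha> x) = Ma \<alpha> (\<phi> (s \<alpha>) x))}"

definition esub_tot :: "'v set \<Rightarrow> 'a set \<Rightarrow> ('a \<Rightarrow> 'v) \<Rightarrow> ('a \<Rightarrow> 'v)
   \<Rightarrow> ('v \<Rightarrow> ('w \<Rightarrow> 'k::field) set) \<Rightarrow> ('a \<Rightarrow> ('w \<Rightarrow> 'k) \<Rightarrow> ('w \<Rightarrow> 'k)) \<Rightarrow> ('v \<Rightarrow> 'w \<Rightarrow> 'k) set \<Rightarrow> bool" where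
  "esub_tot V A s t Mv Ma S \<longleftrightarrow> S \<subseteq> tot V Mv \<and> fsubspace S \<and>
     (\<forall>\<phi>\<in>endos V A s t Mv Ma. \<forall>x\<in>S. (\<lambda>j. if j \<in> V then \<phi> j (x j) else x j) \<in> S)"

definition esub :: "'v set \<Rightarrow> 'a set \<Rightarrow> ('a \<Rightarrow> 'v) \<Rightarrow> ('a \<Rightarrow> 'v)
   \<Rightarrow> ('v \<Rightarrow> ('w \<Rightarrow> 'k::field) set) \<Rightarrow> ('a \<Rightarrow> ('w \<Rightarrow> 'k) \<Rightarrow> ('w \<Rightarrow> 'k)) \<Rightarrow> 'v \<Rightarrow> ('w \<Rightarrow> 'k) set \<Rightarrow> bool" where
  "esub V A s t Mv Ma i U \<longleftrightarrow> U \<subseteq> Mv i \<and> is_subspace U \<and>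
     (\<forall>\<phi>\<in>endos V A s t Mv Ma. \<phi> i ` U \<subseteq> U)"

text \<open>Length of a module, via strictly increasing chains of submodules
  (P is the predicate "is a submodule").\<close>
definition has_chain :: "('m set \<Rightarrow> bool) \<Rightarrow> nat \<Rightarrow> bool" where
  "has_chain P n \<longleftrightarrow> (\<exists>U. (\<forall>j\<le>n. P (U j)) \<and> (\<forall>j<n. U j \<subset> U (Suc j)))"

definition finite_length :: "('m set \<Rightarrow> bool) \<Rightarrow> bool" where
  "finite_length P \<longleftrightarrow> (\<exists>N. \<forall>n. has_chain P n \<longrightarrow> n \<le> N)"

definition mod_length :: "('m set \<Rightarrow> bool) \<Rightarrow> nat" where
  "mod_length P = (GREATEST n. has_chain P n)"

definition indecomposable :: "'v set \<Rightarrow> 'a set \<Rightarrow> ('a \<Rightarrow> 'v) \<Rightarrow> ('a \<Rightarrow> 'v)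
   \<Rightarrow> ('v \<Rightarrow> ('w \<Rightarrow> 'k::field) set) \<Rightarrow> ('a \<Rightarrow> ('w \<Rightarrow> 'k) \<Rightarrow> ('w \<Rightarrow> 'k)) \<Rightarrow> bool" where
  "indecomposable V A s t Mv Ma \<longleftrightarrow> tot V Mv \<noteq> {fzero} \<and>
     \<not> (\<exists>S T. ksub V A s t Mv Ma S \<and> ksub V A s t Mv Ma T \<and> S \<noteq> {fzero} \<and> T \<noteq> {fzero}
          \<and> S \<inter> T = {fzero} \<and> tot V Mv = {fadd x y | x y. x \<in> S \<and> y \<in> T})"

definition endo_finite :: "'v set \<Rightarrow> 'a set \<Rightarrow> ('a \<Rightarrow> 'v) \<Rightarrow> ('a \<Rightarrow> 'v)
   \<Rightarrow> ('v \<Rightarrow> ('w \<Rightarrow> 'k::field) set) \<Rightarrow> ('a \<Rightarrow> ('w \<Rightarrow> 'k) \<Rightarrow> ('w \<Rightarrow> 'k)) \<Rightarrow> bool" where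
  "endo_finite V A s t Mv Ma \<longleftrightarrow> finite_length (esub_tot V A s t Mv Ma)"

definition generic :: "'v set \<Rightarrow> 'a set \<Rightarrow> ('a \<Rightarrow> 'v) \<Rightarrow> ('a \<Rightarrow> 'v)
   \<Rightarrow> ('v \<Rightarrow> ('w \<Rightarrow> 'k::field) set) \<Rightarrow> ('a \<Rightarrow> ('w \<Rightarrow> 'k) \<Rightarrow> ('w \<Rightarrow> 'k)) \<Rightarrow> bool" where
  "generic V A s t Mv Ma \<longleftrightarrow> is_rep V A s t Mv Ma \<and> indecomposable V A s t Mv Ma \<and>
     endo_finite V A s t Mv Ma \<and> \<not> finite_length (ksub V A s t Mv Ma)"

definition Dim :: "'v set \<Rightarrow> 'a set \<Rightarrow> ('a \<Rightarrow> 'v) \<Rightarrow> ('a \<Rightarrow> 'v)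
   \<Rightarrow> ('v \<Rightarrow> ('w \<Rightarrow> 'k::field) set) \<Rightarrow> ('a \<Rightarrow> ('w \<Rightarrow> 'k) \<Rightarrow> ('w \<Rightarrow> 'k)) \<Rightarrow> 'v \<Rightarrow> int" where
  "Dim V A s t Mv Ma = (\<lambda>i. if i \<in> V then int (mod_length (esub V A s t Mv Ma i)) else 0)"

text \<open>The reflected representation lives in the ambient space ('a option \<times> 'w) => 'k:
  index None carries a copy of the old ambient space, index Some alpha carries the
  alpha-component of the direct sum.\<close>
definition emb :: "('w \<Rightarrow> 'k::field) \<Rightarrow> ('a option \<times> 'w \<Rightarrow> 'k)" where
  "emb m = (\<lambda>(ob, u). case ob of None \<Rightarrow> m u | Some _ \<Rightarrow> 0)"

definition unemb :: "('a option \<times> 'w \<Rightarrow> 'k::field) \<Rightarrow> ('w \<Rightarrow> 'k)" where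
  "unemb f = (\<lambda>u. f (None, u))"

definition comp :: "'a \<Rightarrow> ('a option \<times> 'w \<Rightarrow> 'k::field) \<Rightarrow> ('w \<Rightarrow> 'k)" where
  "comp \<alpha> f = (\<lambda>u. f (Some \<alpha>, u))"

definition inj_comp :: "'a \<Rightarrow> ('w \<Rightarrow> 'k::field) \<Rightarrow> ('a option \<times> 'w \<Rightarrow> 'k)" where
  "inj_comp \<alpha> m = (\<lambda>(ob, u). if ob = Some \<alpha> then m u else 0)"

text \<open>sigma_i M for a sink i: at i the kernel of the sum map, realised inside the
  direct sum of the M_{s alpha}, t alpha = i.\<close>
definition sink_space :: "'v set \<Rightarrow> 'a set \<Rightarrow> ('a \<Rightarrow> 'v) \<Rightarrow> ('a \<Rightarrow> 'v)
   \<Rightarrow> ('v \<Rightarrow> ('w \<Rightarrow> 'k::field) set) \<Rightarrow> ('a \<Rightarrow> ('w \<Rightarrow> 'k) \<Rightarrow> ('w \<Rightarrow> 'k)) \<Rightarrow> 'v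
   \<Rightarrow> 'v \<Rightarrow> ('a option \<times> 'w \<Rightarrow> 'k) set" where
  "sink_space V A s t Mv Ma i j = (if j = i then
      {f. (\<forall>u. f (None, u) = 0) \<and> (\<forall>\<alpha>. (\<alpha> \<notin> A \<or> t \<alpha> \<noteq> i) \<longrightarrow> comp \<alpha> f = (\<lambda>_. 0)) \<and>
          (\<forall>\<alpha>\<in>A. t \<alpha> = i \<longrightarrow> comp \<alpha> f \<in> Mv (s \<alpha>)) \<and>
          (\<lambda>u. \<Sum>\<alpha>\<in>{\<alpha>\<in>A. t \<alpha> = i}. Ma \<alpha> (comp \<alpha> f) u) = (\<lambda>_. 0)}
    else emb ` Mv j)"

definition sink_map :: "'v set \<Rightarrow> 'a set \<Rightarrow> ('a \<Rightarrow> 'v) \<Rightarrow> ('a \<Rightarrow> 'v)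
   \<Rightarrow> ('v \<Rightarrow> ('w \<Rightarrow> 'k::field) set) \<Rightarrow> ('a \<Rightarrow> ('w \<Rightarrow> 'k) \<Rightarrow> ('w \<Rightarrow> 'k)) \<Rightarrow> 'v
   \<Rightarrow> 'a \<Rightarrow> ('a option \<times> 'w \<Rightarrow> 'k) \<Rightarrow> ('a option \<times> 'w \<Rightarrow> 'k)" where
  "sink_map V A s t Mv Ma i \<alpha> f =
     (if t \<alpha> = i then emb (comp \<alpha> f) else emb (Ma \<alpha> (unemb f)))"

text \<open>sigma_i^- M for a source i: at i the cokernel of M_i -> direct sum of the
  M_{t alpha}, s alpha = i, realised (up to isomorphism) as a chosen complement C of
  the image, with the canonical projection onto C along the image.\<close>
definition src_sum :: "'v set \<Rightarrow> 'a set \<Rightarrow> ('a \<Rightarrow> 'v) \<Rightarrow> ('a \<Rightarrow> 'v)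
   \<Rightarrow> ('v \<Rightarrow> ('w \<Rightarrow> 'k::field) set) \<Rightarrow> 'v \<Rightarrow> ('a option \<times> 'w \<Rightarrow> 'k) set" where
  "src_sum V A s t Mv i =
      {f. (\<forall>u. f (None, u) = 0) \<and> (\<forall>\<alpha>. (\<alpha> \<notin> A \<or> s \<alpha> \<noteq> i) \<longrightarrow> comp \<alpha> f = (\<lambda>_. 0)) \<and>
          (\<forall>\<alpha>\<in>A. s \<alpha> = i \<longrightarrow> comp \<alpha> f \<in> Mv (t \<alpha>))}"

definition src_image :: "'v set \<Rightarrow> 'a set \<Rightarrow> ('a \<Rightarrow> 'v) \<Rightarrow> ('a \<Rightarrow> 'v)
   \<Rightarrow> ('v \<Rightarrow> ('w \<Rightarrow> 'k::field) set) \<Rightarrow> ('a \<Rightarrow> ('w \<Rightarrow> 'k) \<Rightarrow> ('w \<Rightarrow> 'k)) \<Rightarrow> 'v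
   \<Rightarrow> ('a option \<times> 'w \<Rightarrow> 'k) set" where
  "src_image V A s t Mv Ma i = (\<lambda>m. (\<lambda>(ob, u). case ob of None \<Rightarrow> 0
        | Some \<alpha> \<Rightarrow> if \<alpha> \<in> A \<and> s \<alpha> = i then Ma \<alpha> m u else 0)) ` Mv i"

definition src_compl :: "'v set \<Rightarrow> 'a set \<Rightarrow> ('a \<Rightarrow> 'v) \<Rightarrow> ('a \<Rightarrow> 'v)
   \<Rightarrow> ('v \<Rightarrow> ('w \<Rightarrow> 'k::field) set) \<Rightarrow> ('a \<Rightarrow> ('w \<Rightarrow> 'k) \<Rightarrow> ('w \<Rightarrow> 'k)) \<Rightarrow> 'v
   \<Rightarrow> ('a option \<times> 'w \<Rightarrow> 'k) set" where
  "src_compl V A s t Mv Ma i = (SOME C. is_subspace C \<and> C \<subseteq> src_sum V A s t Mv i \<and>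
      C \<inter> src_image V A s t Mv Ma i = {\<lambda>_. 0} \<and>
      (\<forall>p\<in>src_sum V A s t Mv i. \<exists>c\<in>C. \<exists>g\<in>src_image V A s t Mv Ma i. p = (\<lambda>x. c x + g x)))"

definition src_proj :: "'v set \<Rightarrow> 'a set \<Rightarrow> ('a \<Rightarrow> 'v) \<Rightarrow> ('a \<Rightarrow> 'v)
   \<Rightarrow> ('v \<Rightarrow> ('w \<Rightarrow> 'k::field) set) \<Rightarrow> ('a \<Rightarrow> ('w \<Rightarrow> 'k) \<Rightarrow> ('w \<Rightarrow> 'k)) \<Rightarrow> 'v
   \<Rightarrow> ('a option \<times> 'w \<Rightarrow> 'k) \<Rightarrow> ('a option \<times> 'w \<Rightarrow> 'k)" where
  "src_proj V A s t Mv Ma i p = (THE c. c \<in> src_compl V A s t Mv Ma i \<and>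
      (\<exists>g\<in>src_image V A s t Mv Ma i. p = (\<lambda>x. c x + g x)))"

definition source_space :: "'v set \<Rightarrow> 'a set \<Rightarrow> ('a \<Rightarrow> 'v) \<Rightarrow> ('a \<Rightarrow> 'v)
   \<Rightarrow> ('v \<Rightarrow> ('w \<Rightarrow> 'k::field) set) \<Rightarrow> ('a \<Rightarrow> ('w \<Rightarrow> 'k) \<Rightarrow> ('w \<Rightarrow> 'k)) \<Rightarrow> 'v
   \<Rightarrow> 'v \<Rightarrow> ('a option \<times> 'w \<Rightarrow> 'k) set" where
  "source_space V A s t Mv Ma i j =
     (if j = i then src_compl V A s t Mv Ma i else emb ` Mv j)"

definition source_map :: "'v set \<Rightarrow> 'a set \<Rightarrow> ('a \<Rightarrow> 'v) \<Rightarrow> ('a \<Rightarrow> 'v)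
   \<Rightarrow> ('v \<Rightarrow> ('w \<Rightarrow> 'k::field) set) \<Rightarrow> ('a \<Rightarrow> ('w \<Rightarrow> 'k) \<Rightarrow> ('w \<Rightarrow> 'k)) \<Rightarrow> 'v
   \<Rightarrow> 'a \<Rightarrow> ('a option \<times> 'w \<Rightarrow> 'k) \<Rightarrow> ('a option \<times> 'w \<Rightarrow> 'k)" where
  "source_map V A s t Mv Ma i \<alpha> f =
     (if s \<alpha> = i then src_proj V A s t Mv Ma i (inj_comp \<alpha> (unemb f))
      else emb (Ma \<alpha> (unemb f)))"

end

theory Submission
  imports Defs "HOL-Library.Function_Algebras"
begin

section \<open>Linear algebra basics\<close>

lemma lam_zero[simp]: "(\<lambda>u. 0) = (0::'a \<Rightarrow> 'b::zero)" by (simp add: zero_fun_def)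
lemma sc_zero[simp]: "(\<lambda>u. (0::'k::field) * x u) = 0" by (simp add: zero_fun_def del: lam_zero)
lemma sc_one[simp]: "(\<lambda>u. (1::'k::field) * x u) = x" by simp
lemma sc_m1: "(\<lambda>u. (-1::'k::field) * x u) = - x" by (auto simp: fun_eq_iff)

lemma subspace_0: "is_subspace S \<Longrightarrow> (0::'w\<Rightarrow>'k::field) \<in> S"
  by (simp add: is_subspace_def)
lemma subspace_add: "is_subspace S \<Longrightarrow> x \<in> S \<Longrightarrow> y \<in> S \<Longrightarrow> (x::'w\<Rightarrow>'k::field) + y \<in> S"
  unfolding is_subspace_def plus_fun_def by blast
lemma subspace_scale: "is_subspace S \<Longrightarrow> x \<in> S \<Longrightarrow> (\<lambda>u. c * (x::'w\<Rightarrow>'k::field) u) \<in> S"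
  unfolding is_subspace_def by blast
lemma subspace_uminus: "is_subspace S \<Longrightarrow> x \<in> S \<Longrightarrow> - (x::'w\<Rightarrow>'k::field) \<in> S"
  using subspace_scale[of S x "-1"] sc_m1[of x] by simp
lemma subspace_diff: "is_subspace S \<Longrightarrow> x \<in> S \<Longrightarrow> y \<in> S \<Longrightarrow> (x::'w\<Rightarrow>'k::field) - y \<in> S"
  using subspace_add[of S x "-y"] subspace_uminus[of S y] by simp
lemma subspace_sum: "is_subspace S \<Longrightarrow> (\<And>a. a \<in> I \<Longrightarrow> g a \<in> S) \<Longrightarrow> (\<Sum>a\<in>I. (g a::'w\<Rightarrow>'k::field)) \<in> S"
proof (induction I rule: infinite_finite_induct)
  case (infinite A) then show ?case by (simp add: subspace_0)
next
  case empty then show ?case by (simp add: subspace_0)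
next
  case (insert x F) then show ?case unfolding sum.insert[OF insert(1,2)]
    by (intro subspace_add) auto
qed
lemma subspace_intro:
  assumes "(0::'w\<Rightarrow>'k::field) \<in> S" "\<And>x y. x \<in> S \<Longrightarrow> y \<in> S \<Longrightarrow> x + y \<in> S"
   "\<And>c x. x \<in> S \<Longrightarrow> (\<lambda>u. c * x u) \<in> S"
  shows "is_subspace S"
  using assms unfolding is_subspace_def plus_fun_def by auto

lemma lin_add: "lin_on S f \<Longrightarrow> x \<in> S \<Longrightarrow> y \<in> S \<Longrightarrow> f ((x::'w\<Rightarrow>'k::field) + y) = f x + (f y :: 'z \<Rightarrow> 'k)"
  unfolding lin_on_def plus_fun_def by blast
lemma lin_scale: "lin_on S f \<Longrightarrow> x \<in> S \<Longrightarrow> f (\<lambda>u. c * (x::'w\<Rightarrow>'k::field) u) = (\<lambda>u. c * (f x :: 'z \<Rightarrow> 'k) u)"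
  unfolding lin_on_def by blast
lemma lin_0: "is_subspace S \<Longrightarrow> lin_on S f \<Longrightarrow> f (0::'w\<Rightarrow>'k::field) = (0 :: 'z \<Rightarrow> 'k)"
  using lin_scale[of S f 0 0] subspace_0[of S] by simp
lemma lin_uminus: "is_subspace S \<Longrightarrow> lin_on S f \<Longrightarrow> x \<in> S \<Longrightarrow> f (- (x::'w\<Rightarrow>'k::field)) = - (f x :: 'z \<Rightarrow> 'k)"
  using lin_scale[of S f x "-1"] sc_m1 by metis
lemma lin_diff: "is_subspace S \<Longrightarrow> lin_on S f \<Longrightarrow> x \<in> S \<Longrightarrow> y \<in> S \<Longrightarrow> f ((x::'w\<Rightarrow>'k::field) - y) = f x - (f y :: 'z \<Rightarrow> 'k)"
  using lin_add[of S f x "-y"] lin_uminus[of S f y] subspace_uminus[of S y] by simp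
lemma lin_sum: "is_subspace S \<Longrightarrow> lin_on S f \<Longrightarrow> (\<And>a. a \<in> I \<Longrightarrow> g a \<in> S) \<Longrightarrow>
   f (\<Sum>a\<in>I. (g a::'w\<Rightarrow>'k::field)) = (\<Sum>a\<in>I. (f (g a) :: 'z \<Rightarrow> 'k))"
proof (induction I rule: infinite_finite_induct)
  case (infinite A) then show ?case by (simp add: lin_0)
next
  case empty then show ?case by (simp add: lin_0)
next
  case (insert x F)
  have h1: "f (g x + sum g F) = f (g x) + f (sum g F)"
    by (rule lin_add[OF insert.prems(2)]) (use insert.prems in \<open>auto intro: subspace_sum\<close>)
  have ih: "f (sum g F) = (\<Sum>a\<in>F. f (g a))" using insert.IH insert.prems by blast
  show ?case unfolding sum.insert[OF insert(1,2)] using h1 ih by (simp only:)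
qed
lemma lin_intro:
  assumes "\<And>x y. x \<in> S \<Longrightarrow> y \<in> S \<Longrightarrow> f ((x::'w\<Rightarrow>'k::field) + y) = f x + (f y :: 'z \<Rightarrow> 'k)"
    "\<And>c x. x \<in> S \<Longrightarrow> f (\<lambda>u. c * x u) = (\<lambda>u. c * f x u)"
  shows "lin_on S f"
  using assms unfolding lin_on_def plus_fun_def by blast
lemma lin_on_subset: "lin_on S f \<Longrightarrow> T \<subseteq> S \<Longrightarrow> lin_on T f"
  unfolding lin_on_def by blast

section \<open>Chains and lengths\<close>

lemma chain_transfer:
  assumes "\<And>U. P U \<Longrightarrow> Q (H U)" "\<And>U U'. P U \<Longrightarrow> P U' \<Longrightarrow> U \<subset> U' \<Longrightarrow> H U \<subset> H U'"
    and "has_chain P n"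
  shows "has_chain Q n"
proof -
  from assms(3) obtain U where U: "\<forall>j\<le>n. P (U j)" "\<forall>j<n. U j \<subset> U (Suc j)"
    unfolding has_chain_def by blast
  show ?thesis unfolding has_chain_def
    by (rule exI[of _ "\<lambda>j. H (U j)"]) (use U assms(1,2) in auto)
qed

lemma mod_length_cong: "(\<And>n. has_chain P n = has_chain Q n) \<Longrightarrow> mod_length P = mod_length Q"
  unfolding mod_length_def by presburger
lemma finite_length_cong: "(\<And>n. has_chain P n = has_chain Q n) \<Longrightarrow> finite_length P = finite_length Q"
  unfolding finite_length_def by presburger

lemma le_mod_length: "finite_length P \<Longrightarrow> has_chain P n \<Longrightarrow> n \<le> mod_length P"
  unfolding finite_length_def mod_length_def by (metis Greatest_le_nat)
lemma has_chain_mod_length: "finite_length P \<Longrightarrow> has_chain P 0 \<Longrightarrow> has_chain P (mod_length P)"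
  unfolding finite_length_def mod_length_def by (metis GreatestI_nat)
lemma has_chain_0: "P U \<Longrightarrow> has_chain P 0"
  unfolding has_chain_def by (rule exI[of _ "\<lambda>_. U"]) auto
lemma finite_length_bound: "(\<And>n. has_chain P n \<Longrightarrow> n \<le> N) \<Longrightarrow> finite_length P"
  unfolding finite_length_def by blast

lemma count_chain:
  assumes "\<forall>j\<le>n. P (S j)" "\<forall>j<n. S j \<subseteq> S (Suc j)"
  shows "\<exists>U. (\<forall>j\<le>card {j. j<n \<and> S j \<subset> S (Suc j)}. P (U j)) \<and>
      (\<forall>j<card {j. j<n \<and> S j \<subset> S (Suc j)}. U j \<subset> U (Suc j)) \<and>
      U (card {j. j<n \<and> S j \<subset> S (Suc j)}) = S n"
  using assms
proof (induction n)
  case 0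
  then show ?case by (intro exI[of _ "\<lambda>_. S 0"]) auto
next
  case (Suc n)
  let ?c = "card {j. j<n \<and> S j \<subset> S (Suc j)}"
  from Suc obtain U where U: "\<forall>j\<le>?c. P (U j)" "\<forall>j<?c. U j \<subset> U (Suc j)" "U ?c = S n" by auto
  show ?case
  proof (cases "S n \<subset> S (Suc n)")
    case True
    have eq: "{j. j<Suc n \<and> S j \<subset> S (Suc j)} = insert n {j. j<n \<and> S j \<subset> S (Suc j)}"
      using True by auto
    have c: "card {j. j<Suc n \<and> S j \<subset> S (Suc j)} = Suc ?c" unfolding eq by simp
    show ?thesis unfolding c
      apply (rule exI[of _ "U(Suc ?c := S (Suc n))"])
      using U True Suc.prems by (auto simp: less_Suc_eq le_Suc_eq)
  next
    case False
    then have "S n = S (Suc n)" using Suc.prems by auto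
    have eq: "{j. j<Suc n \<and> S j \<subset> S (Suc j)} = {j. j<n \<and> S j \<subset> S (Suc j)}"
      using False by (auto simp: less_Suc_eq)
    show ?thesis unfolding eq using U \<open>S n = S (Suc n)\<close> by auto
  qed
qed

lemma count_chain_le:
  assumes "finite_length P" "\<forall>j\<le>n. P (S j)" "\<forall>j<n. S j \<subseteq> S (Suc j)"
  shows "card {j. j<n \<and> S j \<subset> S (Suc j)} \<le> mod_length P"
proof -
  from count_chain[OF assms(2,3)] have "has_chain P (card {j. j<n \<and> S j \<subset> S (Suc j)})"
    unfolding has_chain_def by blast
  then show ?thesis using le_mod_length assms(1) by blast
qed

section \<open>Modules over a set of operators\<close>

definition sm :: "('x \<Rightarrow> 'k::field) set \<Rightarrow> 'e set \<Rightarrow> ('e \<Rightarrow> ('x \<Rightarrow> 'k) \<Rightarrow> ('x \<Rightarrow> 'k)) \<Rightarrow> ('x \<Rightarrow> 'k) set \<Rightarrow> bool" where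
  "sm X E F U \<longleftrightarrow> U \<subseteq> X \<and> is_subspace U \<and> (\<forall>e\<in>E. F e ` U \<subseteq> U)"

lemma sm_zero: "is_subspace X \<Longrightarrow> (\<forall>e\<in>E. lin_on X (F e)) \<Longrightarrow> sm X E F {0}"
  unfolding sm_def by (auto simp: subspace_0 lin_0 intro!: subspace_intro)

lemma sm_iso:
  assumes X: "is_subspace X" and h: "lin_on X h" "inj_on h X" "h ` X = Y"
    and F: "\<forall>e\<in>E. F e ` X \<subseteq> X"
    and eq1: "\<forall>e\<in>E. \<exists>e'\<in>E'. \<forall>x\<in>X. h (F e x) = G e' (h x)"
    and eq2: "\<forall>e'\<in>E'. \<exists>e\<in>E. \<forall>x\<in>X. G e' (h x) = h (F e x)"
  shows "has_chain (sm X E F) n = has_chain (sm Y E' G) n"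
proof
  assume "has_chain (sm X E F) n"
  then show "has_chain (sm Y E' G) n"
  proof (rule chain_transfer[where H="\<lambda>U. h ` U", rotated -1])
    fix U assume U: "sm X E F U"
    show "sm Y E' G (h ` U)" unfolding sm_def
    proof (intro conjI)
      show "h ` U \<subseteq> Y" using U h unfolding sm_def by auto
      have sub: "U \<subseteq> X" "is_subspace U" using U unfolding sm_def by auto
      have l: "lin_on U h" using lin_on_subset h(1) sub(1) by blast
      show "is_subspace (h ` U)"
      proof (rule subspace_intro)
        show "0 \<in> h ` U" using lin_0[OF sub(2) l] subspace_0[OF sub(2)] by (metis image_eqI)
        fix x y assume "x \<in> h ` U" "y \<in> h ` U"
        then obtain a b where "a \<in> U" "b \<in> U" "x = h a" "y = h b" by auto
        then show "x + y \<in> h ` U" using lin_add[OF l] subspace_add[OF sub(2)] by (metis image_eqI)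
      next
        fix c x assume "x \<in> h ` U"
        then obtain a where "a \<in> U" "x = h a" by auto
        then show "(\<lambda>u. c * x u) \<in> h ` U" using lin_scale[OF l] subspace_scale[OF sub(2)] by (metis image_eqI)
      qed
      show "\<forall>e\<in>E'. G e ` h ` U \<subseteq> h ` U"
      proof (intro ballI subsetI)
        fix e' y assume e': "e' \<in> E'" and "y \<in> G e' ` h ` U"
        then obtain a where a: "a \<in> U" "y = G e' (h a)" by auto
        obtain e where e: "e \<in> E" "\<forall>x\<in>X. G e' (h x) = h (F e x)" using eq2 e' by blast
        have "y = h (F e a)" using a e sub by auto
        moreover have "F e a \<in> U" using U e(1) a(1) unfolding sm_def by blast
        ultimately show "y \<in> h ` U" by auto
      qed
    qed
  next
    fix U U' assume "sm X E F U" "sm X E F U'" "U \<subset> U'"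
    then show "h ` U \<subset> h ` U'" using h(2) unfolding sm_def
      by (metis inj_on_image_eq_iff inj_on_subset psubsetE psubsetI image_mono)
  qed
next
  assume "has_chain (sm Y E' G) n"
  then show "has_chain (sm X E F) n"
  proof (rule chain_transfer[where H="\<lambda>U. {x\<in>X. h x \<in> U}", rotated -1])
    fix U assume U: "sm Y E' G U"
    have sub: "U \<subseteq> Y" "is_subspace U" using U unfolding sm_def by auto
    show "sm X E F {x\<in>X. h x \<in> U}" unfolding sm_def
    proof (intro conjI)
      show "{x \<in> X. h x \<in> U} \<subseteq> X" by auto
      show "is_subspace {x \<in> X. h x \<in> U}"
      proof (rule subspace_intro)
        show "0 \<in> {x \<in> X. h x \<in> U}" using subspace_0[OF X] lin_0[OF X h(1)] subspace_0[OF sub(2)] by simp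
        fix x y assume "x \<in> {x \<in> X. h x \<in> U}" "y \<in> {x \<in> X. h x \<in> U}"
        then show "x + y \<in> {x \<in> X. h x \<in> U}"
          using lin_add[OF h(1)] subspace_add[OF X] subspace_add[OF sub(2)] by auto
      next
        fix c x assume "x \<in> {x \<in> X. h x \<in> U}"
        then show "(\<lambda>u. c * x u) \<in> {x \<in> X. h x \<in> U}"
          using lin_scale[OF h(1)] subspace_scale[OF X] subspace_scale[OF sub(2)] by auto
      qed
      show "\<forall>e\<in>E. F e ` {x \<in> X. h x \<in> U} \<subseteq> {x \<in> X. h x \<in> U}"
      proof (intro ballI subsetI)
        fix e y assume e: "e \<in> E" and "y \<in> F e ` {x \<in> X. h x \<in> U}"
        then obtain a where a: "a \<in> X" "h a \<in> U" "y = F e a" by auto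
        obtain e' where e': "e' \<in> E'" "\<forall>x\<in>X. h (F e x) = G e' (h x)" using eq1 e by blast
        have "h y = G e' (h a)" using a e' by auto
        also have "\<dots> \<in> U" using U e'(1) a(2) unfolding sm_def by blast
        finally show "y \<in> {x \<in> X. h x \<in> U}" using F e a by auto
      qed
    qed
  next
    fix U U' assume "sm Y E' G U" "sm Y E' G U'" "U \<subset> U'"
    then obtain y where y: "y \<in> U'" "y \<notin> U" "U \<subseteq> U'" "U' \<subseteq> Y" unfolding sm_def by auto
    then obtain x where "x \<in> X" "h x = y" using h(3) by auto
    then show "{x \<in> X. h x \<in> U} \<subset> {x \<in> X. h x \<in> U'}" using y by auto
  qed
qed

lemma sm_same:
  assumes "\<forall>e\<in>E. \<exists>e'\<in>E'. \<forall>x\<in>X. F e x = G e' x" "\<forall>e'\<in>E'. \<exists>e\<in>E. \<forall>x\<in>X. G e' x = F e x"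
  shows "sm X E F = sm X E' G"
proof (rule ext)
  fix U show "sm X E F U = sm X E' G U"
    unfolding sm_def using assms by (smt (verit, best) image_cong subset_eq)
qed



lemma subspace_image: "is_subspace U \<Longrightarrow> lin_on U h \<Longrightarrow> is_subspace (h ` U)"
proof (rule subspace_intro)
  assume U: "is_subspace U" and l: "lin_on U h"
  have "h 0 \<in> h ` U" using subspace_0[OF U] by blast
  then show "0 \<in> h ` U" using lin_0[OF U l] by simp
  fix x y assume "x \<in> h ` U" "y \<in> h ` U"
  then obtain a b where ab: "a \<in> U" "b \<in> U" "x = h a" "y = h b" by auto
  have "h (a + b) \<in> h ` U" using subspace_add[OF U ab(1,2)] by blast
  then show "x + y \<in> h ` U" using lin_add[OF l ab(1,2)] ab by simp
next
  fix c x assume U: "is_subspace U" and l: "lin_on U h" and "x \<in> h ` U"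
  then obtain a where a: "a \<in> U" "x = h a" by auto
  have "h (\<lambda>u. c * a u) \<in> h ` U" using subspace_scale[OF U a(1)] by blast
  then show "(\<lambda>u. c * x u) \<in> h ` U" using lin_scale[OF l a(1)] a by simp
qed

lemma subspace_preimage: "is_subspace X \<Longrightarrow> lin_on X h \<Longrightarrow> is_subspace U \<Longrightarrow> is_subspace {x\<in>X. h x \<in> U}"
proof (rule subspace_intro)
  assume X: "is_subspace X" and h: "lin_on X h" and U: "is_subspace U"
  show "0 \<in> {x \<in> X. h x \<in> U}" using subspace_0[OF X] lin_0[OF X h] subspace_0[OF U] by simp
  fix x y assume "x \<in> {x \<in> X. h x \<in> U}" "y \<in> {x \<in> X. h x \<in> U}"
  then show "x + y \<in> {x \<in> X. h x \<in> U}"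
    using lin_add[OF h] subspace_add[OF X] subspace_add[OF U] by auto
next
  fix c x assume X: "is_subspace X" and h: "lin_on X h" and U: "is_subspace U" and "x \<in> {x \<in> X. h x \<in> U}"
  then show "(\<lambda>u. c * x u) \<in> {x \<in> X. h x \<in> U}"
    using lin_scale[OF h] subspace_scale[OF X] subspace_scale[OF U] by auto
qed

lemma subspace_Int: "is_subspace U \<Longrightarrow> is_subspace W \<Longrightarrow> is_subspace (U \<inter> W)"
  by (rule subspace_intro) (auto simp: subspace_0 subspace_add subspace_scale)

lemma subspace_zero: "is_subspace {0::'w\<Rightarrow>'k::field}"
  by (rule subspace_intro) auto

lemma sm_add:
  fixes \<pi> :: "('x \<Rightarrow> 'k::field) \<Rightarrow> ('y \<Rightarrow> 'k)"
  assumes X: "is_subspace X" and FX: "\<forall>e\<in>E. F e ` X \<subseteq> X"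
    and Y: "is_subspace Y" and pi: "lin_on X \<pi>" "\<pi> ` X = Y"
    and G: "\<forall>e\<in>E. lin_on Y (G e)" and eqv: "\<forall>e\<in>E. \<forall>x\<in>X. \<pi> (F e x) = G e (\<pi> x)"
    and K: "K = {x\<in>X. \<pi> x = 0}"
    and finK: "finite_length (sm K E F)" and finY: "finite_length (sm Y E G)"
  shows "finite_length (sm X E F) \<and> mod_length (sm X E F) = mod_length (sm K E F) + mod_length (sm Y E G)"
proof -
  have Ks: "is_subspace K" unfolding K using subspace_preimage[OF X pi(1) subspace_zero] by simp
  have KX: "K \<subseteq> X" unfolding K by auto
  have G0: "\<And>e. e \<in> E \<Longrightarrow> G e 0 = 0" using G lin_0[OF Y] by blast
  have FK: "F e x \<in> K" if "e \<in> E" "x \<in> K" for e x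
  proof -
    have "x \<in> X" "\<pi> x = 0" using that unfolding K by auto
    then have "\<pi> (F e x) = 0" using eqv G0 that by auto
    moreover have "F e x \<in> X" using FX that \<open>x \<in> X\<close> by auto
    ultimately show ?thesis unfolding K by auto
  qed
  have GY: "G e y \<in> Y" if e: "e \<in> E" and y: "y \<in> Y" for e y
  proof -
    obtain x where x: "x \<in> X" "y = \<pi> x" using y pi(2) by blast
    then have "G e y = \<pi> (F e x)" using eqv e by auto
    moreover have "F e x \<in> X" using FX e x by auto
    ultimately show ?thesis using pi(2) by auto
  qed
  have smK: "sm K E F K" unfolding sm_def using Ks FK by auto
  have smY: "sm Y E G Y" unfolding sm_def using Y GY by auto
  let ?a = "mod_length (sm K E F)" and ?b = "mod_length (sm Y E G)"
  have le: "n \<le> ?a + ?b" if "has_chain (sm X E F) n" for n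
  proof -
    from that obtain U where U: "\<forall>j\<le>n. sm X E F (U j)" "\<forall>j<n. U j \<subset> U (Suc j)"
      unfolding has_chain_def by blast
    define A where "A j = U j \<inter> K" for j
    define B where "B j = \<pi> ` U j" for j
    have smA: "sm K E F (A j)" if "j \<le> n" for j
    proof -
      have "sm X E F (U j)" using U that by auto
      then show ?thesis unfolding sm_def A_def using subspace_Int[OF _ Ks] FK by (auto simp: image_subset_iff)
    qed
    have smB: "sm Y E G (B j)" if "j \<le> n" for j
    proof -
      have u: "sm X E F (U j)" using U that by auto
      then have "U j \<subseteq> X" "is_subspace (U j)" unfolding sm_def by auto
      then have "is_subspace (B j)" unfolding B_def using subspace_image lin_on_subset[OF pi(1)] by blast
      moreover have "B j \<subseteq> Y" unfolding B_def using \<open>U j \<subseteq> X\<close> pi(2) by auto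
      moreover have "\<forall>e\<in>E. G e ` B j \<subseteq> B j"
      proof (intro ballI subsetI)
        fix e y assume "e \<in> E" "y \<in> G e ` B j"
        then obtain x where "x \<in> U j" "y = G e (\<pi> x)" unfolding B_def by auto
        then have "y = \<pi> (F e x)" using eqv \<open>e \<in> E\<close> \<open>U j \<subseteq> X\<close> by auto
        moreover have "F e x \<in> U j" using u \<open>e \<in> E\<close> \<open>x \<in> U j\<close> unfolding sm_def by blast
        ultimately show "y \<in> B j" unfolding B_def by auto
      qed
      ultimately show ?thesis unfolding sm_def by auto
    qed
    have mono: "U j \<subseteq> U (Suc j)" if "j < n" for j using U that by auto
    have step: "A j \<subset> A (Suc j) \<or> B j \<subset> B (Suc j)" if "j < n" for j
    proof (rule ccontr)
      assume "\<not> ?thesis"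
      moreover have "A j \<subseteq> A (Suc j)" "B j \<subseteq> B (Suc j)" using mono[OF that] unfolding A_def B_def by auto
      ultimately have eqA: "A j = A (Suc j)" and eqB: "B j = B (Suc j)" by auto
      have sub: "U j \<subseteq> X" "is_subspace (U j)" "U (Suc j) \<subseteq> X" "is_subspace (U (Suc j))"
        using U that unfolding sm_def by auto
      have "U (Suc j) \<subseteq> U j"
      proof
        fix u assume u: "u \<in> U (Suc j)"
        then have "\<pi> u \<in> B j" using eqB unfolding B_def by auto
        then obtain u' where u': "u' \<in> U j" "\<pi> u = \<pi> u'" unfolding B_def by auto
        have u'S: "u' \<in> U (Suc j)" using u' mono[OF that] by auto
        have "u - u' \<in> U (Suc j)" using subspace_diff[OF sub(4) u u'S] .
        moreover have "\<pi> (u - u') = 0"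
        proof -
          have "u \<in> X" "u' \<in> X" using u u'S sub(3) by auto
          then have "\<pi> (u - u') = \<pi> u - \<pi> u'" by (rule lin_diff[OF X pi(1)])
          then show ?thesis using u'(2) by simp
        qed
        moreover have "u - u' \<in> X" using sub(3) \<open>u - u' \<in> U (Suc j)\<close> by auto
        ultimately have "u - u' \<in> A (Suc j)" unfolding A_def K by auto
        then have "u - u' \<in> U j" using eqA unfolding A_def by auto
        then have "(u - u') + u' \<in> U j" using subspace_add[OF sub(2)] u'(1) by blast
        then show "u \<in> U j" by simp
      qed
      then show False using U that by auto
    qed
    have "\<forall>j<n. A j \<subseteq> A (Suc j)" using mono unfolding A_def by blast
    then have cA: "card {j. j<n \<and> A j \<subset> A (Suc j)} \<le> ?a"
      using count_chain_le[OF finK, of n A] smA by blast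
    have "\<forall>j<n. B j \<subseteq> B (Suc j)" using mono unfolding B_def by blast
    then have cB: "card {j. j<n \<and> B j \<subset> B (Suc j)} \<le> ?b"
      using count_chain_le[OF finY, of n B] smB by blast
    have "{j. j < n} \<subseteq> {j. j<n \<and> A j \<subset> A (Suc j)} \<union> {j. j<n \<and> B j \<subset> B (Suc j)}"
      using step by auto
    then have "card {j. j < n} \<le> card ({j. j<n \<and> A j \<subset> A (Suc j)} \<union> {j. j<n \<and> B j \<subset> B (Suc j)})"
      by (rule card_mono[rotated]) auto
    also have "\<dots> \<le> card {j. j<n \<and> A j \<subset> A (Suc j)} + card {j. j<n \<and> B j \<subset> B (Suc j)}"
      by (rule card_Un_le)
    finally show ?thesis using cA cB by simp
  qed
  have fin: "finite_length (sm X E F)" using le by (rule finite_length_bound)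
  have ge: "has_chain (sm X E F) (?a + ?b)"
  proof -
    obtain CK where CK: "\<forall>j\<le>?a. sm K E F (CK j)" "\<forall>j<?a. CK j \<subset> CK (Suc j)"
      using has_chain_mod_length[OF finK has_chain_0[of "sm K E F", OF smK]] unfolding has_chain_def by blast
    obtain W where W: "\<forall>j\<le>?b. sm Y E G (W j)" "\<forall>j<?b. W j \<subset> W (Suc j)"
      using has_chain_mod_length[OF finY has_chain_0[of "sm Y E G", OF smY]] unfolding has_chain_def by blast
    define C where "C j = (if j \<le> ?a then CK j else {x\<in>X. \<pi> x \<in> W (j - ?a)})" for j
    have pre: "sm X E F {x\<in>X. \<pi> x \<in> W'}" if "sm Y E G W'" for W'
    proof -
      have "is_subspace W'" using that unfolding sm_def by auto
      then have "is_subspace {x\<in>X. \<pi> x \<in> W'}" using subspace_preimage[OF X pi(1)] by blast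
      moreover have "\<forall>e\<in>E. F e ` {x\<in>X. \<pi> x \<in> W'} \<subseteq> {x\<in>X. \<pi> x \<in> W'}"
      proof (intro ballI subsetI)
        fix e y assume e: "e \<in> E" and "y \<in> F e ` {x\<in>X. \<pi> x \<in> W'}"
        then obtain x where x: "x \<in> X" "\<pi> x \<in> W'" "y = F e x" by auto
        have "\<pi> y = G e (\<pi> x)" using eqv e x by auto
        moreover have "G e (\<pi> x) \<in> W'" using that e x(2) unfolding sm_def by blast
        moreover have "y \<in> X" using FX e x by auto
        ultimately show "y \<in> {x\<in>X. \<pi> x \<in> W'}" by auto
      qed
      ultimately show ?thesis unfolding sm_def by auto
    qed
    have prestrict: "{x\<in>X. \<pi> x \<in> W'} \<subset> {x\<in>X. \<pi> x \<in> W''}" if w: "W' \<subset> W''" "W'' \<subseteq> Y" for W' W''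
    proof -
      obtain y where "y \<in> W''" "y \<notin> W'" using w by auto
      moreover then obtain x where "x \<in> X" "\<pi> x = y" using w pi(2) by auto
      ultimately show ?thesis using w by auto
    qed
    have "\<forall>j\<le>?a+?b. sm X E F (C j)"
    proof (intro allI impI)
      fix j assume "j \<le> ?a + ?b"
      show "sm X E F (C j)"
      proof (cases "j \<le> ?a")
        case True
        then have "sm K E F (CK j)" using CK by auto
        then show ?thesis using True KX unfolding C_def sm_def by auto
      next
        case False
        then show ?thesis unfolding C_def using pre W(1) \<open>j \<le> ?a + ?b\<close> by auto
      qed
    qed
    moreover have "\<forall>j<?a+?b. C j \<subset> C (Suc j)"
    proof (intro allI impI)
      fix j assume j: "j < ?a + ?b"
      show "C j \<subset> C (Suc j)"
      proof (cases "Suc j \<le> ?a")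
        case True
        then show ?thesis unfolding C_def using CK by auto
      next
        case False
        have W1: "W (Suc j - ?a) \<subseteq> Y" using W(1) j unfolding sm_def by auto
        show ?thesis
        proof (cases "j = ?a")
          case True
          have "CK ?a \<subseteq> K" using CK(1) unfolding sm_def by auto
          also have "K \<subseteq> {x\<in>X. \<pi> x \<in> W 0}"
          proof -
            have "sm Y E G (W 0)" using W(1) by blast
            then have "0 \<in> W 0" unfolding sm_def using subspace_0 by blast
            then show ?thesis unfolding K by auto
          qed
          also have "\<dots> \<subset> {x\<in>X. \<pi> x \<in> W (Suc j - ?a)}"
            using True j W(2) W1 prestrict by (simp add: Suc_diff_le)
          finally show ?thesis unfolding C_def using True by auto
        next
          case False
          then have "j > ?a" using \<open>\<not> Suc j \<le> ?a\<close> by auto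
          then have "W (j - ?a) \<subset> W (Suc j - ?a)" using W(2) j by (simp add: Suc_diff_le)
          then show ?thesis unfolding C_def using \<open>j > ?a\<close> prestrict W1 by auto
        qed
      qed
    qed
    ultimately show ?thesis unfolding has_chain_def by blast
  qed
  have smX: "sm X E F X" unfolding sm_def using X FX by auto
  have "mod_length (sm X E F) \<le> ?a + ?b"
    by (rule le[OF has_chain_mod_length[OF fin has_chain_0[of "sm X E F", OF smX]]])
  moreover have "?a + ?b \<le> mod_length (sm X E F)" by (rule le_mod_length[OF fin ge])
  ultimately show ?thesis using fin by simp
qed



lemma complement_exists:
  fixes U W :: "('w \<Rightarrow> 'k::field) set"
  assumes W: "is_subspace W" and U: "is_subspace U" and UW: "U \<subseteq> W"
  shows "\<exists>C. is_subspace C \<and> C \<subseteq> W \<and> C \<inter> U = {0} \<and> (\<forall>w\<in>W. \<exists>c\<in>C. \<exists>u\<in>U. w = c + u)"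
proof -
  define \<A> where "\<A> = {C. is_subspace C \<and> C \<subseteq> W \<and> C \<inter> U = {0}}"
  have z: "{0} \<in> \<A>" unfolding \<A>_def using subspace_zero subspace_0[OF W] subspace_0[OF U] by auto
  have "\<forall>\<C>\<in>chains \<A>. \<exists>M\<in>\<A>. \<forall>X\<in>\<C>. X \<subseteq> M"
  proof
    fix \<C> assume c: "\<C> \<in> chains \<A>"
    then have sub: "\<C> \<subseteq> \<A>" and ch: "\<And>A B. A \<in> \<C> \<Longrightarrow> B \<in> \<C> \<Longrightarrow> A \<subseteq> B \<or> B \<subseteq> A"
      unfolding chains_def chain_subset_def by auto
    show "\<exists>M\<in>\<A>. \<forall>X\<in>\<C>. X \<subseteq> M"
    proof (cases "\<C> = {}")
      case True then show ?thesis using z by auto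
    next
      case False
      then obtain C0 where C0: "C0 \<in> \<C>" by auto
      have "\<Union>\<C> \<in> \<A>" unfolding \<A>_def
      proof (intro CollectI conjI)
        show "is_subspace (\<Union>\<C>)"
        proof (rule subspace_intro)
          show "0 \<in> \<Union>\<C>" using C0 sub subspace_0 unfolding \<A>_def by blast
          fix x y assume "x \<in> \<Union>\<C>" "y \<in> \<Union>\<C>"
          then obtain A B where AB: "A \<in> \<C>" "B \<in> \<C>" "x \<in> A" "y \<in> B" by auto
          then have sA: "is_subspace A" and sB: "is_subspace B" using sub unfolding \<A>_def by auto
          show "x + y \<in> \<Union>\<C>"
          proof (cases "A \<subseteq> B")
            case True then show ?thesis using subspace_add[OF sB] AB by blast
          next
            case False then have "B \<subseteq> A" using ch AB by blast
            then show ?thesis using subspace_add[OF sA] AB by blast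
          qed
        next
          fix c x assume "x \<in> \<Union>\<C>"
          then obtain A where "A \<in> \<C>" "x \<in> A" by auto
          then show "(\<lambda>u. c * x u) \<in> \<Union>\<C>" using sub subspace_scale unfolding \<A>_def by blast
        qed
        show "\<Union>\<C> \<subseteq> W" using sub unfolding \<A>_def by auto
        show "\<Union>\<C> \<inter> U = {0}"
        proof
          show "\<Union>\<C> \<inter> U \<subseteq> {0}" using sub unfolding \<A>_def by blast
          show "{0} \<subseteq> \<Union>\<C> \<inter> U" using C0 sub subspace_0[OF U] unfolding \<A>_def by blast
        qed
      qed
      then show ?thesis by blast
    qed
  qed
  from Zorn_Lemma2[OF this] obtain M where M: "M \<in> \<A>" and max: "\<forall>X\<in>\<A>. M \<subseteq> X \<longrightarrow> X = M"
    by (elim bexE)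
  have Ms: "is_subspace M" "M \<subseteq> W" "M \<inter> U = {0}" using M unfolding \<A>_def by auto
  have "\<forall>w\<in>W. \<exists>c\<in>M. \<exists>u\<in>U. w = c + u"
  proof (rule ccontr)
    assume "\<not> ?thesis"
    then obtain w where w: "w \<in> W" "\<And>c u. c \<in> M \<Longrightarrow> u \<in> U \<Longrightarrow> w \<noteq> c + u" by blast
    define M' where "M' = {c + (\<lambda>u. a * w u) | c a. c \<in> M}"
    have M0: "0 \<in> M'" unfolding M'_def using subspace_0[OF Ms(1)]
      by (intro CollectI exI[of _ 0] exI[of _ "0::'k"]) (auto simp: fun_eq_iff)
    have "M' \<in> \<A>" unfolding \<A>_def
    proof (intro CollectI conjI)
      show "is_subspace M'"
      proof (rule subspace_intro)
        show "0 \<in> M'" by (rule M0)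
        fix x y assume "x \<in> M'" "y \<in> M'"
        then obtain c1 a1 c2 a2 where "c1 \<in> M" "c2 \<in> M" "x = c1 + (\<lambda>u. a1 * w u)" "y = c2 + (\<lambda>u. a2 * w u)"
          unfolding M'_def by blast
        then show "x + y \<in> M'" unfolding M'_def
          by (intro CollectI exI[of _ "c1 + c2"] exI[of _ "a1 + a2"])
             (auto simp: subspace_add[OF Ms(1)] fun_eq_iff algebra_simps)
      next
        fix d x assume "x \<in> M'"
        then obtain c a where "c \<in> M" "x = c + (\<lambda>u. a * w u)" unfolding M'_def by blast
        then show "(\<lambda>u. d * x u) \<in> M'" unfolding M'_def
          by (intro CollectI exI[of _ "\<lambda>u. d * c u"] exI[of _ "d * a"])
             (auto simp: subspace_scale[OF Ms(1)] fun_eq_iff algebra_simps)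
      qed
      show "M' \<subseteq> W"
      proof
        fix x assume "x \<in> M'"
        then obtain c a where "c \<in> M" "x = c + (\<lambda>u. a * w u)" unfolding M'_def by blast
        moreover have "c \<in> W" using \<open>c \<in> M\<close> Ms(2) by auto
        moreover have "(\<lambda>u. a * w u) \<in> W" by (rule subspace_scale[OF W w(1)])
        ultimately show "x \<in> W" using subspace_add[OF W] by simp
      qed
      show "M' \<inter> U = {0}"
      proof
        show "{0} \<subseteq> M' \<inter> U" using M0 subspace_0[OF U] by auto
        show "M' \<inter> U \<subseteq> {0}"
        proof
          fix x assume x: "x \<in> M' \<inter> U"
          then obtain c a where ca: "c \<in> M" "x = c + (\<lambda>u. a * w u)" unfolding M'_def by blast
          show "x \<in> {0}"
          proof (cases "a = 0")
            case True
            then have "x = c" using ca by (auto simp: fun_eq_iff)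
            then show ?thesis using Ms(3) x ca by auto
          next
            case False
            have "w = (\<lambda>u. (- 1 / a) * c u) + (\<lambda>u. (1 / a) * x u)"
            proof (rule ext)
              fix u have "x u = c u + a * w u" using ca by simp
              then show "w u = ((\<lambda>u. (- 1 / a) * c u) + (\<lambda>u. (1 / a) * x u)) u"
                using False by (simp add: field_simps)
            qed
            moreover have "(\<lambda>u. (- 1 / a) * c u) \<in> M" using subspace_scale[OF Ms(1) ca(1)] .
            moreover have "(\<lambda>u. (1 / a) * x u) \<in> U" using x by (intro subspace_scale[OF U]) auto
            ultimately show ?thesis using w(2) by metis
          qed
        qed
      qed
    qed
    moreover have "M \<subseteq> M'"
    proof
      fix c assume "c \<in> M"
      then show "c \<in> M'" unfolding M'_def by (intro CollectI exI[of _ c] exI[of _ "0::'k"]) (auto simp: fun_eq_iff)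
    qed
    moreover have "w \<in> M'" unfolding M'_def using subspace_0[OF Ms(1)]
      by (intro CollectI exI[of _ 0] exI[of _ "1::'k"]) (auto simp: fun_eq_iff)
    moreover have "w \<notin> M" using w(2)[of w 0] subspace_0[OF U] by auto
    ultimately show False using max by auto
  qed
  then show ?thesis using Ms by blast
qed



lemma sum_fun_apply: "(\<Sum>a\<in>S. (f a :: 'x \<Rightarrow> 'b::comm_monoid_add)) x = (\<Sum>a\<in>S. f a x)"
  by (induction S rule: infinite_finite_induct) auto

lemma lam_sum: "(\<lambda>u. \<Sum>a\<in>S. (f a u :: 'b::comm_monoid_add)) = (\<Sum>a\<in>S. f a)"
  by (rule ext) (simp add: sum_fun_apply)

section \<open>Direct sums indexed by arrows\<close>

definition DSd :: "'a set \<Rightarrow> ('a \<Rightarrow> ('w \<Rightarrow> 'k::field) set) \<Rightarrow> ('a option \<times> 'w \<Rightarrow> 'k) set" where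
  "DSd S Z = {f. (\<forall>u. f (None, u) = 0) \<and> (\<forall>\<alpha>. \<alpha> \<notin> S \<longrightarrow> comp \<alpha> f = 0) \<and> (\<forall>\<alpha>\<in>S. comp \<alpha> f \<in> Z \<alpha>)}"

definition Dact :: "'a set \<Rightarrow> ('a \<Rightarrow> ('w \<Rightarrow> 'k::field) \<Rightarrow> ('w \<Rightarrow> 'k)) \<Rightarrow> ('a option \<times> 'w \<Rightarrow> 'k) \<Rightarrow> ('a option \<times> 'w \<Rightarrow> 'k)" where
  "Dact Sf g f = (\<lambda>(ob, u). case ob of None \<Rightarrow> 0 | Some \<alpha> \<Rightarrow> if \<alpha> \<in> Sf then g \<alpha> (comp \<alpha> f) u else 0)"

lemma comp_apply: "comp \<alpha> f u = f (Some \<alpha>, u)" by (simp add: comp_def)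
lemma unemb_apply: "unemb f u = f (None, u)" by (simp add: unemb_def)

lemma ext_opt:
  assumes "\<And>u. f (None, u) = g (None, u)" "\<And>\<alpha>. comp \<alpha> f = comp \<alpha> g"
  shows "f = g"
proof -
  have "f (ob, u) = g (ob, u)" for ob u
  proof (cases ob)
    case None then show ?thesis using assms(1) by simp
  next
    case (Some \<alpha>) then show ?thesis using fun_cong[OF assms(2)[of \<alpha>], of u] by (simp add: comp_def)
  qed
  then show ?thesis by (intro ext) (metis prod.collapse)
qed

lemma comp_add[simp]: "comp \<alpha> (f + g) = comp \<alpha> f + comp \<alpha> g" by (auto simp: comp_def fun_eq_iff)
lemma comp_diff[simp]: "comp \<alpha> (f - g) = comp \<alpha> f - comp \<alpha> (g::'a option \<times> 'w \<Rightarrow> 'k::field)" by (auto simp: comp_def fun_eq_iff)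
lemma comp_scale[simp]: "comp \<alpha> (\<lambda>x. c * f x) = (\<lambda>u. c * comp \<alpha> f u)" by (auto simp: comp_def)
lemma comp_zero[simp]: "comp \<alpha> 0 = 0" by (auto simp: comp_def fun_eq_iff)
lemma comp_sum: "comp \<alpha> (\<Sum>a\<in>S. f a) = (\<Sum>a\<in>S. comp \<alpha> (f a))"
  by (rule ext) (simp add: comp_def sum_fun_apply)
lemma unemb_add[simp]: "unemb (f + g) = unemb f + unemb g" by (auto simp: unemb_def fun_eq_iff)
lemma unemb_diff[simp]: "unemb (f - g) = unemb f - unemb (g::'a option \<times> 'w \<Rightarrow> 'k::field)" by (auto simp: unemb_def fun_eq_iff)
lemma unemb_scale[simp]: "unemb (\<lambda>x. c * f x) = (\<lambda>u. c * unemb f u)" by (auto simp: unemb_def)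
lemma unemb_zero[simp]: "unemb 0 = 0" by (auto simp: unemb_def fun_eq_iff)
lemma emb_add[simp]: "emb (f + g) = emb f + (emb g :: 'a option \<times> 'w \<Rightarrow> 'k::field)"
  by (auto simp: emb_def fun_eq_iff split: option.splits)
lemma emb_scale[simp]: "emb (\<lambda>u. c * f u) = (\<lambda>x. c * (emb f :: 'a option \<times> 'w \<Rightarrow> 'k::field) x)"
  by (auto simp: emb_def fun_eq_iff split: option.splits)
lemma emb_zero[simp]: "emb 0 = (0 :: 'a option \<times> 'w \<Rightarrow> 'k::field)"
  by (auto simp: emb_def fun_eq_iff split: option.splits)
lemma unemb_emb[simp]: "unemb (emb m) = m" by (auto simp: unemb_def emb_def)
lemma comp_emb[simp]: "comp \<alpha> (emb m) = 0" by (auto simp: comp_def emb_def fun_eq_iff)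
lemma comp_inj_comp[simp]: "comp \<beta> (inj_comp \<alpha> z) = (if \<beta> = \<alpha> then z else 0)"
  by (auto simp: comp_def inj_comp_def fun_eq_iff)
lemma unemb_inj_comp[simp]: "unemb (inj_comp \<alpha> z) = 0"
  by (auto simp: unemb_def inj_comp_def fun_eq_iff)
lemma emb_inj: "emb m = emb m' \<Longrightarrow> m = m'"
  by (metis unemb_emb)
lemma inj_comp_add: "inj_comp \<alpha> (z + z') = inj_comp \<alpha> z + inj_comp \<alpha> (z'::'w \<Rightarrow> 'k::field)"
  by (rule ext_opt) (auto simp: unemb_apply[symmetric])
lemma comp_Dact[simp]: "comp \<alpha> (Dact Sf g f) = (if \<alpha> \<in> Sf then g \<alpha> (comp \<alpha> f) else 0)"
  by (auto simp: comp_def Dact_def fun_eq_iff)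
lemma unemb_Dact[simp]: "unemb (Dact Sf g f) = 0"
  by (auto simp: unemb_def Dact_def fun_eq_iff)

lemma lin_emb: "lin_on S (emb :: ('w \<Rightarrow> 'k::field) \<Rightarrow> ('a option \<times> 'w \<Rightarrow> 'k))"
  by (rule lin_intro) auto
lemma lin_unemb: "lin_on S (unemb :: ('a option \<times> 'w \<Rightarrow> 'k::field) \<Rightarrow> _)"
  by (rule lin_intro) auto
lemma lin_comp: "lin_on S (comp \<alpha> :: ('a option \<times> 'w \<Rightarrow> 'k::field) \<Rightarrow> _)"
  by (rule lin_intro) auto

lemma DSd_mem: "f \<in> DSd S Z \<longleftrightarrow> unemb f = 0 \<and> (\<forall>\<alpha>. \<alpha> \<notin> S \<longrightarrow> comp \<alpha> f = 0) \<and> (\<forall>\<alpha>\<in>S. comp \<alpha> f \<in> Z \<alpha>)"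
  by (auto simp: DSd_def unemb_def fun_eq_iff)

lemma DSd_eqI:
  assumes "f \<in> DSd S Z" "g \<in> DSd S Z" "\<And>\<alpha>. \<alpha> \<in> S \<Longrightarrow> comp \<alpha> f = comp \<alpha> g"
  shows "f = g"
proof (rule ext_opt)
  fix u show "f (None, u) = g (None, u)" using assms(1,2) unfolding DSd_def by auto
next
  fix \<alpha> show "comp \<alpha> f = comp \<alpha> g" using assms unfolding DSd_def by (cases "\<alpha> \<in> S") auto
qed

lemma DSd_subspace: "(\<And>\<alpha>. \<alpha> \<in> S \<Longrightarrow> is_subspace (Z \<alpha>)) \<Longrightarrow> is_subspace (DSd S Z)"
  by (rule subspace_intro) (auto simp: DSd_mem subspace_0 subspace_add subspace_scale)

lemma inj_comp_DSd: "(\<And>\<alpha>. \<alpha> \<in> S \<Longrightarrow> is_subspace (Z \<alpha>)) \<Longrightarrow> \<alpha> \<in> S \<Longrightarrow> z \<in> Z \<alpha> \<Longrightarrow> inj_comp \<alpha> z \<in> DSd S Z"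
  by (auto simp: DSd_mem subspace_0)

lemma DSd_decomp:
  assumes "finite S" "f \<in> DSd S Z"
  shows "f = (\<Sum>\<alpha>\<in>S. inj_comp \<alpha> (comp \<alpha> f))"
proof (rule ext_opt)
  fix u
  have "(\<Sum>\<alpha>\<in>S. inj_comp \<alpha> (comp \<alpha> f)) (None, u) = 0"
    by (simp add: sum_fun_apply inj_comp_def)
  then show "f (None, u) = (\<Sum>\<alpha>\<in>S. inj_comp \<alpha> (comp \<alpha> f)) (None, u)" using assms(2) unfolding DSd_def by auto
next
  fix \<beta>
  have "comp \<beta> (\<Sum>\<alpha>\<in>S. inj_comp \<alpha> (comp \<alpha> f)) = (\<Sum>\<alpha>\<in>S. (if \<beta> = \<alpha> then comp \<alpha> f else 0))"
    by (simp add: comp_sum)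
  also have "\<dots> = (if \<beta> \<in> S then comp \<beta> f else 0)"
    using assms(1) by (simp add: sum.delta)
  also have "\<dots> = comp \<beta> f" using assms(2) unfolding DSd_def by auto
  finally show "comp \<beta> f = comp \<beta> (\<Sum>\<alpha>\<in>S. inj_comp \<alpha> (comp \<alpha> f))" by simp
qed

lemma Dact_DSd:
  assumes "S \<subseteq> Sf" "\<And>\<alpha>. \<alpha> \<in> Sf \<Longrightarrow> is_subspace (Z \<alpha>)"
    "\<And>\<alpha>. \<alpha> \<in> Sf \<Longrightarrow> lin_on (Z \<alpha>) (g \<alpha>) \<and> g \<alpha> ` Z \<alpha> \<subseteq> Z \<alpha>"
    "f \<in> DSd S Z"
  shows "Dact Sf g f \<in> DSd S Z"
  unfolding DSd_mem
proof (intro conjI allI impI ballI)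
  show "unemb (Dact Sf g f) = 0" by simp
  fix \<alpha> assume "\<alpha> \<notin> S"
  then have "comp \<alpha> f = 0" using assms(4) unfolding DSd_mem by auto
  show "comp \<alpha> (Dact Sf g f) = 0"
  proof (cases "\<alpha> \<in> Sf")
    case True
    then have "g \<alpha> 0 = 0" using assms(2,3) lin_0[of "Z \<alpha>" "g \<alpha>"] by blast
    then show ?thesis using \<open>comp \<alpha> f = 0\<close> True by simp
  qed simp
next
  fix \<alpha> assume "\<alpha> \<in> S"
  then show "comp \<alpha> (Dact Sf g f) \<in> Z \<alpha>" using assms unfolding DSd_mem by (auto simp: image_subset_iff)
qed

lemma Dact_lin:
  assumes "S \<subseteq> Sf" "\<And>\<alpha>. \<alpha> \<in> Sf \<Longrightarrow> is_subspace (Z \<alpha>)"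
    "\<And>\<alpha>. \<alpha> \<in> Sf \<Longrightarrow> lin_on (Z \<alpha>) (g \<alpha>) \<and> g \<alpha> ` Z \<alpha> \<subseteq> Z \<alpha>"
  shows "lin_on (DSd S Z) (Dact Sf g)"
proof (rule lin_intro)
  fix x y assume x: "x \<in> DSd S Z" and y: "y \<in> DSd S Z"
  show "Dact Sf g (x + y) = Dact Sf g x + Dact Sf g y"
  proof (rule ext_opt)
    fix u show "Dact Sf g (x + y) (None, u) = (Dact Sf g x + Dact Sf g y) (None, u)" by (simp add: Dact_def)
  next
    fix \<alpha> show "comp \<alpha> (Dact Sf g (x + y)) = comp \<alpha> (Dact Sf g x + Dact Sf g y)"
    proof (cases "\<alpha> \<in> Sf")
      case True
      show ?thesis
      proof (cases "\<alpha> \<in> S")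
        case True
        then have "comp \<alpha> x \<in> Z \<alpha>" "comp \<alpha> y \<in> Z \<alpha>" using x y unfolding DSd_mem by auto
        moreover have "lin_on (Z \<alpha>) (g \<alpha>)" using \<open>\<alpha> \<in> Sf\<close> assms(3) by blast
        ultimately have "g \<alpha> (comp \<alpha> x + comp \<alpha> y) = g \<alpha> (comp \<alpha> x) + g \<alpha> (comp \<alpha> y)"
          by (intro lin_add) auto
        then show ?thesis using \<open>\<alpha> \<in> Sf\<close> by simp
      next
        case False
        then have "comp \<alpha> x = 0" "comp \<alpha> y = 0" using x y unfolding DSd_mem by auto
        moreover have "g \<alpha> 0 = 0" using \<open>\<alpha> \<in> Sf\<close> assms(2,3) lin_0[of "Z \<alpha>" "g \<alpha>"] by blast
        ultimately show ?thesis using \<open>\<alpha> \<in> Sf\<close> by simp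
      qed
    qed simp
  qed
next
  fix c x assume x: "x \<in> DSd S Z"
  show "Dact Sf g (\<lambda>u. c * x u) = (\<lambda>u. c * Dact Sf g x u)"
  proof (rule ext_opt)
    fix u show "Dact Sf g (\<lambda>u. c * x u) (None, u) = c * Dact Sf g x (None, u)" by (simp add: Dact_def)
  next
    fix \<alpha> show "comp \<alpha> (Dact Sf g (\<lambda>u. c * x u)) = comp \<alpha> (\<lambda>u. c * Dact Sf g x u)"
    proof (cases "\<alpha> \<in> Sf")
      case True
      show ?thesis
      proof (cases "\<alpha> \<in> S")
        case True
        then have "comp \<alpha> x \<in> Z \<alpha>" using x unfolding DSd_mem by auto
        moreover have "lin_on (Z \<alpha>) (g \<alpha>)" using \<open>\<alpha> \<in> Sf\<close> assms(3) by blast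
        ultimately have "g \<alpha> (\<lambda>u. c * comp \<alpha> x u) = (\<lambda>u. c * g \<alpha> (comp \<alpha> x) u)"
          by (intro lin_scale) auto
        then show ?thesis using \<open>\<alpha> \<in> Sf\<close> by simp
      next
        case False
        then have "comp \<alpha> x = 0" using x unfolding DSd_mem by auto
        moreover have "g \<alpha> 0 = 0" using \<open>\<alpha> \<in> Sf\<close> assms(2,3) lin_0[of "Z \<alpha>" "g \<alpha>"] by blast
        ultimately show ?thesis using \<open>\<alpha> \<in> Sf\<close> by simp
      qed
    qed simp
  qed
qed

lemma sm_zero_eq: "sm {0::'x \<Rightarrow> 'k::field} E F V \<Longrightarrow> V = {0}"
  unfolding sm_def using subspace_0[of V] by blast

lemma sm_zero_chain: "has_chain (sm {0::'x \<Rightarrow> 'k::field} E F) n \<Longrightarrow> n = 0"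
proof (rule ccontr)
  assume "has_chain (sm {0} E F) n" "n \<noteq> 0"
  then obtain U where U: "\<forall>j\<le>n. sm {0} E F (U j)" "\<forall>j<n. U j \<subset> U (Suc j)" unfolding has_chain_def by blast
  have "sm {0} E F (U 0)" using U(1) by simp
  moreover have "sm {0} E F (U (Suc 0))" using U(1) \<open>n \<noteq> 0\<close> by simp
  ultimately have "U 0 = U (Suc 0)" using sm_zero_eq by metis
  moreover have "U 0 \<subset> U (Suc 0)" using U(2) \<open>n \<noteq> 0\<close> by simp
  ultimately show False by simp
qed

lemma DSd_length:
  fixes Z :: "'a \<Rightarrow> ('w \<Rightarrow> 'k::field) set" and g :: "'e \<Rightarrow> 'a \<Rightarrow> ('w \<Rightarrow> 'k) \<Rightarrow> ('w \<Rightarrow> 'k)"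
  assumes fin: "finite Sf" and Z: "\<And>\<alpha>. \<alpha> \<in> Sf \<Longrightarrow> is_subspace (Z \<alpha>)"
    and g: "\<And>e \<alpha>. e \<in> E \<Longrightarrow> \<alpha> \<in> Sf \<Longrightarrow> lin_on (Z \<alpha>) (g e \<alpha>) \<and> g e \<alpha> ` Z \<alpha> \<subseteq> Z \<alpha>"
    and finZ: "\<And>\<alpha>. \<alpha> \<in> Sf \<Longrightarrow> finite_length (sm (Z \<alpha>) E (\<lambda>e. g e \<alpha>))"
    and SSf0: "S \<subseteq> Sf"
  shows "finite_length (sm (DSd S Z) E (\<lambda>e. Dact Sf (g e))) \<and>
     mod_length (sm (DSd S Z) E (\<lambda>e. Dact Sf (g e))) = (\<Sum>\<alpha>\<in>S. mod_length (sm (Z \<alpha>) E (\<lambda>e. g e \<alpha>)))"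
proof -
  have "finite S" using fin SSf0 finite_subset by blast
  from this SSf0 show ?thesis
proof (induction S rule: finite_subset_induct')
  case empty
  have D0: "DSd {} Z = {0}"
  proof
    show "DSd {} Z \<subseteq> {0}"
    proof
      fix f assume f: "f \<in> DSd {} Z"
      have "f = 0" by (rule ext_opt) (use f in \<open>auto simp: DSd_def\<close>)
      then show "f \<in> {0}" by simp
    qed
    show "{0} \<subseteq> DSd {} Z" by (auto simp: DSd_mem)
  qed
  have z: "\<And>n. has_chain (sm (DSd {} Z) E (\<lambda>e. Dact Sf (g e))) n \<Longrightarrow> n = 0"
    unfolding D0 by (rule sm_zero_chain)
  then have fl: "finite_length (sm (DSd {} Z) E (\<lambda>e. Dact Sf (g e)))"
    by (intro finite_length_bound[of _ 0]) auto
  have "sm (DSd {} Z) E (\<lambda>e. Dact Sf (g e)) (DSd {} Z)"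
    unfolding sm_def using DSd_subspace[of "{}" Z] Dact_DSd[of "{}" Sf Z] Z g by auto
  then have h0: "has_chain (sm (DSd {} Z) E (\<lambda>e. Dact Sf (g e))) 0" by (rule has_chain_0)
  have "mod_length (sm (DSd {} Z) E (\<lambda>e. Dact Sf (g e))) = 0"
    unfolding mod_length_def by (rule Greatest_equality[where P="has_chain (sm (DSd {} Z) E (\<lambda>e. Dact Sf (g e)))", OF h0]) (use z in auto)
  then show ?case using fl by simp
next
  case (insert \<beta> S)
  let ?X = "DSd (insert \<beta> S) Z"
  have SSf: "insert \<beta> S \<subseteq> Sf" using insert by auto
  have X: "is_subspace ?X" by (rule DSd_subspace) (use Z SSf in blast)
  have FX: "\<forall>e\<in>E. Dact Sf (g e) ` ?X \<subseteq> ?X"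
  proof (intro ballI subsetI)
    fix e y assume e: "e \<in> E" and "y \<in> Dact Sf (g e) ` ?X"
    then obtain x where x: "x \<in> ?X" "y = Dact Sf (g e) x" by blast
    have "Dact Sf (g e) x \<in> ?X"
      by (rule Dact_DSd[OF SSf Z _ x(1)]) (use g e in auto)
    then show "y \<in> ?X" using x by simp
  qed
  have pi: "lin_on ?X (comp \<beta>)" by (rule lin_comp)
  have pim: "comp \<beta> ` ?X = Z \<beta>"
  proof
    show "comp \<beta> ` ?X \<subseteq> Z \<beta>" by (auto simp: DSd_mem)
    show "Z \<beta> \<subseteq> comp \<beta> ` ?X"
    proof
      fix z assume "z \<in> Z \<beta>"
      then have "inj_comp \<beta> z \<in> ?X" by (intro inj_comp_DSd) (use Z SSf in auto)
      then show "z \<in> comp \<beta> ` ?X" by (metis comp_inj_comp image_eqI)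
    qed
  qed
  have bSf: "\<beta> \<in> Sf" using SSf by simp
  have z0: "0 \<in> Z \<beta>" using subspace_0 Z bSf by blast
  have K: "DSd S Z = {x\<in>?X. comp \<beta> x = 0}"
  proof
    show "DSd S Z \<subseteq> {x\<in>?X. comp \<beta> x = 0}" using insert(4) z0 by (auto simp: DSd_mem)
    show "{x\<in>?X. comp \<beta> x = 0} \<subseteq> DSd S Z" by (auto simp: DSd_mem)
  qed
  have G: "\<forall>e\<in>E. lin_on (Z \<beta>) (g e \<beta>)" using g bSf by blast
  have eqv: "\<forall>e\<in>E. \<forall>x\<in>?X. comp \<beta> (Dact Sf (g e) x) = g e \<beta> (comp \<beta> x)" using bSf by simp
  have IH: "finite_length (sm (DSd S Z) E (\<lambda>e. Dact Sf (g e)))"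
     "mod_length (sm (DSd S Z) E (\<lambda>e. Dact Sf (g e))) = (\<Sum>\<alpha>\<in>S. mod_length (sm (Z \<alpha>) E (\<lambda>e. g e \<alpha>)))"
    using insert(5) by auto
  have fb: "finite_length (sm (Z \<beta>) E (\<lambda>e. g e \<beta>))" using finZ bSf by blast
  have "finite_length (sm ?X E (\<lambda>e. Dact Sf (g e))) \<and>
    mod_length (sm ?X E (\<lambda>e. Dact Sf (g e))) =
     mod_length (sm (DSd S Z) E (\<lambda>e. Dact Sf (g e))) + mod_length (sm (Z \<beta>) E (\<lambda>e. g e \<beta>))"
    by (rule sm_add[OF X FX Z[OF bSf] pi pim G eqv K IH(1) fb])
  moreover have "(\<Sum>\<alpha>\<in>insert \<beta> S. mod_length (sm (Z \<alpha>) E (\<lambda>e. g e \<alpha>))) =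
     mod_length (sm (Z \<beta>) E (\<lambda>e. g e \<beta>)) + (\<Sum>\<alpha>\<in>S. mod_length (sm (Z \<alpha>) E (\<lambda>e. g e \<alpha>)))"
    by (rule sum.insert) (use insert in auto)
  ultimately show ?case using IH(2) by simp
qed
qed



lemma fadd_eq: "fadd x y = x + y" by (auto simp: fadd_def fun_eq_iff)
lemma fzero_eq: "fzero = 0" by (auto simp: fzero_def fun_eq_iff)
lemma fscale_app: "fscale c x j = (\<lambda>u. c * x j u)" by (simp add: fscale_def)

definition Sub :: "'v set \<Rightarrow> ('v \<Rightarrow> ('w \<Rightarrow> 'k::field) set) \<Rightarrow> ('v \<Rightarrow> ('w \<Rightarrow> 'k) set) \<Rightarrow> ('v \<Rightarrow> 'w \<Rightarrow> 'k) set" where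
  "Sub V Mv P = {x \<in> tot V Mv. \<forall>j\<in>V. x j \<in> P j}"

locale gq =
  fixes V :: "'v set" and A :: "'a set" and s t :: "'a \<Rightarrow> 'v"
    and Mv :: "'v \<Rightarrow> ('w \<Rightarrow> 'k::field) set" and Ma :: "'a \<Rightarrow> ('w \<Rightarrow> 'k) \<Rightarrow> ('w \<Rightarrow> 'k)"
  assumes fq: "finite_quiver V A s t" and noc: "no_oriented_cycles V A s t"
    and gen: "generic V A s t Mv Ma"
begin

abbreviation "E \<equiv> endos V A s t Mv Ma"

lemma rep: "is_rep V A s t Mv Ma" using gen unfolding generic_def by auto
lemma Mv_sub: "j \<in> V \<Longrightarrow> is_subspace (Mv j)" using rep unfolding is_rep_def by auto
lemma Mv_0: "j \<in> V \<Longrightarrow> 0 \<in> Mv j" using subspace_0[OF Mv_sub] by blast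
lemma Ma_lin: "\<alpha> \<in> A \<Longrightarrow> lin_on (Mv (s \<alpha>)) (Ma \<alpha>)" using rep unfolding is_rep_def by auto
lemma Ma_into: "\<alpha> \<in> A \<Longrightarrow> x \<in> Mv (s \<alpha>) \<Longrightarrow> Ma \<alpha> x \<in> Mv (t \<alpha>)" using rep unfolding is_rep_def by auto
lemma st_V: "\<alpha> \<in> A \<Longrightarrow> s \<alpha> \<in> V" "\<alpha> \<in> A \<Longrightarrow> t \<alpha> \<in> V" using fq unfolding finite_quiver_def by auto
lemma finA: "finite A" using fq unfolding finite_quiver_def by auto
lemma finV: "finite V" using fq unfolding finite_quiver_def by auto
lemma Ma_0: "\<alpha> \<in> A \<Longrightarrow> Ma \<alpha> 0 = 0" using lin_0[OF Mv_sub[OF st_V(1)] Ma_lin] by blast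
lemma noloop: "\<alpha> \<in> A \<Longrightarrow> s \<alpha> \<noteq> t \<alpha>"
proof
  assume a: "\<alpha> \<in> A" "s \<alpha> = t \<alpha>"
  then have "(\<lambda>x y. \<exists>\<alpha>\<in>A. s \<alpha> = x \<and> t \<alpha> = y)\<^sup>+\<^sup>+ (s \<alpha>) (s \<alpha>)" by (intro tranclp.r_into_trancl) auto
  then show False using noc unfolding no_oriented_cycles_def by blast
qed

lemma esub_eq: "esub V A s t Mv Ma j = sm (Mv j) E (\<lambda>\<phi>. \<phi> j)"
  by (rule ext) (simp add: esub_def sm_def)

lemma endo_lin: "\<phi> \<in> E \<Longrightarrow> j \<in> V \<Longrightarrow> lin_on (Mv j) (\<phi> j)" unfolding endos_def by auto
lemma endo_into: "\<phi> \<in> E \<Longrightarrow> j \<in> V \<Longrightarrow> x \<in> Mv j \<Longrightarrow> \<phi> j x \<in> Mv j" unfolding endos_def by auto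
lemma endo_comm: "\<phi> \<in> E \<Longrightarrow> \<alpha> \<in> A \<Longrightarrow> x \<in> Mv (s \<alpha>) \<Longrightarrow> \<phi> (t \<alpha>) (Ma \<alpha> x) = Ma \<alpha> (\<phi> (s \<alpha>) x)"
  unfolding endos_def by auto
lemma endo_0: "\<phi> \<in> E \<Longrightarrow> j \<in> V \<Longrightarrow> \<phi> j 0 = 0" using lin_0[OF Mv_sub endo_lin] by blast

lemma fin_j:
  assumes j: "j \<in> V"
  shows "finite_length (sm (Mv j) E (\<lambda>\<phi>. \<phi> j))"
proof -
  have ef: "finite_length (esub_tot V A s t Mv Ma)" using gen unfolding generic_def endo_finite_def by auto
  then obtain N where N: "\<And>n. has_chain (esub_tot V A s t Mv Ma) n \<Longrightarrow> n \<le> N" unfolding finite_length_def by blast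
  define H where "H U = {x\<in>tot V Mv. x j \<in> U \<and> (\<forall>l. l \<noteq> j \<longrightarrow> x l = 0)}" for U
  have "has_chain (esub_tot V A s t Mv Ma) n" if "has_chain (sm (Mv j) E (\<lambda>\<phi>. \<phi> j)) n" for n
  proof (rule chain_transfer[OF _ _ that, of _ H])
    fix U assume U: "sm (Mv j) E (\<lambda>\<phi>. \<phi> j) U"
    then have Us: "U \<subseteq> Mv j" "is_subspace U" "\<And>\<phi> x. \<phi> \<in> E \<Longrightarrow> x \<in> U \<Longrightarrow> \<phi> j x \<in> U"
      unfolding sm_def by auto
    show "esub_tot V A s t Mv Ma (H U)" unfolding esub_tot_def
    proof (intro conjI)
      show "H U \<subseteq> tot V Mv" unfolding H_def by auto
      show "fsubspace (H U)" unfolding fsubspace_def fadd_eq fzero_eq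
      proof (intro conjI ballI allI)
        show "0 \<in> H U" unfolding H_def tot_def using subspace_0 Mv_sub Us(2) by auto
        fix x y assume "x \<in> H U" "y \<in> H U"
        then show "x + y \<in> H U" unfolding H_def tot_def using subspace_add Mv_sub Us(2) by auto
      next
        fix c x assume "x \<in> H U"
        then show "fscale c x \<in> H U" unfolding H_def tot_def fscale_def using subspace_scale Mv_sub Us(2)
          by auto
      qed
      show "\<forall>\<phi>\<in>E. \<forall>x\<in>H U. (\<lambda>l. if l \<in> V then \<phi> l (x l) else x l) \<in> H U"
      proof (intro ballI)
        fix \<phi> x assume \<phi>: "\<phi> \<in> E" and x: "x \<in> H U"
        have xt: "x \<in> tot V Mv" "x j \<in> U" "\<And>l. l \<noteq> j \<Longrightarrow> x l = 0" using x unfolding H_def by auto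
        show "(\<lambda>l. if l \<in> V then \<phi> l (x l) else x l) \<in> H U" unfolding H_def tot_def
        proof (intro CollectI conjI allI ballI impI)
          fix l assume "l \<in> V"
          then show "(if l \<in> V then \<phi> l (x l) else x l) \<in> Mv l" using endo_into[OF \<phi>] xt(1) unfolding tot_def by auto
        next
          fix l assume "l \<notin> V" then show "(if l \<in> V then \<phi> l (x l) else x l) = (\<lambda>_. 0)" using xt(1) unfolding tot_def by auto
        next
          show "(if j \<in> V then \<phi> j (x j) else x j) \<in> U" using j Us(3)[OF \<phi> xt(2)] by simp
        next
          fix l assume "l \<noteq> j"
          then show "(if l \<in> V then \<phi> l (x l) else x l) = 0" using xt(3) endo_0[OF \<phi>] by auto
        qed
      qed
    qed
  next
    fix U U' assume "sm (Mv j) E (\<lambda>\<phi>. \<phi> j) U" "sm (Mv j) E (\<lambda>\<phi>. \<phi> j) U'" "U \<subset> U'"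
    then obtain u where u: "u \<in> U'" "u \<notin> U" "U \<subseteq> U'" "U' \<subseteq> Mv j" unfolding sm_def by auto
    have "(\<lambda>l. if l = j then u else 0) \<in> H U'" unfolding H_def tot_def using u j subspace_0 Mv_sub by auto
    moreover have "(\<lambda>l. if l = j then u else 0) \<notin> H U" unfolding H_def using u by auto
    moreover have "H U \<subseteq> H U'" unfolding H_def using u by auto
    ultimately show "H U \<subset> H U'" by blast
  qed
  then show ?thesis using N unfolding finite_length_def by blast
qed

lemma Sub_ksub:
  assumes P: "\<And>j. j \<in> V \<Longrightarrow> is_subspace (P j) \<and> P j \<subseteq> Mv j"
    and arr: "\<And>\<alpha> x. \<alpha> \<in> A \<Longrightarrow> x \<in> P (s \<alpha>) \<Longrightarrow> Ma \<alpha> x \<in> P (t \<alpha>)"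
  shows "ksub V A s t Mv Ma (Sub V Mv P)"
  unfolding ksub_def
proof (intro conjI)
  show "Sub V Mv P \<subseteq> tot V Mv" unfolding Sub_def by auto
  have Pa: "a + b \<in> P j" "a + b \<in> Mv j" if "j \<in> V" "a \<in> P j" "b \<in> P j" for j a b
    using P[OF that(1)] subspace_add that by blast+
  have Ps: "(\<lambda>u. c * a u) \<in> P j" "(\<lambda>u. c * a u) \<in> Mv j" if "j \<in> V" "a \<in> P j" for j a c
    using P[OF that(1)] subspace_scale that by blast+
  have P0: "0 \<in> P j" "0 \<in> Mv j" if "j \<in> V" for j
    using P[OF that(1)] subspace_0 that by blast+
  have PM: "a \<in> Mv j" if "j \<in> V" "a \<in> P j" for j a using P[OF that(1)] that by blast
  show "fsubspace (Sub V Mv P)" unfolding fsubspace_def fadd_eq fzero_eq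
  proof (intro conjI ballI allI)
    show "0 \<in> Sub V Mv P" unfolding Sub_def tot_def using P0 by auto
    fix x y assume "x \<in> Sub V Mv P" "y \<in> Sub V Mv P"
    then show "x + y \<in> Sub V Mv P" unfolding Sub_def tot_def using Pa by auto
  next
    fix c x assume "x \<in> Sub V Mv P"
    then show "fscale c x \<in> Sub V Mv P" unfolding Sub_def tot_def fscale_def using Ps by auto
  qed
  show "\<forall>j\<in>V. \<forall>x\<in>Sub V Mv P. (\<lambda>l. if l = j then x j else (\<lambda>_. 0)) \<in> Sub V Mv P"
    unfolding Sub_def tot_def using P0 by auto
  show "\<forall>\<alpha>\<in>A. \<forall>x\<in>Sub V Mv P. (\<lambda>l. if l = t \<alpha> then Ma \<alpha> (x (s \<alpha>)) else (\<lambda>_. 0)) \<in> Sub V Mv P"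
  proof (intro ballI)
    fix \<alpha> x assume \<alpha>: "\<alpha> \<in> A" and x: "x \<in> Sub V Mv P"
    have "x (s \<alpha>) \<in> P (s \<alpha>)" using x st_V[OF \<alpha>] unfolding Sub_def by auto
    then have m: "Ma \<alpha> (x (s \<alpha>)) \<in> P (t \<alpha>)" using arr \<alpha> by auto
    then show "(\<lambda>l. if l = t \<alpha> then Ma \<alpha> (x (s \<alpha>)) else (\<lambda>_. 0)) \<in> Sub V Mv P"
      unfolding Sub_def tot_def using P0 PM st_V[OF \<alpha>] by auto
  qed
qed

lemma decomp:
  assumes P: "\<And>j. j \<in> V \<Longrightarrow> is_subspace (P j) \<and> P j \<subseteq> Mv j"
    and Q: "\<And>j. j \<in> V \<Longrightarrow> is_subspace (Q j) \<and> Q j \<subseteq> Mv j"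
    and PQ: "\<And>j. j \<in> V \<Longrightarrow> P j \<inter> Q j = {0}"
    and sum: "\<And>j m. j \<in> V \<Longrightarrow> m \<in> Mv j \<Longrightarrow> \<exists>p\<in>P j. \<exists>q\<in>Q j. m = p + q"
    and arrP: "\<And>\<alpha> x. \<alpha> \<in> A \<Longrightarrow> x \<in> P (s \<alpha>) \<Longrightarrow> Ma \<alpha> x \<in> P (t \<alpha>)"
    and arrQ: "\<And>\<alpha> x. \<alpha> \<in> A \<Longrightarrow> x \<in> Q (s \<alpha>) \<Longrightarrow> Ma \<alpha> x \<in> Q (t \<alpha>)"
  shows "(\<forall>j\<in>V. P j = {0}) \<or> (\<forall>j\<in>V. Q j = {0})"
proof (rule ccontr)
  assume "\<not> ?thesis"
  then obtain j1 j2 where j: "j1 \<in> V" "P j1 \<noteq> {0}" "j2 \<in> V" "Q j2 \<noteq> {0}" by auto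
  have ind: "indecomposable V A s t Mv Ma" using gen unfolding generic_def by auto
  have kP: "ksub V A s t Mv Ma (Sub V Mv P)" by (rule Sub_ksub[OF P arrP])
  have kQ: "ksub V A s t Mv Ma (Sub V Mv Q)" by (rule Sub_ksub[OF Q arrQ])
  have nz: "Sub V Mv R \<noteq> {fzero}" if R: "\<And>j. j \<in> V \<Longrightarrow> is_subspace (R j) \<and> R j \<subseteq> Mv j"
    and jj: "jj \<in> V" "R jj \<noteq> {0}" for R jj
  proof -
    have R0: "0 \<in> R l" if "l \<in> V" for l using R[OF that] subspace_0 by blast
    have RM: "a \<in> Mv l" if "l \<in> V" "a \<in> R l" for l a using R[OF that(1)] that(2) by blast
    obtain r where r: "r \<in> R jj" "r \<noteq> 0" using jj R0 by blast
    have "(\<lambda>l. if l = jj then r else 0) \<in> Sub V Mv R" unfolding Sub_def tot_def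
    proof (intro CollectI conjI ballI allI impI)
      fix l assume "l \<in> V" then show "(if l = jj then r else 0) \<in> Mv l" using R0 RM r jj by (cases "l = jj") auto
    next
      fix l assume "l \<notin> V" then show "(if l = jj then r else 0) = (\<lambda>_. 0)" using jj by (cases "l = jj") auto
    next
      fix l assume "l \<in> V" then show "(if l = jj then r else 0) \<in> R l" using R0 r by (cases "l = jj") auto
    qed
    moreover have "(\<lambda>l. if l = jj then r else 0) \<noteq> fzero"
    proof
      assume h: "(\<lambda>l. if l = jj then r else 0) = fzero"
      have "(\<lambda>l. if l = jj then r else 0) jj = fzero jj" using fun_cong[OF h, of jj] .
      then show False using r by (simp add: fzero_def)
    qed
    ultimately show ?thesis by auto
  qed
  have int: "Sub V Mv P \<inter> Sub V Mv Q = {fzero}"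
  proof
    show "Sub V Mv P \<inter> Sub V Mv Q \<subseteq> {fzero}"
    proof
      fix x assume x: "x \<in> Sub V Mv P \<inter> Sub V Mv Q"
      have "x l = 0" for l
      proof (cases "l \<in> V")
        case True then show ?thesis using x PQ unfolding Sub_def by blast
      next
        case False then show ?thesis using x unfolding Sub_def tot_def by auto
      qed
      then show "x \<in> {fzero}" unfolding fzero_eq by auto
    qed
    have "0 \<in> P l" "0 \<in> Q l" "0 \<in> Mv l" if "l \<in> V" for l using P[OF that] Q[OF that] subspace_0 by blast+
    then show "{fzero} \<subseteq> Sub V Mv P \<inter> Sub V Mv Q" unfolding fzero_eq Sub_def tot_def by auto
  qed
  have tot: "tot V Mv = {fadd x y | x y. x \<in> Sub V Mv P \<and> y \<in> Sub V Mv Q}"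
  proof
    show "tot V Mv \<subseteq> {fadd x y | x y. x \<in> Sub V Mv P \<and> y \<in> Sub V Mv Q}"
    proof
      fix z assume z: "z \<in> tot V Mv"
      have ex: "\<exists>p. p \<in> P l \<and> (\<exists>q\<in>Q l. z l = p + q)" if "l \<in> V" for l
        using sum[OF that] z that unfolding tot_def by blast
      define p where "p l = (SOME p. p \<in> P l \<and> (\<exists>q\<in>Q l. z l = p + q))" for l
      define q where "q l = z l - p l" for l
      have pq: "p l \<in> P l \<and> q l \<in> Q l \<and> z l = p l + q l" if "l \<in> V" for l
      proof -
        have "p l \<in> P l \<and> (\<exists>q\<in>Q l. z l = p l + q)" unfolding p_def by (rule someI_ex[OF ex[OF that]])
        then obtain q' where "p l \<in> P l" "q' \<in> Q l" "z l = p l + q'" by blast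
        moreover then have "q l = q'" unfolding q_def by simp
        ultimately show ?thesis by simp
      qed
      define x where "x l = (if l \<in> V then p l else 0)" for l
      define y where "y l = (if l \<in> V then q l else 0)" for l
      have PM: "a \<in> Mv l" if "l \<in> V" "a \<in> P l" for l a using P[OF that(1)] that(2) by blast
      have QM: "a \<in> Mv l" if "l \<in> V" "a \<in> Q l" for l a using Q[OF that(1)] that(2) by blast
      have "x \<in> Sub V Mv P" unfolding Sub_def tot_def x_def
      proof (intro CollectI conjI ballI allI impI)
        fix l assume l: "l \<in> V"
        show "(if l \<in> V then p l else 0) \<in> Mv l" using pq[OF l] PM[OF l] l by simp
        show "(if l \<in> V then p l else 0) \<in> P l" using pq[OF l] l by simp
      qed simp
      moreover have "y \<in> Sub V Mv Q" unfolding Sub_def tot_def y_def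
      proof (intro CollectI conjI ballI allI impI)
        fix l assume l: "l \<in> V"
        show "(if l \<in> V then q l else 0) \<in> Mv l" using pq[OF l] QM[OF l] l by simp
        show "(if l \<in> V then q l else 0) \<in> Q l" using pq[OF l] l by simp
      qed simp
      moreover have "z = fadd x y" unfolding fadd_eq
      proof
        fix l show "z l = (x + y) l"
          using pq[of l] z unfolding x_def y_def tot_def by (cases "l \<in> V") auto
      qed
      ultimately show "z \<in> {fadd x y | x y. x \<in> Sub V Mv P \<and> y \<in> Sub V Mv Q}" by blast
    qed
    show "{fadd x y | x y. x \<in> Sub V Mv P \<and> y \<in> Sub V Mv Q} \<subseteq> tot V Mv"
      unfolding fadd_eq Sub_def tot_def by (auto intro!: subspace_add[OF Mv_sub])
  qed
  show False using ind kP kQ nz[OF P j(1,2)] nz[OF Q j(3,4)] int tot unfolding indecomposable_def by blast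
qed

lemma concentrated:
  assumes i: "i \<in> V" and z: "\<And>j. j \<in> V \<Longrightarrow> j \<noteq> i \<Longrightarrow> Mv j = {0}"
  shows False
proof (cases "\<exists>a\<in>Mv i. \<exists>b\<in>Mv i. a \<noteq> 0 \<and> (\<forall>c. b \<noteq> (\<lambda>u. c * a u))")
  case True
  then obtain a b where ab: "a \<in> Mv i" "b \<in> Mv i" "a \<noteq> 0" "\<And>c. b \<noteq> (\<lambda>u. c * a u)" by blast
  define L where "L = {(\<lambda>u. c * a u) | c. True}"
  have Ls: "is_subspace L" unfolding L_def
  proof (rule subspace_intro)
    show "0 \<in> {(\<lambda>u. c * a u) | c. True}" by (auto intro!: exI[of _ 0])
    fix x y assume "x \<in> {(\<lambda>u. c * a u) | c. True}" "y \<in> {(\<lambda>u. c * a u) | c. True}"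
    then obtain c1 c2 where "x = (\<lambda>u. c1 * a u)" "y = (\<lambda>u. c2 * a u)" by auto
    then show "x + y \<in> {(\<lambda>u. c * a u) | c. True}"
      by (auto intro!: exI[of _ "c1 + c2"] simp: fun_eq_iff algebra_simps)
  next
    fix d x assume "x \<in> {(\<lambda>u. c * a u) | c. True}"
    then obtain c1 where "x = (\<lambda>u. c1 * a u)" by auto
    then show "(\<lambda>u. d * x u) \<in> {(\<lambda>u. c * a u) | c. True}"
      by (auto intro!: exI[of _ "d * c1"] simp: fun_eq_iff algebra_simps)
  qed
  have LM: "L \<subseteq> Mv i"
  proof
    fix x assume "x \<in> L"
    then obtain c where "x = (\<lambda>u. c * a u)" unfolding L_def by blast
    then show "x \<in> Mv i" using subspace_scale[OF Mv_sub[OF i] ab(1), of c] by simp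
  qed
  obtain C where C0: "is_subspace C \<and> C \<subseteq> Mv i \<and> C \<inter> L = {0} \<and> (\<forall>w\<in>Mv i. \<exists>c\<in>C. \<exists>l\<in>L. w = c + l)"
    using complement_exists[OF Mv_sub[OF i] Ls LM] by (elim exE)
  then have C: "is_subspace C" "C \<subseteq> Mv i" "C \<inter> L = {0}" "\<And>w. w \<in> Mv i \<Longrightarrow> \<exists>c\<in>C. \<exists>l\<in>L. w = c + l"
    by auto
  define P where "P j = (if j = i then L else {0})" for j
  define Q where "Q j = (if j = i then C else {0})" for j
  have arr: "Ma \<alpha> x \<in> R (t \<alpha>)" if "\<alpha> \<in> A" "x \<in> R (s \<alpha>)" "\<And>j. j \<in> V \<Longrightarrow> j \<noteq> i \<Longrightarrow> R j = {0}"
    "\<And>j. j \<in> V \<Longrightarrow> R j \<subseteq> Mv j \<and> is_subspace (R j)" for \<alpha> x R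
  proof (cases "s \<alpha> = i")
    case True
    then have "t \<alpha> \<noteq> i" using noloop[OF that(1)] True by auto
    moreover have "x \<in> Mv (s \<alpha>)" using that st_V by blast
    ultimately have "Ma \<alpha> x = 0" using Ma_into[OF that(1)] z st_V[OF that(1)] by blast
    then show ?thesis using that st_V subspace_0 by metis
  next
    case False
    then have "x = 0" using that st_V by blast
    then show ?thesis using Ma_0 that st_V subspace_0 by metis
  qed
  have PP: "\<And>j. j \<in> V \<Longrightarrow> is_subspace (P j) \<and> P j \<subseteq> Mv j" unfolding P_def
    using Ls LM subspace_zero Mv_0 by auto
  have QQ: "\<And>j. j \<in> V \<Longrightarrow> is_subspace (Q j) \<and> Q j \<subseteq> Mv j" unfolding Q_def
    using C subspace_zero Mv_0 by auto
  have "(\<forall>j\<in>V. P j = {0}) \<or> (\<forall>j\<in>V. Q j = {0})"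
  proof (rule decomp[OF PP QQ])
    fix j assume "j \<in> V" then show "P j \<inter> Q j = {0}" unfolding P_def Q_def using C(3) by auto
  next
    fix j m assume j: "j \<in> V" and m: "m \<in> Mv j"
    show "\<exists>p\<in>P j. \<exists>q\<in>Q j. m = p + q"
    proof (cases "j = i")
      case True
      then obtain c l where "c \<in> C" "l \<in> L" "m = c + l" using C(4) m by blast
      then show ?thesis unfolding P_def Q_def using True by (metis add.commute)
    next
      case False
      then have "m = 0" using z j m by auto
      then show ?thesis unfolding P_def Q_def using False by auto
    qed
  next
    fix \<alpha> x assume "\<alpha> \<in> A" "x \<in> P (s \<alpha>)"
    then show "Ma \<alpha> x \<in> P (t \<alpha>)" by (rule arr) (use PP in \<open>auto simp: P_def\<close>)
  next
    fix \<alpha> x assume "\<alpha> \<in> A" "x \<in> Q (s \<alpha>)"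
    then show "Ma \<alpha> x \<in> Q (t \<alpha>)" by (rule arr) (use QQ in \<open>auto simp: Q_def\<close>)
  qed
  then show False
  proof
    assume "\<forall>j\<in>V. P j = {0}"
    then have "L = {0}" using i unfolding P_def by auto
    moreover have "a \<in> L" unfolding L_def by (auto intro!: exI[of _ 1])
    ultimately show False using ab(3) by auto
  next
    assume "\<forall>j\<in>V. Q j = {0}"
    then have "C = {0}" using i unfolding Q_def by auto
    then have "b \<in> L" using C(4)[OF ab(2)] by auto
    then show False using ab(4) unfolding L_def by auto
  qed
next
  case False
  then have one: "\<And>a b. a \<in> Mv i \<Longrightarrow> b \<in> Mv i \<Longrightarrow> a \<noteq> 0 \<Longrightarrow> \<exists>c. b = (\<lambda>u. c * a u)" by blast
  have totc: "x l = 0" if "x \<in> tot V Mv" "l \<noteq> i" for x l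
    using that z unfolding tot_def by (cases "l \<in> V") auto
  have "n \<le> 1" if hc: "has_chain (ksub V A s t Mv Ma) n" for n
  proof (rule ccontr)
    assume "\<not> n \<le> 1"
    obtain U where U: "\<forall>j\<le>n. ksub V A s t Mv Ma (U j)" "\<forall>j<n. U j \<subset> U (Suc j)"
      using hc unfolding has_chain_def by blast
    have k: "ksub V A s t Mv Ma (U j)" if j2: "j \<le> 2" for j using U(1) j2 \<open>\<not> n \<le> 1\<close> by auto
    have fs: "fsubspace (U j)" "U j \<subseteq> tot V Mv" if j2: "j \<le> 2" for j using k[OF j2] unfolding ksub_def by auto
    have s01: "U 0 \<subset> U 1" and s12: "U 1 \<subset> U 2" using U(2) \<open>\<not> n \<le> 1\<close> by (auto simp: numeral_2_eq_2)
    obtain x where x: "x \<in> U 1" "x \<notin> U 0" using s01 by auto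
    obtain y where y: "y \<in> U 2" "y \<notin> U 1" using s12 by auto
    have "fzero \<in> U 0" using fs(1)[of 0] unfolding fsubspace_def by auto
    then have "x \<noteq> 0" using x fzero_eq by metis
    have xt: "x \<in> tot V Mv" and yt: "y \<in> tot V Mv" using x y fs(2)[of 1] fs(2)[of 2] by auto
    have "x i \<noteq> 0"
    proof
      assume "x i = 0"
      then have "x = 0" using totc[OF xt] by (auto simp: fun_eq_iff) (metis zero_fun_apply)
      then show False using \<open>x \<noteq> 0\<close> by simp
    qed
    obtain c where c: "y i = (\<lambda>u. c * x i u)" using one[of "x i" "y i"] xt yt i \<open>x i \<noteq> 0\<close> unfolding tot_def by blast
    have "y = fscale c x"
    proof
      fix l show "y l = fscale c x l"
        using c totc[OF xt] totc[OF yt] unfolding fscale_def by (cases "l = i") auto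
    qed
    moreover have "fscale c x \<in> U 1" using fs(1)[of 1] x unfolding fsubspace_def by auto
    ultimately show False using y by auto
  qed
  then have "finite_length (ksub V A s t Mv Ma)" by (rule finite_length_bound)
  then show False using gen unfolding generic_def by auto
qed

end



lemma esub_gen: "esub V A s t Mv Ma j = sm (Mv j) (endos V A s t Mv Ma) (\<lambda>\<phi>. \<phi> j)"
  by (rule ext) (simp add: esub_def sm_def)

lemma lin_conj_emb:
  fixes g :: "('w \<Rightarrow> 'k::field) \<Rightarrow> ('w \<Rightarrow> 'k)"
  assumes l: "lin_on S g"
  shows "lin_on (emb ` S) ((\<lambda>f. emb (g (unemb f))) :: ('a option \<times> 'w \<Rightarrow> 'k) \<Rightarrow> _)"
proof (rule lin_intro, goal_cases)
  case (1 x y)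
  then obtain a b where ab: "a \<in> S" "b \<in> S" "x = emb a" "y = emb b" by blast
  show ?case using ab lin_add[OF l ab(1,2)] by simp
next
  case (2 c x)
  then obtain a where a: "a \<in> S" "x = emb a" by blast
  show ?case using a lin_scale[OF l a(1)] by simp
qed

lemma Dact_cong: "(\<And>\<alpha>. \<alpha> \<in> Sf \<Longrightarrow> g \<alpha> = g' \<alpha>) \<Longrightarrow> Dact Sf g = Dact Sf g'"
  unfolding Dact_def by (intro ext) (auto split: option.splits prod.splits)

lemma sm_sub_fin:
  assumes "K \<subseteq> X" "finite_length (sm X E F)"
  shows "finite_length (sm K E F)"
proof -
  have "has_chain (sm X E F) n" if "has_chain (sm K E F) n" for n
    by (rule chain_transfer[OF _ _ that, of _ "\<lambda>U. U"]) (use assms(1) in \<open>auto simp: sm_def\<close>)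
  then show ?thesis using assms(2) unfolding finite_length_def by blast
qed

locale gsink = gq V A s t Mv Ma
  for V :: "'v set" and A :: "'a set" and s t :: "'a \<Rightarrow> 'v"
    and Mv :: "'v \<Rightarrow> ('w \<Rightarrow> 'k::field) set" and Ma :: "'a \<Rightarrow> ('w \<Rightarrow> 'k) \<Rightarrow> ('w \<Rightarrow> 'k)" +
  fixes i :: 'v
  assumes sink: "is_sink V A s t i"
begin

definition "Ain = {\<alpha>\<in>A. t \<alpha> = i}"
definition "X = DSd Ain (\<lambda>\<alpha>. Mv (s \<alpha>))"
definition "pi f = (\<lambda>u. \<Sum>\<alpha>\<in>Ain. Ma \<alpha> (comp \<alpha> f) u)"
definition "Dp \<phi> = Dact Ain (\<lambda>\<alpha>. \<phi> (s \<alpha>))"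
abbreviation "K \<equiv> sink_space V A s t Mv Ma i i"
abbreviation "Nv \<equiv> sink_space V A s t Mv Ma i"
abbreviation "Na \<equiv> sink_map V A s t Mv Ma i"
abbreviation "E' \<equiv> endos V A (rev_s i s t) (rev_t i s t) Nv Na"

lemma iV: "i \<in> V" using sink unfolding is_sink_def by auto
lemma s_ne: "\<alpha> \<in> A \<Longrightarrow> s \<alpha> \<noteq> i" using sink unfolding is_sink_def by auto
lemma Ain_A: "\<alpha> \<in> Ain \<Longrightarrow> \<alpha> \<in> A" "\<alpha> \<in> Ain \<Longrightarrow> t \<alpha> = i" unfolding Ain_def by auto
lemma finAin: "finite Ain" unfolding Ain_def using finA by auto
lemma Ain_sV: "\<alpha> \<in> Ain \<Longrightarrow> s \<alpha> \<in> V" using Ain_A st_V by blast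
lemma Ain_sub: "\<alpha> \<in> Ain \<Longrightarrow> is_subspace (Mv (s \<alpha>))" using Mv_sub Ain_sV by blast

lemma pi_sum: "pi f = (\<Sum>\<alpha>\<in>Ain. Ma \<alpha> (comp \<alpha> f))"
  unfolding pi_def by (rule lam_sum)

lemma X_sub: "is_subspace X" unfolding X_def by (rule DSd_subspace) (rule Ain_sub)

lemma X_comp: "f \<in> X \<Longrightarrow> \<alpha> \<in> Ain \<Longrightarrow> comp \<alpha> f \<in> Mv (s \<alpha>)"
  unfolding X_def DSd_mem by auto

lemma K_eq: "K = {f\<in>X. pi f = 0}"
proof -
  have a: "(\<alpha> \<notin> A \<or> t \<alpha> \<noteq> i) \<longleftrightarrow> \<alpha> \<notin> Ain" for \<alpha> unfolding Ain_def by auto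
  show ?thesis unfolding sink_space_def X_def DSd_def pi_def
    by (simp only: if_True a lam_zero) (auto simp: Ain_def)
qed

lemma pi_lin: "lin_on X pi"
proof (rule lin_intro)
  fix x y assume x: "x \<in> X" and y: "y \<in> X"
  have "pi (x + y) = (\<Sum>\<alpha>\<in>Ain. Ma \<alpha> (comp \<alpha> x) + Ma \<alpha> (comp \<alpha> y))"
    unfolding pi_sum comp_add
  proof (rule sum.cong)
    fix \<alpha> assume "\<alpha> \<in> Ain"
    then show "Ma \<alpha> (comp \<alpha> x + comp \<alpha> y) = Ma \<alpha> (comp \<alpha> x) + Ma \<alpha> (comp \<alpha> y)"
      using lin_add[OF Ma_lin[OF Ain_A(1)] X_comp[OF x] X_comp[OF y]] by blast
  qed simp
  then show "pi (x + y) = pi x + pi y" unfolding pi_sum by (simp add: sum.distrib)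
next
  fix c x assume x: "x \<in> X"
  have "pi (\<lambda>u. c * x u) = (\<Sum>\<alpha>\<in>Ain. (\<lambda>u. c * Ma \<alpha> (comp \<alpha> x) u))"
    unfolding pi_sum comp_scale
  proof (rule sum.cong)
    fix \<alpha> assume "\<alpha> \<in> Ain"
    then show "Ma \<alpha> (\<lambda>u. c * comp \<alpha> x u) = (\<lambda>u. c * Ma \<alpha> (comp \<alpha> x) u)"
      using lin_scale[OF Ma_lin[OF Ain_A(1)] X_comp[OF x]] by blast
  qed simp
  also have "\<dots> = (\<lambda>u. c * pi x u)" unfolding pi_def
    by (rule ext) (simp add: sum_fun_apply sum_distrib_left)
  finally show "pi (\<lambda>u. c * x u) = (\<lambda>u. c * pi x u)" .
qed

lemma pi_into: "f \<in> X \<Longrightarrow> pi f \<in> Mv i"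
  unfolding pi_sum
proof (rule subspace_sum[OF Mv_sub[OF iV]])
  fix \<alpha> assume "f \<in> X" "\<alpha> \<in> Ain"
  then show "Ma \<alpha> (comp \<alpha> f) \<in> Mv i" using Ma_into[OF Ain_A(1) X_comp] Ain_A(2) by metis
qed

lemma pi_inj_comp: "\<alpha> \<in> Ain \<Longrightarrow> m \<in> Mv (s \<alpha>) \<Longrightarrow> pi (inj_comp \<alpha> m) = Ma \<alpha> m"
proof -
  assume a: "\<alpha> \<in> Ain" "m \<in> Mv (s \<alpha>)"
  have "pi (inj_comp \<alpha> m) = (\<Sum>\<beta>\<in>Ain. if \<beta> = \<alpha> then Ma \<alpha> m else 0)"
    unfolding pi_sum by (rule sum.cong) (auto simp: Ma_0 Ain_A)
  also have "\<dots> = Ma \<alpha> m" using a finAin by (simp add: sum.delta')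
  finally show ?thesis .
qed

lemma inj_comp_X: "\<alpha> \<in> Ain \<Longrightarrow> m \<in> Mv (s \<alpha>) \<Longrightarrow> inj_comp \<alpha> m \<in> X"
  unfolding X_def by (rule inj_comp_DSd) (auto intro: Ain_sub)

lemma surj: "pi ` X = Mv i"
proof -
  let ?I = "pi ` X"
  have Is: "is_subspace ?I" by (rule subspace_image[OF X_sub pi_lin])
  have IM: "?I \<subseteq> Mv i" using pi_into by blast
  obtain C where C0: "is_subspace C \<and> C \<subseteq> Mv i \<and> C \<inter> ?I = {0} \<and> (\<forall>w\<in>Mv i. \<exists>c\<in>C. \<exists>l\<in>?I. w = c + l)"
    using complement_exists[OF Mv_sub[OF iV] Is IM] by (elim exE)
  then have C: "is_subspace C" "C \<subseteq> Mv i" "C \<inter> ?I = {0}" "\<And>w. w \<in> Mv i \<Longrightarrow> \<exists>c\<in>C. \<exists>l\<in>?I. w = c + l"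
    by auto
  define P where "P j = (if j = i then ?I else Mv j)" for j
  define Q where "Q j = (if j = i then C else {0})" for j
  have PP: "\<And>j. j \<in> V \<Longrightarrow> is_subspace (P j) \<and> P j \<subseteq> Mv j" unfolding P_def
    using Is IM Mv_sub by auto
  have QQ: "\<And>j. j \<in> V \<Longrightarrow> is_subspace (Q j) \<and> Q j \<subseteq> Mv j" unfolding Q_def
    using C subspace_zero Mv_0 by auto
  have "(\<forall>j\<in>V. P j = {0}) \<or> (\<forall>j\<in>V. Q j = {0})"
  proof (rule decomp[OF PP QQ])
    fix j assume "j \<in> V" then show "P j \<inter> Q j = {0}" unfolding P_def Q_def using C(3) Mv_0 by auto
  next
    fix j m assume j: "j \<in> V" and m: "m \<in> Mv j"
    show "\<exists>p\<in>P j. \<exists>q\<in>Q j. m = p + q"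
    proof (cases "j = i")
      case True
      then obtain c l where "c \<in> C" "l \<in> ?I" "m = c + l" using C(4) m by blast
      then show ?thesis unfolding P_def Q_def using True by (metis add.commute)
    next
      case False
      then show ?thesis unfolding P_def Q_def using m by (intro bexI[of _ m] bexI[of _ 0]) auto
    qed
  next
    fix \<alpha> x assume \<alpha>: "\<alpha> \<in> A" and x: "x \<in> P (s \<alpha>)"
    have sx: "x \<in> Mv (s \<alpha>)" using x s_ne[OF \<alpha>] unfolding P_def by simp
    show "Ma \<alpha> x \<in> P (t \<alpha>)"
    proof (cases "t \<alpha> = i")
      case True
      then have "\<alpha> \<in> Ain" using \<alpha> unfolding Ain_def by auto
      then have "Ma \<alpha> x = pi (inj_comp \<alpha> x)" using pi_inj_comp sx by simp
      moreover have "inj_comp \<alpha> x \<in> X" using inj_comp_X \<open>\<alpha> \<in> Ain\<close> sx by blast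
      ultimately show ?thesis unfolding P_def using True by simp
    next
      case False
      then show ?thesis unfolding P_def using Ma_into[OF \<alpha> sx] by simp
    qed
  next
    fix \<alpha> x assume \<alpha>: "\<alpha> \<in> A" and x: "x \<in> Q (s \<alpha>)"
    then have "x = 0" using s_ne[OF \<alpha>] unfolding Q_def by simp
    then have "Ma \<alpha> x = 0" using Ma_0[OF \<alpha>] by simp
    then show "Ma \<alpha> x \<in> Q (t \<alpha>)" unfolding Q_def using subspace_0[OF C(1)] by simp
  qed
  then show ?thesis
  proof
    assume "\<forall>j\<in>V. P j = {0}"
    then have "\<And>j. j \<in> V \<Longrightarrow> j \<noteq> i \<Longrightarrow> Mv j = {0}" unfolding P_def by auto
    then show ?thesis using concentrated[OF iV] by blast
  next
    assume "\<forall>j\<in>V. Q j = {0}"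
    then have "C = {0}" using iV unfolding Q_def by auto
    then have "Mv i \<subseteq> ?I" using C(4) by fastforce
    then show ?thesis using IM by blast
  qed
qed

end



context gsink begin

definition "good \<phi> \<longleftrightarrow> (\<forall>j\<in>V. j \<noteq> i \<longrightarrow> lin_on (Mv j) (\<phi> j) \<and> \<phi> j ` Mv j \<subseteq> Mv j)"

lemma E_good: "\<phi> \<in> E \<Longrightarrow> good \<phi>" unfolding good_def endos_def by auto

lemma good_Ain: "good \<phi> \<Longrightarrow> \<alpha> \<in> Ain \<Longrightarrow> lin_on (Mv (s \<alpha>)) (\<phi> (s \<alpha>)) \<and> \<phi> (s \<alpha>) ` Mv (s \<alpha>) \<subseteq> Mv (s \<alpha>)"
  unfolding good_def using Ain_sV s_ne Ain_A(1) by blast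

lemma Dp_X: "good \<phi> \<Longrightarrow> f \<in> X \<Longrightarrow> Dp \<phi> f \<in> X"
proof -
  assume g: "good \<phi>" and f: "f \<in> X"
  have h: "\<And>\<alpha>. \<alpha> \<in> Ain \<Longrightarrow> lin_on (Mv (s \<alpha>)) (\<phi> (s \<alpha>)) \<and> \<phi> (s \<alpha>) ` Mv (s \<alpha>) \<subseteq> Mv (s \<alpha>)"
    using good_Ain[OF g] .
  show ?thesis using Dact_DSd[where g="\<lambda>\<alpha>. \<phi> (s \<alpha>)" and Z="\<lambda>\<alpha>. Mv (s \<alpha>)" and S=Ain and Sf=Ain, OF subset_refl Ain_sub h] f
    unfolding Dp_def X_def by blast
qed

lemma Dp_lin: "good \<phi> \<Longrightarrow> lin_on X (Dp \<phi>)"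
proof -
  assume g: "good \<phi>"
  have h: "\<And>\<alpha>. \<alpha> \<in> Ain \<Longrightarrow> lin_on (Mv (s \<alpha>)) (\<phi> (s \<alpha>)) \<and> \<phi> (s \<alpha>) ` Mv (s \<alpha>) \<subseteq> Mv (s \<alpha>)"
    using good_Ain[OF g] .
  show ?thesis using Dact_lin[where g="\<lambda>\<alpha>. \<phi> (s \<alpha>)" and Z="\<lambda>\<alpha>. Mv (s \<alpha>)" and S=Ain and Sf=Ain, OF subset_refl Ain_sub h]
    unfolding Dp_def X_def by blast
qed

lemma eqv: "\<phi> \<in> E \<Longrightarrow> f \<in> X \<Longrightarrow> pi (Dp \<phi> f) = \<phi> i (pi f)"
proof -
  assume \<phi>: "\<phi> \<in> E" and f: "f \<in> X"
  have "pi (Dp \<phi> f) = (\<Sum>\<alpha>\<in>Ain. Ma \<alpha> (\<phi> (s \<alpha>) (comp \<alpha> f)))"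
    unfolding pi_sum Dp_def by (rule sum.cong) auto
  also have "\<dots> = (\<Sum>\<alpha>\<in>Ain. \<phi> i (Ma \<alpha> (comp \<alpha> f)))"
  proof (rule sum.cong)
    fix \<alpha> assume a: "\<alpha> \<in> Ain"
    show "Ma \<alpha> (\<phi> (s \<alpha>) (comp \<alpha> f)) = \<phi> i (Ma \<alpha> (comp \<alpha> f))"
      using endo_comm[OF \<phi> Ain_A(1)[OF a] X_comp[OF f a]] Ain_A(2)[OF a] by simp
  qed simp
  also have "\<dots> = \<phi> i (\<Sum>\<alpha>\<in>Ain. Ma \<alpha> (comp \<alpha> f))"
  proof (rule lin_sum[OF Mv_sub[OF iV] endo_lin[OF \<phi> iV], symmetric])
    fix \<alpha> assume a: "\<alpha> \<in> Ain"
    show "Ma \<alpha> (comp \<alpha> f) \<in> Mv i" using Ma_into[OF Ain_A(1)[OF a] X_comp[OF f a]] Ain_A(2)[OF a] by simp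
  qed
  finally show ?thesis unfolding pi_sum .
qed

lemma len_X: "finite_length (sm X E Dp) \<and>
   mod_length (sm X E Dp) = (\<Sum>\<alpha>\<in>Ain. mod_length (sm (Mv (s \<alpha>)) E (\<lambda>\<phi>. \<phi> (s \<alpha>))))"
proof -
  have "finite_length (sm (DSd Ain (\<lambda>\<alpha>. Mv (s \<alpha>))) E (\<lambda>\<phi>. Dact Ain (\<lambda>\<alpha>. \<phi> (s \<alpha>)))) \<and>
   mod_length (sm (DSd Ain (\<lambda>\<alpha>. Mv (s \<alpha>))) E (\<lambda>\<phi>. Dact Ain (\<lambda>\<alpha>. \<phi> (s \<alpha>)))) =
     (\<Sum>\<alpha>\<in>Ain. mod_length (sm (Mv (s \<alpha>)) E (\<lambda>\<phi>. \<phi> (s \<alpha>))))"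
  proof (rule DSd_length[OF finAin, where g="\<lambda>\<phi> \<alpha>. \<phi> (s \<alpha>)"])
    show "\<And>\<alpha>. \<alpha> \<in> Ain \<Longrightarrow> is_subspace (Mv (s \<alpha>))" by (rule Ain_sub)
    show "\<And>e \<alpha>. e \<in> E \<Longrightarrow> \<alpha> \<in> Ain \<Longrightarrow> lin_on (Mv (s \<alpha>)) (e (s \<alpha>)) \<and> e (s \<alpha>) ` Mv (s \<alpha>) \<subseteq> Mv (s \<alpha>)"
      using good_Ain E_good by blast
    show "\<And>\<alpha>. \<alpha> \<in> Ain \<Longrightarrow> finite_length (sm (Mv (s \<alpha>)) E (\<lambda>e. e (s \<alpha>)))" using fin_j Ain_sV by blast
  qed simp
  moreover have eq: "Dp = (\<lambda>\<phi>. Dact Ain (\<lambda>\<alpha>. \<phi> (s \<alpha>)))" unfolding Dp_def by (rule ext) simp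
  ultimately show ?thesis unfolding X_def eq by blast
qed

lemma len_add: "finite_length (sm K E Dp) \<and>
   mod_length (sm X E Dp) = mod_length (sm K E Dp) + mod_length (sm (Mv i) E (\<lambda>\<phi>. \<phi> i))"
proof -
  have KX: "K \<subseteq> X" using K_eq by blast
  have finK: "finite_length (sm K E Dp)" using sm_sub_fin[OF KX] len_X by blast
  have "finite_length (sm X E Dp) \<and> mod_length (sm X E Dp) = mod_length (sm K E Dp) + mod_length (sm (Mv i) E (\<lambda>\<phi>. \<phi> i))"
  proof (rule sm_add[OF X_sub _ Mv_sub[OF iV] pi_lin surj _ _ K_eq finK fin_j[OF iV]])
    show "\<forall>e\<in>E. Dp e ` X \<subseteq> X" using Dp_X E_good by blast
    show "\<forall>e\<in>E. lin_on (Mv i) (e i)" using endo_lin iV by blast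
    show "\<forall>e\<in>E. \<forall>x\<in>X. pi (Dp e x) = e i (pi x)" using eqv by blast
  qed
  then show ?thesis using finK by blast
qed

lemma Nv_ne: "j \<noteq> i \<Longrightarrow> Nv j = emb ` Mv j" unfolding sink_space_def by simp
lemma Nv_i: "Nv i = K" by simp
lemma rev_in: "\<alpha> \<in> A \<Longrightarrow> t \<alpha> = i \<Longrightarrow> rev_s i s t \<alpha> = i \<and> rev_t i s t \<alpha> = s \<alpha>"
  unfolding rev_s_def rev_t_def by auto
lemma rev_out: "\<alpha> \<in> A \<Longrightarrow> t \<alpha> \<noteq> i \<Longrightarrow> rev_s i s t \<alpha> = s \<alpha> \<and> rev_t i s t \<alpha> = t \<alpha>"
  unfolding rev_s_def rev_t_def using s_ne by auto
lemma Na_in: "t \<alpha> = i \<Longrightarrow> Na \<alpha> f = emb (comp \<alpha> f)" unfolding sink_map_def by simp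
lemma Na_out: "t \<alpha> \<noteq> i \<Longrightarrow> Na \<alpha> f = emb (Ma \<alpha> (unemb f))" unfolding sink_map_def by simp

lemma E'_D:
  assumes "\<psi> \<in> E'"
  shows "\<And>j. j \<in> V \<Longrightarrow> lin_on (Nv j) (\<psi> j)"
    and "\<And>j x. j \<in> V \<Longrightarrow> x \<in> Nv j \<Longrightarrow> \<psi> j x \<in> Nv j"
    and "\<And>\<alpha> x. \<alpha> \<in> A \<Longrightarrow> x \<in> Nv (rev_s i s t \<alpha>) \<Longrightarrow> \<psi> (rev_t i s t \<alpha>) (Na \<alpha> x) = Na \<alpha> (\<psi> (rev_s i s t \<alpha>) x)"
  using assms unfolding endos_def by auto

definition "psi_of \<phi> j = (if j = i then Dp \<phi> else (\<lambda>f. emb (\<phi> j (unemb f))))"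

lemma psi_of_E:
  assumes \<phi>: "\<phi> \<in> E"
  shows "psi_of \<phi> \<in> E'"
  unfolding endos_def
proof (intro CollectI conjI ballI)
  fix j assume j: "j \<in> V"
  show "lin_on (Nv j) (psi_of \<phi> j)"
  proof (cases "j = i")
    case True
    then show ?thesis unfolding psi_of_def using lin_on_subset[OF Dp_lin[OF E_good[OF \<phi>]]] K_eq by auto
  next
    case False
    then show ?thesis unfolding psi_of_def Nv_ne[OF False] using lin_conj_emb[OF endo_lin[OF \<phi> j]] by simp
  qed
  show "psi_of \<phi> j ` Nv j \<subseteq> Nv j"
  proof (cases "j = i")
    case True
    show ?thesis
    proof
      fix y assume "y \<in> psi_of \<phi> j ` Nv j"
      then obtain f where f: "f \<in> K" "y = Dp \<phi> f" unfolding psi_of_def using True by auto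
      have fX: "f \<in> X" "pi f = 0" using f K_eq by auto
      have "Dp \<phi> f \<in> X" using Dp_X[OF E_good[OF \<phi>] fX(1)] .
      moreover have "pi (Dp \<phi> f) = 0" using eqv[OF \<phi> fX(1)] fX(2) endo_0[OF \<phi> iV] by simp
      ultimately show "y \<in> Nv j" using f True K_eq by simp
    qed
  next
    case False
    show ?thesis
    proof
      fix y assume "y \<in> psi_of \<phi> j ` Nv j"
      then obtain m where m: "m \<in> Mv j" "y = emb (\<phi> j m)" unfolding psi_of_def Nv_ne[OF False] using False by auto
      then show "y \<in> Nv j" unfolding Nv_ne[OF False] using endo_into[OF \<phi> j] by auto
    qed
  qed
next
  fix \<alpha> x assume \<alpha>: "\<alpha> \<in> A" and x: "x \<in> Nv (rev_s i s t \<alpha>)"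
  show "psi_of \<phi> (rev_t i s t \<alpha>) (Na \<alpha> x) = Na \<alpha> (psi_of \<phi> (rev_s i s t \<alpha>) x)"
  proof (cases "t \<alpha> = i")
    case True
    note r = rev_in[OF \<alpha> True]
    have a: "\<alpha> \<in> Ain" using \<alpha> True unfolding Ain_def by simp
    have "psi_of \<phi> (s \<alpha>) (Na \<alpha> x) = emb (\<phi> (s \<alpha>) (comp \<alpha> x))"
      unfolding psi_of_def Na_in[OF True] using s_ne[OF \<alpha>] by simp
    moreover have "Na \<alpha> (psi_of \<phi> i x) = emb (\<phi> (s \<alpha>) (comp \<alpha> x))"
      unfolding psi_of_def Na_in[OF True] Dp_def using a by simp
    ultimately show ?thesis using r by simp
  next
    case False
    note r = rev_out[OF \<alpha> False]
    obtain m where m: "m \<in> Mv (s \<alpha>)" "x = emb m" using x r Nv_ne s_ne[OF \<alpha>] by auto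
    have "psi_of \<phi> (t \<alpha>) (Na \<alpha> x) = emb (\<phi> (t \<alpha>) (Ma \<alpha> m))"
      unfolding psi_of_def Na_out[OF False] using False m by simp
    moreover have "Na \<alpha> (psi_of \<phi> (s \<alpha>) x) = emb (Ma \<alpha> (\<phi> (s \<alpha>) m))"
      unfolding psi_of_def Na_out[OF False] using s_ne[OF \<alpha>] m by simp
    ultimately show ?thesis using r endo_comm[OF \<phi> \<alpha> m(1)] by simp
  qed
qed

definition "psi' \<psi> j m = unemb (\<psi> j (emb m))"

lemma psi'_emb:
  assumes \<psi>: "\<psi> \<in> E'" and j: "j \<in> V" "j \<noteq> i" and m: "m \<in> Mv j"
  shows "\<psi> j (emb m) = emb (psi' \<psi> j m) \<and> psi' \<psi> j m \<in> Mv j"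
proof -
  have "emb m \<in> Nv j" using m Nv_ne[OF j(2)] by simp
  then have "\<psi> j (emb m) \<in> emb ` Mv j" using E'_D(2)[OF \<psi> j(1)] Nv_ne[OF j(2)] by metis
  then obtain m' where "m' \<in> Mv j" "\<psi> j (emb m) = emb m'" by blast
  then show ?thesis unfolding psi'_def by simp
qed

lemma psi'_good: "\<psi> \<in> E' \<Longrightarrow> good (psi' \<psi>)"
  unfolding good_def
proof (intro ballI impI conjI)
  fix j assume \<psi>: "\<psi> \<in> E'" and j: "j \<in> V" "j \<noteq> i"
  have l: "lin_on (emb ` Mv j) (\<psi> j)" using E'_D(1)[OF \<psi> j(1)] Nv_ne[OF j(2)] by simp
  show "lin_on (Mv j) (psi' \<psi> j)"
  proof (rule lin_intro)
    fix x y assume "x \<in> Mv j" "y \<in> Mv j"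
    then show "psi' \<psi> j (x + y) = psi' \<psi> j x + psi' \<psi> j y"
      unfolding psi'_def using lin_add[OF l, of "emb x" "emb y"] by simp
  next
    fix c x assume "x \<in> Mv j"
    then show "psi' \<psi> j (\<lambda>u. c * x u) = (\<lambda>u. c * psi' \<psi> j x u)"
      unfolding psi'_def using lin_scale[OF l, of "emb x" c] by simp
  qed
  show "psi' \<psi> j ` Mv j \<subseteq> Mv j" using psi'_emb[OF \<psi> j] by blast
qed

lemma psiK:
  assumes \<psi>: "\<psi> \<in> E'" and f: "f \<in> K"
  shows "\<psi> i f = Dp (psi' \<psi>) f"
proof -
  have fX: "f \<in> X" using f K_eq by simp
  have "\<psi> i f \<in> K" using E'_D(2)[OF \<psi> iV] f by simp
  then have "\<psi> i f \<in> X" using K_eq by simp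
  moreover have "Dp (psi' \<psi>) f \<in> X" using Dp_X[OF psi'_good[OF \<psi>] fX] .
  ultimately show ?thesis unfolding X_def
  proof (rule DSd_eqI)
    fix \<alpha> assume a: "\<alpha> \<in> Ain"
    have \<alpha>: "\<alpha> \<in> A" "t \<alpha> = i" using Ain_A a by auto
    note r = rev_in[OF \<alpha>]
    have "f \<in> Nv (rev_s i s t \<alpha>)" using r f by simp
    from E'_D(3)[OF \<psi> \<alpha>(1) this] have "\<psi> (s \<alpha>) (emb (comp \<alpha> f)) = emb (comp \<alpha> (\<psi> i f))"
      using r Na_in[OF \<alpha>(2)] by simp
    then have "comp \<alpha> (\<psi> i f) = psi' \<psi> (s \<alpha>) (comp \<alpha> f)" unfolding psi'_def by (metis unemb_emb)
    then show "comp \<alpha> (\<psi> i f) = comp \<alpha> (Dp (psi' \<psi>) f)" unfolding Dp_def using a by simp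
  qed
qed

definition "Phi \<psi> m = pi (Dp (psi' \<psi>) (SOME p. p \<in> X \<and> pi p = m))"

lemma Phi_pi:
  assumes \<psi>: "\<psi> \<in> E'" and p: "p \<in> X"
  shows "Phi \<psi> (pi p) = pi (Dp (psi' \<psi>) p)"
proof -
  let ?p0 = "SOME q. q \<in> X \<and> pi q = pi p"
  have p0: "?p0 \<in> X \<and> pi ?p0 = pi p" by (rule someI[of _ p]) (use p in simp)
  have g: "good (psi' \<psi>)" by (rule psi'_good[OF \<psi>])
  have d: "p - ?p0 \<in> X" using subspace_diff[OF X_sub p] p0 by blast
  have "pi (p - ?p0) = 0" using lin_diff[OF X_sub pi_lin p] p0 by simp
  then have "p - ?p0 \<in> K" using K_eq d by simp
  then have "\<psi> i (p - ?p0) \<in> K" using E'_D(2)[OF \<psi> iV] by simp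
  moreover have "\<psi> i (p - ?p0) = Dp (psi' \<psi>) p - Dp (psi' \<psi>) ?p0"
    using psiK[OF \<psi> \<open>p - ?p0 \<in> K\<close>] lin_diff[OF X_sub Dp_lin[OF g] p] p0 by simp
  ultimately have "pi (Dp (psi' \<psi>) p - Dp (psi' \<psi>) ?p0) = 0" using K_eq by simp
  moreover have "pi (Dp (psi' \<psi>) p - Dp (psi' \<psi>) ?p0) = pi (Dp (psi' \<psi>) p) - pi (Dp (psi' \<psi>) ?p0)"
    using lin_diff[OF X_sub pi_lin Dp_X[OF g p] Dp_X[OF g]] p0 by blast
  ultimately show ?thesis unfolding Phi_def by simp
qed

definition "phi_of \<psi> j = (if j = i then Phi \<psi> else psi' \<psi> j)"

lemma Dp_phi_of: "Dp (phi_of \<psi>) = Dp (psi' \<psi>)"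
  unfolding Dp_def by (rule Dact_cong) (simp add: phi_of_def s_ne Ain_A)

lemma Dp_inj_comp:
  assumes g: "good \<phi>" and a: "\<alpha> \<in> Ain" and m: "m \<in> Mv (s \<alpha>)"
  shows "Dp \<phi> (inj_comp \<alpha> m) = inj_comp \<alpha> (\<phi> (s \<alpha>) m)"
proof (rule DSd_eqI[where S=Ain and Z="\<lambda>\<alpha>. Mv (s \<alpha>)"])
  show "Dp \<phi> (inj_comp \<alpha> m) \<in> DSd Ain (\<lambda>\<alpha>. Mv (s \<alpha>))" using Dp_X[OF g inj_comp_X[OF a m]] unfolding X_def .
  have "\<phi> (s \<alpha>) m \<in> Mv (s \<alpha>)" using good_Ain[OF g a] m by blast
  then show "inj_comp \<alpha> (\<phi> (s \<alpha>) m) \<in> DSd Ain (\<lambda>\<alpha>. Mv (s \<alpha>))" using inj_comp_X[OF a] unfolding X_def by blast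
  fix \<beta> assume b: "\<beta> \<in> Ain"
  show "comp \<beta> (Dp \<phi> (inj_comp \<alpha> m)) = comp \<beta> (inj_comp \<alpha> (\<phi> (s \<alpha>) m))"
  proof (cases "\<beta> = \<alpha>")
    case False
    have "\<phi> (s \<beta>) 0 = 0" using good_Ain[OF g b] lin_0 Ain_sub[OF b] by blast
    then show ?thesis unfolding Dp_def using b False by simp
  qed (simp add: Dp_def a)
qed

lemma Phi_lin:
  assumes \<psi>: "\<psi> \<in> E'"
  shows "lin_on (Mv i) (Phi \<psi>)"
proof (rule lin_intro)
  have g: "good (psi' \<psi>)" by (rule psi'_good[OF \<psi>])
  fix x y assume xy: "x \<in> Mv i" "y \<in> Mv i"
  obtain p where p: "p \<in> X" "x = pi p" using xy(1) surj[symmetric] by blast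
  obtain q where q: "q \<in> X" "y = pi q" using xy(2) surj[symmetric] by blast
  have pq: "p \<in> X" "q \<in> X" "x = pi p" "y = pi q" using p q by auto
  have "x + y = pi (p + q)" using pq lin_add[OF pi_lin] by simp
  moreover have "p + q \<in> X" using subspace_add[OF X_sub pq(1,2)] .
  ultimately have "Phi \<psi> (x + y) = pi (Dp (psi' \<psi>) (p + q))" using Phi_pi[OF \<psi>] by simp
  also have "\<dots> = pi (Dp (psi' \<psi>) p) + pi (Dp (psi' \<psi>) q)"
    using lin_add[OF Dp_lin[OF g] pq(1,2)] lin_add[OF pi_lin Dp_X[OF g pq(1)] Dp_X[OF g pq(2)]] by simp
  finally show "Phi \<psi> (x + y) = Phi \<psi> x + Phi \<psi> y" using Phi_pi[OF \<psi>] pq by simp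
next
  have g: "good (psi' \<psi>)" by (rule psi'_good[OF \<psi>])
  fix c x assume "x \<in> Mv i"
  then obtain p where p: "p \<in> X" "x = pi p" using surj[symmetric] by blast
  have "(\<lambda>u. c * x u) = pi (\<lambda>u. c * p u)" using p lin_scale[OF pi_lin] by simp
  moreover have "(\<lambda>u. c * p u) \<in> X" using subspace_scale[OF X_sub p(1)] .
  ultimately have "Phi \<psi> (\<lambda>u. c * x u) = pi (Dp (psi' \<psi>) (\<lambda>u. c * p u))" using Phi_pi[OF \<psi>] by simp
  also have "\<dots> = (\<lambda>u. c * pi (Dp (psi' \<psi>) p) u)"
    using lin_scale[OF Dp_lin[OF g] p(1)] lin_scale[OF pi_lin Dp_X[OF g p(1)]] by simp
  finally show "Phi \<psi> (\<lambda>u. c * x u) = (\<lambda>u. c * Phi \<psi> x u)" using Phi_pi[OF \<psi>] p by simp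
qed

lemma Phi_into:
  assumes \<psi>: "\<psi> \<in> E'" and x: "x \<in> Mv i"
  shows "Phi \<psi> x \<in> Mv i"
proof -
  have g: "good (psi' \<psi>)" by (rule psi'_good[OF \<psi>])
  obtain p where p: "p \<in> X" "x = pi p" using x surj[symmetric] by blast
  then have "Phi \<psi> x = pi (Dp (psi' \<psi>) p)" using Phi_pi[OF \<psi>] by simp
  then show ?thesis using pi_into[OF Dp_X[OF g p(1)]] by simp
qed

lemma phi_of_E:
  assumes \<psi>: "\<psi> \<in> E'"
  shows "phi_of \<psi> \<in> E"
  unfolding endos_def
proof (intro CollectI conjI ballI)
  have g: "good (psi' \<psi>)" by (rule psi'_good[OF \<psi>])
  fix j assume j: "j \<in> V"
  show "lin_on (Mv j) (phi_of \<psi> j)"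
  proof (cases "j = i")
    case True
    have "phi_of \<psi> j = Phi \<psi>" unfolding phi_of_def using True by simp
    then show ?thesis using Phi_lin[OF \<psi>] True by simp
  next
    case False
    then show ?thesis unfolding phi_of_def using g j unfolding good_def by simp
  qed
  show "phi_of \<psi> j ` Mv j \<subseteq> Mv j"
  proof (cases "j = i")
    case True
    have "phi_of \<psi> j = Phi \<psi>" unfolding phi_of_def using True by simp
    then show ?thesis using Phi_into[OF \<psi>] True by auto
  next
    case False
    then show ?thesis unfolding phi_of_def using g j unfolding good_def by simp
  qed
next
  have g: "good (psi' \<psi>)" by (rule psi'_good[OF \<psi>])
  fix \<alpha> x assume \<alpha>: "\<alpha> \<in> A" and x: "x \<in> Mv (s \<alpha>)"
  have sa: "s \<alpha> \<noteq> i" "s \<alpha> \<in> V" using s_ne[OF \<alpha>] st_V[OF \<alpha>] by auto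
  show "phi_of \<psi> (t \<alpha>) (Ma \<alpha> x) = Ma \<alpha> (phi_of \<psi> (s \<alpha>) x)"
  proof (cases "t \<alpha> = i")
    case True
    have a: "\<alpha> \<in> Ain" using \<alpha> True unfolding Ain_def by simp
    have "phi_of \<psi> (t \<alpha>) (Ma \<alpha> x) = Phi \<psi> (pi (inj_comp \<alpha> x))"
      unfolding phi_of_def using True pi_inj_comp[OF a x] by simp
    also have "\<dots> = pi (Dp (psi' \<psi>) (inj_comp \<alpha> x))" using Phi_pi[OF \<psi> inj_comp_X[OF a x]] .
    also have "\<dots> = pi (inj_comp \<alpha> (psi' \<psi> (s \<alpha>) x))" using Dp_inj_comp[OF g a x] by simp
    also have "\<dots> = Ma \<alpha> (psi' \<psi> (s \<alpha>) x)"
      using pi_inj_comp[OF a] psi'_emb[OF \<psi> sa(2) sa(1) x] by simp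
    finally show ?thesis unfolding phi_of_def using sa by simp
  next
    case False
    note r = rev_out[OF \<alpha> False]
    have ta: "t \<alpha> \<in> V" using st_V[OF \<alpha>] by simp
    have "emb x \<in> Nv (rev_s i s t \<alpha>)" using r Nv_ne[OF sa(1)] x by simp
    from E'_D(3)[OF \<psi> \<alpha> this] have "\<psi> (t \<alpha>) (emb (Ma \<alpha> x)) = Na \<alpha> (\<psi> (s \<alpha>) (emb x))"
      using r Na_out[OF False] by simp
    also have "\<dots> = emb (Ma \<alpha> (psi' \<psi> (s \<alpha>) x))"
      using psi'_emb[OF \<psi> sa(2) sa(1) x] Na_out[OF False] by simp
    finally have "psi' \<psi> (t \<alpha>) (Ma \<alpha> x) = Ma \<alpha> (psi' \<psi> (s \<alpha>) x)" unfolding psi'_def by simp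
    then show ?thesis unfolding phi_of_def using False sa by simp
  qed
qed

lemma dim_ne:
  assumes j: "j \<in> V" "j \<noteq> i"
  shows "mod_length (esub V A (rev_s i s t) (rev_t i s t) Nv Na j) = mod_length (esub V A s t Mv Ma j)"
proof -
  have "has_chain (sm (Mv j) E (\<lambda>\<phi>. \<phi> j)) n = has_chain (sm (emb ` Mv j) E' (\<lambda>\<psi>. \<psi> j)) n" for n
  proof (rule sm_iso[OF Mv_sub[OF j(1)] lin_emb _ refl])
    show "inj_on emb (Mv j)" by (rule inj_onI) (rule emb_inj)
    show "\<forall>e\<in>E. (\<lambda>\<phi>. \<phi> j) e ` Mv j \<subseteq> Mv j" using endo_into j(1) by blast
    show "\<forall>e\<in>E. \<exists>e'\<in>E'. \<forall>x\<in>Mv j. emb (e j x) = e' j (emb x)"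
    proof
      fix \<phi> assume \<phi>: "\<phi> \<in> E"
      show "\<exists>e'\<in>E'. \<forall>x\<in>Mv j. emb (\<phi> j x) = e' j (emb x)"
        by (rule bexI[OF _ psi_of_E[OF \<phi>]]) (simp add: psi_of_def j(2))
    qed
    show "\<forall>e'\<in>E'. \<exists>e\<in>E. \<forall>x\<in>Mv j. e' j (emb x) = emb (e j x)"
    proof
      fix \<psi> assume \<psi>: "\<psi> \<in> E'"
      show "\<exists>e\<in>E. \<forall>x\<in>Mv j. \<psi> j (emb x) = emb (e j x)"
        by (rule bexI[OF _ phi_of_E[OF \<psi>]]) (simp add: phi_of_def j(2) psi'_emb[OF \<psi> j])
    qed
  qed
  then show ?thesis unfolding esub_gen Nv_ne[OF j(2)] by (intro mod_length_cong) simp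
qed

lemma dim_i:
  "int (mod_length (esub V A (rev_s i s t) (rev_t i s t) Nv Na i)) =
     (\<Sum>\<alpha>\<in>Ain. int (mod_length (esub V A s t Mv Ma (s \<alpha>)))) - int (mod_length (esub V A s t Mv Ma i))"
proof -
  have "sm K E' (\<lambda>\<psi>. \<psi> i) = sm K E Dp"
  proof (rule sm_same)
    show "\<forall>e\<in>E'. \<exists>e'\<in>E. \<forall>x\<in>K. e i x = Dp e' x"
    proof
      fix \<psi> assume \<psi>: "\<psi> \<in> E'"
      show "\<exists>e'\<in>E. \<forall>x\<in>K. \<psi> i x = Dp e' x"
        by (rule bexI[OF _ phi_of_E[OF \<psi>]]) (simp add: Dp_phi_of psiK[OF \<psi>])
    qed
    show "\<forall>e'\<in>E. \<exists>e\<in>E'. \<forall>x\<in>K. Dp e' x = e i x"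
    proof
      fix \<phi> assume \<phi>: "\<phi> \<in> E"
      show "\<exists>e\<in>E'. \<forall>x\<in>K. Dp \<phi> x = e i x"
        by (rule bexI[OF _ psi_of_E[OF \<phi>]]) (simp add: psi_of_def)
    qed
  qed
  then have e1: "mod_length (esub V A (rev_s i s t) (rev_t i s t) Nv Na i) = mod_length (sm K E Dp)"
    using esub_gen[of V A "rev_s i s t" "rev_t i s t" Nv Na i] by simp
  have e2: "mod_length (sm X E Dp) = mod_length (sm K E Dp) + mod_length (sm (Mv i) E (\<lambda>\<phi>. \<phi> i))"
    using len_add by blast
  have e3: "mod_length (sm X E Dp) = (\<Sum>\<alpha>\<in>Ain. mod_length (sm (Mv (s \<alpha>)) E (\<lambda>\<phi>. \<phi> (s \<alpha>))))"
    using len_X by blast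
  have e4: "esub V A s t Mv Ma j = sm (Mv j) E (\<lambda>\<phi>. \<phi> j)" for j by (rule esub_gen)
  have "int (mod_length (sm K E Dp)) + int (mod_length (esub V A s t Mv Ma i)) =
      (\<Sum>\<alpha>\<in>Ain. int (mod_length (esub V A s t Mv Ma (s \<alpha>))))"
    unfolding e4 of_nat_sum[symmetric] of_nat_add[symmetric] e2[symmetric] e3 by (rule refl)
  then show ?thesis unfolding e1 by linarith
qed

end



lemma sm_quot_fin:
  fixes \<pi> :: "('x \<Rightarrow> 'k::field) \<Rightarrow> ('y \<Rightarrow> 'k)"
  assumes X: "is_subspace X" and FX: "\<forall>e\<in>E. F e ` X \<subseteq> X"
    and pi: "lin_on X \<pi>" "\<pi> ` X = Y"
    and eqv: "\<forall>e\<in>E. \<forall>x\<in>X. \<pi> (F e x) = G e (\<pi> x)"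
    and finX: "finite_length (sm X E F)"
  shows "finite_length (sm Y E G)"
proof -
  have "has_chain (sm X E F) n" if "has_chain (sm Y E G) n" for n
  proof (rule chain_transfer[OF _ _ that, of _ "\<lambda>W. {x\<in>X. \<pi> x \<in> W}"])
    fix W assume W: "sm Y E G W"
    have "is_subspace W" using W unfolding sm_def by auto
    then have "is_subspace {x\<in>X. \<pi> x \<in> W}" using subspace_preimage[OF X pi(1)] by blast
    moreover have "\<forall>e\<in>E. F e ` {x\<in>X. \<pi> x \<in> W} \<subseteq> {x\<in>X. \<pi> x \<in> W}"
    proof (intro ballI subsetI)
      fix e y assume e: "e \<in> E" and "y \<in> F e ` {x\<in>X. \<pi> x \<in> W}"
      then obtain x where x: "x \<in> X" "\<pi> x \<in> W" "y = F e x" by auto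
      have "\<pi> y = G e (\<pi> x)" using eqv e x by auto
      moreover have "G e (\<pi> x) \<in> W" using W e x(2) unfolding sm_def by blast
      moreover have "y \<in> X" using FX e x by auto
      ultimately show "y \<in> {x\<in>X. \<pi> x \<in> W}" by auto
    qed
    ultimately show "sm X E F {x\<in>X. \<pi> x \<in> W}" unfolding sm_def by auto
  next
    fix W W' assume "sm Y E G W" "sm Y E G W'" "W \<subset> W'"
    then obtain y where y: "y \<in> W'" "y \<notin> W" "W \<subseteq> W'" "W' \<subseteq> Y" unfolding sm_def by auto
    then obtain x where "x \<in> X" "\<pi> x = y" using pi(2) by auto
    then show "{x\<in>X. \<pi> x \<in> W} \<subset> {x\<in>X. \<pi> x \<in> W'}" using y by auto
  qed
  then show ?thesis using finX unfolding finite_length_def by blast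
qed

locale gsource = gq V A s t Mv Ma
  for V :: "'v set" and A :: "'a set" and s t :: "'a \<Rightarrow> 'v"
    and Mv :: "'v \<Rightarrow> ('w \<Rightarrow> 'k::field) set" and Ma :: "'a \<Rightarrow> ('w \<Rightarrow> 'k) \<Rightarrow> ('w \<Rightarrow> 'k)" +
  fixes i :: 'v
  assumes src: "is_source V A s t i"
begin

definition "Aout = {\<alpha>\<in>A. s \<alpha> = i}"
definition "X = DSd Aout (\<lambda>\<alpha>. Mv (t \<alpha>))"
definition "io m = (\<lambda>(ob, u). case ob of None \<Rightarrow> 0
        | Some \<alpha> \<Rightarrow> if \<alpha> \<in> A \<and> s \<alpha> = i then Ma \<alpha> m u else 0)"
definition "Dq \<phi> = Dact Aout (\<lambda>\<alpha>. \<phi> (t \<alpha>))"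
abbreviation "I \<equiv> io ` Mv i"

lemma iV: "i \<in> V" using src unfolding is_source_def by auto
lemma t_ne: "\<alpha> \<in> A \<Longrightarrow> t \<alpha> \<noteq> i" using src unfolding is_source_def by auto
lemma Aout_A: "\<alpha> \<in> Aout \<Longrightarrow> \<alpha> \<in> A" "\<alpha> \<in> Aout \<Longrightarrow> s \<alpha> = i" unfolding Aout_def by auto
lemma finAout: "finite Aout" unfolding Aout_def using finA by auto
lemma Aout_tV: "\<alpha> \<in> Aout \<Longrightarrow> t \<alpha> \<in> V" using Aout_A st_V by blast
lemma Aout_sub: "\<alpha> \<in> Aout \<Longrightarrow> is_subspace (Mv (t \<alpha>))" using Mv_sub Aout_tV by blast

lemma X_sub: "is_subspace X" unfolding X_def by (rule DSd_subspace) (rule Aout_sub)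
lemma X_comp: "f \<in> X \<Longrightarrow> \<alpha> \<in> Aout \<Longrightarrow> comp \<alpha> f \<in> Mv (t \<alpha>)"
  unfolding X_def DSd_mem by auto

lemma src_sum_eq: "src_sum V A s t Mv i = X"
proof -
  have a: "(\<alpha> \<notin> A \<or> s \<alpha> \<noteq> i) \<longleftrightarrow> \<alpha> \<notin> Aout" for \<alpha> unfolding Aout_def by auto
  show ?thesis unfolding src_sum_def X_def DSd_def
    by (simp only: a lam_zero) (auto simp: Aout_def)
qed

lemma src_image_eq: "src_image V A s t Mv Ma i = I"
  unfolding src_image_def io_def by simp

lemma comp_io[simp]: "comp \<alpha> (io m) = (if \<alpha> \<in> Aout then Ma \<alpha> m else 0)"
  unfolding io_def comp_def Aout_def by (auto simp: fun_eq_iff)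
lemma unemb_io[simp]: "unemb (io m) = 0"
  unfolding io_def unemb_def by (auto simp: fun_eq_iff)

lemma io_X: "m \<in> Mv i \<Longrightarrow> io m \<in> X"
  unfolding X_def DSd_mem using Ma_into Aout_A by auto

lemma io_lin: "lin_on (Mv i) io"
proof (rule lin_intro)
  fix x y assume x: "x \<in> Mv i" and y: "y \<in> Mv i"
  show "io (x + y) = io x + io y"
  proof (rule ext_opt)
    fix u show "io (x + y) (None, u) = (io x + io y) (None, u)" by (simp add: io_def)
  next
    fix \<alpha> show "comp \<alpha> (io (x + y)) = comp \<alpha> (io x + io y)"
    proof (cases "\<alpha> \<in> Aout")
      case True
      then show ?thesis using lin_add[OF Ma_lin[OF Aout_A(1)[OF True]]] x y Aout_A(2)[OF True] by simp
    qed simp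
  qed
next
  fix c x assume x: "x \<in> Mv i"
  show "io (\<lambda>u. c * x u) = (\<lambda>u. c * io x u)"
  proof (rule ext_opt)
    fix u show "io (\<lambda>u. c * x u) (None, u) = c * io x (None, u)" by (simp add: io_def)
  next
    fix \<alpha> show "comp \<alpha> (io (\<lambda>u. c * x u)) = comp \<alpha> (\<lambda>u. c * io x u)"
    proof (cases "\<alpha> \<in> Aout")
      case True
      then show ?thesis using lin_scale[OF Ma_lin[OF Aout_A(1)[OF True]]] x Aout_A(2)[OF True] by simp
    qed simp
  qed
qed

lemma I_sub: "is_subspace I" by (rule subspace_image[OF Mv_sub[OF iV] io_lin])
lemma I_X: "I \<subseteq> X" using io_X by blast

lemma inj: "inj_on io (Mv i)"
proof -
  let ?N = "{m\<in>Mv i. io m = 0}"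
  have Ns: "is_subspace ?N" using subspace_preimage[OF Mv_sub[OF iV] io_lin subspace_zero] by simp
  have NM: "?N \<subseteq> Mv i" by blast
  obtain C where C0: "is_subspace C \<and> C \<subseteq> Mv i \<and> C \<inter> ?N = {0} \<and> (\<forall>w\<in>Mv i. \<exists>c\<in>C. \<exists>l\<in>?N. w = c + l)"
    using complement_exists[OF Mv_sub[OF iV] Ns NM] by (elim exE)
  then have C: "is_subspace C" "C \<subseteq> Mv i" "C \<inter> ?N = {0}" "\<And>w. w \<in> Mv i \<Longrightarrow> \<exists>c\<in>C. \<exists>l\<in>?N. w = c + l"
    by auto
  define P where "P j = (if j = i then C else Mv j)" for j
  define Q where "Q j = (if j = i then ?N else {0})" for j
  have PP: "\<And>j. j \<in> V \<Longrightarrow> is_subspace (P j) \<and> P j \<subseteq> Mv j" unfolding P_def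
    using C Mv_sub by auto
  have QQ: "\<And>j. j \<in> V \<Longrightarrow> is_subspace (Q j) \<and> Q j \<subseteq> Mv j" unfolding Q_def
    using Ns NM subspace_zero Mv_0 by auto
  have "(\<forall>j\<in>V. P j = {0}) \<or> (\<forall>j\<in>V. Q j = {0})"
  proof (rule decomp[OF PP QQ])
    fix j assume "j \<in> V" then show "P j \<inter> Q j = {0}" unfolding P_def Q_def using C(3) Mv_0 by auto
  next
    fix j m assume j: "j \<in> V" and m: "m \<in> Mv j"
    show "\<exists>p\<in>P j. \<exists>q\<in>Q j. m = p + q"
    proof (cases "j = i")
      case True
      then obtain c l where "c \<in> C" "l \<in> ?N" "m = c + l" using C(4) m by blast
      then show ?thesis unfolding P_def Q_def using True by auto
    next
      case False
      then show ?thesis unfolding P_def Q_def using m by (intro bexI[of _ m] bexI[of _ 0]) auto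
    qed
  next
    fix \<alpha> x assume \<alpha>: "\<alpha> \<in> A" and x: "x \<in> P (s \<alpha>)"
    have sx: "x \<in> Mv (s \<alpha>)" using x C(2) unfolding P_def by (cases "s \<alpha> = i") auto
    show "Ma \<alpha> x \<in> P (t \<alpha>)" unfolding P_def using t_ne[OF \<alpha>] Ma_into[OF \<alpha> sx] by simp
  next
    fix \<alpha> x assume \<alpha>: "\<alpha> \<in> A" and x: "x \<in> Q (s \<alpha>)"
    show "Ma \<alpha> x \<in> Q (t \<alpha>)"
    proof (cases "s \<alpha> = i")
      case True
      then have "io x = 0" using x unfolding Q_def by simp
      then have "comp \<alpha> (io x) = 0" by simp
      moreover have "\<alpha> \<in> Aout" using \<alpha> True unfolding Aout_def by simp
      ultimately have "Ma \<alpha> x = 0" by simp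
      then show ?thesis unfolding Q_def using t_ne[OF \<alpha>] by simp
    next
      case False
      then have "x = 0" using x unfolding Q_def by simp
      then show ?thesis unfolding Q_def using t_ne[OF \<alpha>] Ma_0[OF \<alpha>] by simp
    qed
  qed
  then show ?thesis
  proof
    assume "\<forall>j\<in>V. P j = {0}"
    then have "\<And>j. j \<in> V \<Longrightarrow> j \<noteq> i \<Longrightarrow> Mv j = {0}" unfolding P_def by auto
    then show ?thesis using concentrated[OF iV] by blast
  next
    assume "\<forall>j\<in>V. Q j = {0}"
    then have "Q i = {0}" using iV by blast
    then have N0: "?N = {0}" unfolding Q_def by simp
    show ?thesis
    proof (rule inj_onI)
      fix x y assume xy: "x \<in> Mv i" "y \<in> Mv i" "io x = io y"
      have "io (x - y) = 0" using lin_diff[OF Mv_sub[OF iV] io_lin xy(1,2)] xy(3) by simp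
      moreover have "x - y \<in> Mv i" using subspace_diff[OF Mv_sub[OF iV] xy(1,2)] .
      ultimately have "x - y \<in> ?N" by simp
      then show "x = y" using N0 by simp
    qed
  qed
qed

abbreviation "Cc \<equiv> src_compl V A s t Mv Ma i"
abbreviation "proj \<equiv> src_proj V A s t Mv Ma i"

lemma Cc_props: "is_subspace Cc \<and> Cc \<subseteq> X \<and> Cc \<inter> I = {0} \<and> (\<forall>p\<in>X. \<exists>c\<in>Cc. \<exists>g\<in>I. p = c + g)"
proof -
  obtain C where C: "is_subspace C \<and> C \<subseteq> X \<and> C \<inter> I = {0} \<and> (\<forall>w\<in>X. \<exists>c\<in>C. \<exists>l\<in>I. w = c + l)"
    using complement_exists[OF X_sub I_sub I_X] by (elim exE)
  have pl: "(\<lambda>x. c x + g x) = c + g" for c g :: "'a option \<times> 'w \<Rightarrow> 'k" by (simp add: plus_fun_def)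
  have "is_subspace Cc \<and> Cc \<subseteq> src_sum V A s t Mv i \<and>
      Cc \<inter> src_image V A s t Mv Ma i = {\<lambda>_. 0} \<and>
      (\<forall>p\<in>src_sum V A s t Mv i. \<exists>c\<in>Cc. \<exists>g\<in>src_image V A s t Mv Ma i. p = (\<lambda>x. c x + g x))"
    unfolding src_compl_def
    by (rule someI[of _ C]) (simp only: src_sum_eq src_image_eq pl lam_zero, use C in blast)
  then show ?thesis unfolding src_sum_eq src_image_eq pl lam_zero .
qed

lemma Cc_sub: "is_subspace Cc" and Cc_X: "Cc \<subseteq> X" and Cc_I: "Cc \<inter> I = {0}"
  and Cc_sum: "p \<in> X \<Longrightarrow> \<exists>c\<in>Cc. \<exists>g\<in>I. p = c + g"
  using Cc_props by auto

lemma decomp_unique: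
  assumes "c1 \<in> Cc" "c2 \<in> Cc" "g1 \<in> I" "g2 \<in> I" "c1 + g1 = c2 + g2"
  shows "c1 = c2"
proof -
  have "c1 - c2 = g2 - g1" using assms(5) by (simp add: algebra_simps)
  moreover have "c1 - c2 \<in> Cc" using subspace_diff[OF Cc_sub assms(1,2)] .
  moreover have "g2 - g1 \<in> I" using subspace_diff[OF I_sub assms(4,3)] .
  ultimately have "c1 - c2 \<in> Cc \<inter> I" by simp
  then show ?thesis using Cc_I by simp
qed

lemma proj_spec:
  assumes p: "p \<in> X"
  shows "proj p \<in> Cc \<and> p - proj p \<in> I"
proof -
  obtain c g where cg: "c \<in> Cc" "g \<in> I" "p = c + g" using Cc_sum[OF p] by blast
  have pl: "(\<lambda>x. c x + g x) = c + g" for c g :: "'a option \<times> 'w \<Rightarrow> 'k" by (simp add: plus_fun_def)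
  have "proj p = c" unfolding src_proj_def src_image_eq pl
  proof (rule the_equality)
    show "c \<in> Cc \<and> (\<exists>g\<in>I. p = c + g)" using cg by blast
    fix c' assume "c' \<in> Cc \<and> (\<exists>g\<in>I. p = c' + g)"
    then obtain g' where "c' \<in> Cc" "g' \<in> I" "p = c' + g'" by blast
    then show "c' = c" using decomp_unique[OF _ cg(1) _ cg(2)] cg(3) by metis
  qed
  then show ?thesis using cg by simp
qed

lemma proj_eq: "c \<in> Cc \<Longrightarrow> g \<in> I \<Longrightarrow> proj (c + g) = c"
proof -
  assume cg: "c \<in> Cc" "g \<in> I"
  have X: "c + g \<in> X" using subspace_add[OF X_sub] Cc_X I_X cg by blast
  note ps = proj_spec[OF X]
  have "proj (c + g) + (c + g - proj (c + g)) = c + g" by simp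
  then show ?thesis using decomp_unique[OF ps(1)[THEN conjunct1] cg(1) ps[THEN conjunct2] cg(2)] by simp
qed

lemma proj_C: "c \<in> Cc \<Longrightarrow> proj c = c" using proj_eq[of c 0] subspace_0[OF I_sub] by simp
lemma proj_I: "g \<in> I \<Longrightarrow> proj g = 0" using proj_eq[of 0 g] subspace_0[OF Cc_sub] by simp

lemma proj_lin: "lin_on X proj"
proof (rule lin_intro)
  fix x y assume x: "x \<in> X" and y: "y \<in> X"
  note px = proj_spec[OF x] and py = proj_spec[OF y]
  have "x + y = (proj x + proj y) + ((x - proj x) + (y - proj y))" by simp
  moreover have "proj x + proj y \<in> Cc" using subspace_add[OF Cc_sub] px py by blast
  moreover have "(x - proj x) + (y - proj y) \<in> I" using subspace_add[OF I_sub] px py by blast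
  ultimately show "proj (x + y) = proj x + proj y" using proj_eq by metis
next
  fix c x assume x: "x \<in> X"
  note px = proj_spec[OF x]
  have "(\<lambda>u. c * x u) = (\<lambda>u. c * proj x u) + (\<lambda>u. c * (x - proj x) u)" by (auto simp: fun_eq_iff algebra_simps)
  moreover have "(\<lambda>u. c * proj x u) \<in> Cc" using subspace_scale[OF Cc_sub] px by blast
  moreover have "(\<lambda>u. c * (x - proj x) u) \<in> I" using subspace_scale[OF I_sub] px by blast
  ultimately show "proj (\<lambda>u. c * x u) = (\<lambda>u. c * proj x u)" using proj_eq by metis
qed

lemma proj_img: "proj ` X = Cc"
proof
  show "proj ` X \<subseteq> Cc" using proj_spec by blast
  show "Cc \<subseteq> proj ` X"
  proof
    fix c assume "c \<in> Cc" then show "c \<in> proj ` X" using proj_C Cc_X by (metis image_eqI subsetD)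
  qed
qed

lemma proj_ker: "I = {p\<in>X. proj p = 0}"
proof
  show "I \<subseteq> {p\<in>X. proj p = 0}" using I_X proj_I by blast
  show "{p\<in>X. proj p = 0} \<subseteq> I" using proj_spec by fastforce
qed

end



context gsource begin

abbreviation "Nv \<equiv> source_space V A s t Mv Ma i"
abbreviation "Na \<equiv> source_map V A s t Mv Ma i"
abbreviation "E' \<equiv> endos V A (rev_s i s t) (rev_t i s t) Nv Na"

definition "good \<phi> \<longleftrightarrow> (\<forall>j\<in>V. j \<noteq> i \<longrightarrow> lin_on (Mv j) (\<phi> j) \<and> \<phi> j ` Mv j \<subseteq> Mv j)"

lemma E_good: "\<phi> \<in> E \<Longrightarrow> good \<phi>" unfolding good_def endos_def by auto

lemma good_Aout: "good \<phi> \<Longrightarrow> \<alpha> \<in> Aout \<Longrightarrow> lin_on (Mv (t \<alpha>)) (\<phi> (t \<alpha>)) \<and> \<phi> (t \<alpha>) ` Mv (t \<alpha>) \<subseteq> Mv (t \<alpha>)"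
  unfolding good_def using Aout_tV t_ne Aout_A(1) by blast

lemma Dq_X: "good \<phi> \<Longrightarrow> f \<in> X \<Longrightarrow> Dq \<phi> f \<in> X"
proof -
  assume g: "good \<phi>" and f: "f \<in> X"
  have h: "\<And>\<alpha>. \<alpha> \<in> Aout \<Longrightarrow> lin_on (Mv (t \<alpha>)) (\<phi> (t \<alpha>)) \<and> \<phi> (t \<alpha>) ` Mv (t \<alpha>) \<subseteq> Mv (t \<alpha>)"
    using good_Aout[OF g] .
  show ?thesis using Dact_DSd[where g="\<lambda>\<alpha>. \<phi> (t \<alpha>)" and Z="\<lambda>\<alpha>. Mv (t \<alpha>)" and S=Aout and Sf=Aout, OF subset_refl Aout_sub h] f
    unfolding Dq_def X_def by blast
qed

lemma Dq_lin: "good \<phi> \<Longrightarrow> lin_on X (Dq \<phi>)"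
proof -
  assume g: "good \<phi>"
  have h: "\<And>\<alpha>. \<alpha> \<in> Aout \<Longrightarrow> lin_on (Mv (t \<alpha>)) (\<phi> (t \<alpha>)) \<and> \<phi> (t \<alpha>) ` Mv (t \<alpha>) \<subseteq> Mv (t \<alpha>)"
    using good_Aout[OF g] .
  show ?thesis using Dact_lin[where g="\<lambda>\<alpha>. \<phi> (t \<alpha>)" and Z="\<lambda>\<alpha>. Mv (t \<alpha>)" and S=Aout and Sf=Aout, OF subset_refl Aout_sub h]
    unfolding Dq_def X_def by blast
qed

lemma Dq_io: "\<phi> \<in> E \<Longrightarrow> m \<in> Mv i \<Longrightarrow> Dq \<phi> (io m) = io (\<phi> i m)"
proof -
  assume \<phi>: "\<phi> \<in> E" and m: "m \<in> Mv i"
  show ?thesis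
  proof (rule ext_opt)
    fix u show "Dq \<phi> (io m) (None, u) = io (\<phi> i m) (None, u)" by (simp add: Dq_def Dact_def io_def)
  next
    fix \<alpha> show "comp \<alpha> (Dq \<phi> (io m)) = comp \<alpha> (io (\<phi> i m))"
    proof (cases "\<alpha> \<in> Aout")
      case True
      then show ?thesis unfolding Dq_def using endo_comm[OF \<phi> Aout_A(1)[OF True]] m Aout_A(2)[OF True] by simp
    qed (simp add: Dq_def)
  qed
qed

lemma Dq_I: "\<phi> \<in> E \<Longrightarrow> g \<in> I \<Longrightarrow> Dq \<phi> g \<in> I"
proof -
  assume \<phi>: "\<phi> \<in> E" and "g \<in> I"
  then obtain m where m: "m \<in> Mv i" "g = io m" by blast
  then show ?thesis using Dq_io[OF \<phi> m(1)] endo_into[OF \<phi> iV m(1)] by simp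
qed

definition "Gq \<phi> c = proj (Dq \<phi> c)"

lemma eqv_src: "\<phi> \<in> E \<Longrightarrow> p \<in> X \<Longrightarrow> proj (Dq \<phi> p) = Gq \<phi> (proj p)"
proof -
  assume \<phi>: "\<phi> \<in> E" and p: "p \<in> X"
  note ps = proj_spec[OF p]
  have g: "good \<phi>" using E_good[OF \<phi>] .
  have pp: "proj p \<in> X" using ps Cc_X by blast
  have gX: "p - proj p \<in> X" using ps I_X by blast
  have "p = proj p + (p - proj p)" by simp
  then have "Dq \<phi> p = Dq \<phi> (proj p) + Dq \<phi> (p - proj p)"
    using lin_add[OF Dq_lin[OF g] pp gX] by simp
  then have "proj (Dq \<phi> p) = proj (Dq \<phi> (proj p)) + proj (Dq \<phi> (p - proj p))"
    using lin_add[OF proj_lin Dq_X[OF g pp] Dq_X[OF g gX]] by simp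
  moreover have "proj (Dq \<phi> (p - proj p)) = 0" using proj_I Dq_I[OF \<phi>] ps by blast
  ultimately show ?thesis unfolding Gq_def by simp
qed

lemma Gq_lin: "good \<phi> \<Longrightarrow> lin_on Cc (Gq \<phi>)"
proof (rule lin_intro)
  fix x y assume g: "good \<phi>" and x: "x \<in> Cc" and y: "y \<in> Cc"
  have xX: "x \<in> X" "y \<in> X" using x y Cc_X by auto
  show "Gq \<phi> (x + y) = Gq \<phi> x + Gq \<phi> y" unfolding Gq_def
    using lin_add[OF Dq_lin[OF g] xX] lin_add[OF proj_lin Dq_X[OF g xX(1)] Dq_X[OF g xX(2)]] by simp
next
  fix c x assume g: "good \<phi>" and x: "x \<in> Cc"
  have xX: "x \<in> X" using x Cc_X by auto
  show "Gq \<phi> (\<lambda>u. c * x u) = (\<lambda>u. c * Gq \<phi> x u)" unfolding Gq_def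
    using lin_scale[OF Dq_lin[OF g] xX] lin_scale[OF proj_lin Dq_X[OF g xX]] by simp
qed

lemma Gq_into: "good \<phi> \<Longrightarrow> c \<in> Cc \<Longrightarrow> Gq \<phi> c \<in> Cc"
  unfolding Gq_def using proj_spec Dq_X Cc_X by blast

lemma len_X: "finite_length (sm X E Dq) \<and>
   mod_length (sm X E Dq) = (\<Sum>\<alpha>\<in>Aout. mod_length (sm (Mv (t \<alpha>)) E (\<lambda>\<phi>. \<phi> (t \<alpha>))))"
proof -
  have "finite_length (sm (DSd Aout (\<lambda>\<alpha>. Mv (t \<alpha>))) E (\<lambda>\<phi>. Dact Aout (\<lambda>\<alpha>. \<phi> (t \<alpha>)))) \<and>
   mod_length (sm (DSd Aout (\<lambda>\<alpha>. Mv (t \<alpha>))) E (\<lambda>\<phi>. Dact Aout (\<lambda>\<alpha>. \<phi> (t \<alpha>)))) =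
     (\<Sum>\<alpha>\<in>Aout. mod_length (sm (Mv (t \<alpha>)) E (\<lambda>\<phi>. \<phi> (t \<alpha>))))"
  proof (rule DSd_length[OF finAout, where g="\<lambda>\<phi> \<alpha>. \<phi> (t \<alpha>)"])
    show "\<And>\<alpha>. \<alpha> \<in> Aout \<Longrightarrow> is_subspace (Mv (t \<alpha>))" by (rule Aout_sub)
    show "\<And>e \<alpha>. e \<in> E \<Longrightarrow> \<alpha> \<in> Aout \<Longrightarrow> lin_on (Mv (t \<alpha>)) (e (t \<alpha>)) \<and> e (t \<alpha>) ` Mv (t \<alpha>) \<subseteq> Mv (t \<alpha>)"
      using good_Aout E_good by blast
    show "\<And>\<alpha>. \<alpha> \<in> Aout \<Longrightarrow> finite_length (sm (Mv (t \<alpha>)) E (\<lambda>e. e (t \<alpha>)))" using fin_j Aout_tV by blast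
  qed simp
  moreover have eq: "Dq = (\<lambda>\<phi>. Dact Aout (\<lambda>\<alpha>. \<phi> (t \<alpha>)))" unfolding Dq_def by (rule ext) simp
  ultimately show ?thesis unfolding X_def eq by blast
qed

lemma len_I: "has_chain (sm (Mv i) E (\<lambda>\<phi>. \<phi> i)) n = has_chain (sm I E Dq) n"
proof (rule sm_iso[OF Mv_sub[OF iV] io_lin inj refl])
  show "\<forall>e\<in>E. (\<lambda>\<phi>. \<phi> i) e ` Mv i \<subseteq> Mv i" using endo_into iV by blast
  show "\<forall>e\<in>E. \<exists>e'\<in>E. \<forall>x\<in>Mv i. io (e i x) = Dq e' (io x)" using Dq_io by metis
  show "\<forall>e'\<in>E. \<exists>e\<in>E. \<forall>x\<in>Mv i. Dq e' (io x) = io (e i x)" using Dq_io by metis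
qed

lemma len_add: "finite_length (sm Cc E Gq) \<and>
   mod_length (sm X E Dq) = mod_length (sm I E Dq) + mod_length (sm Cc E Gq)"
proof -
  have FX: "\<forall>e\<in>E. Dq e ` X \<subseteq> X" using Dq_X E_good by blast
  have eqv: "\<forall>e\<in>E. \<forall>x\<in>X. proj (Dq e x) = Gq e (proj x)" using eqv_src by blast
  have finC: "finite_length (sm Cc E Gq)"
    by (rule sm_quot_fin[OF X_sub FX proj_lin proj_img eqv]) (use len_X in blast)
  have finI: "finite_length (sm I E Dq)" using sm_sub_fin[OF I_X] len_X by blast
  have "finite_length (sm X E Dq) \<and> mod_length (sm X E Dq) = mod_length (sm I E Dq) + mod_length (sm Cc E Gq)"
  proof (rule sm_add[OF X_sub FX Cc_sub proj_lin proj_img _ eqv proj_ker finI finC])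
    show "\<forall>e\<in>E. lin_on Cc (Gq e)" using Gq_lin E_good by blast
  qed
  then show ?thesis using finC by blast
qed

end



context gsource begin

lemma Nv_ne: "j \<noteq> i \<Longrightarrow> Nv j = emb ` Mv j" unfolding source_space_def by simp
lemma Nv_i: "Nv i = Cc" unfolding source_space_def by simp
lemma rev_o: "\<alpha> \<in> A \<Longrightarrow> s \<alpha> = i \<Longrightarrow> rev_s i s t \<alpha> = t \<alpha> \<and> rev_t i s t \<alpha> = i"
  unfolding rev_s_def rev_t_def by auto
lemma rev_x: "\<alpha> \<in> A \<Longrightarrow> s \<alpha> \<noteq> i \<Longrightarrow> rev_s i s t \<alpha> = s \<alpha> \<and> rev_t i s t \<alpha> = t \<alpha>"
  unfolding rev_s_def rev_t_def using t_ne by auto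
lemma Na_o: "s \<alpha> = i \<Longrightarrow> Na \<alpha> f = proj (inj_comp \<alpha> (unemb f))" unfolding source_map_def by simp
lemma Na_x: "s \<alpha> \<noteq> i \<Longrightarrow> Na \<alpha> f = emb (Ma \<alpha> (unemb f))" unfolding source_map_def by simp

lemma E'_D:
  assumes "\<psi> \<in> E'"
  shows "\<And>j. j \<in> V \<Longrightarrow> lin_on (Nv j) (\<psi> j)"
    and "\<And>j x. j \<in> V \<Longrightarrow> x \<in> Nv j \<Longrightarrow> \<psi> j x \<in> Nv j"
    and "\<And>\<alpha> x. \<alpha> \<in> A \<Longrightarrow> x \<in> Nv (rev_s i s t \<alpha>) \<Longrightarrow> \<psi> (rev_t i s t \<alpha>) (Na \<alpha> x) = Na \<alpha> (\<psi> (rev_s i s t \<alpha>) x)"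
  using assms unfolding endos_def by auto

lemma inj_comp_X: "\<alpha> \<in> Aout \<Longrightarrow> m \<in> Mv (t \<alpha>) \<Longrightarrow> inj_comp \<alpha> m \<in> X"
  unfolding X_def by (rule inj_comp_DSd) (auto intro: Aout_sub)

lemma Dq_inj_comp:
  assumes g: "good \<phi>" and a: "\<alpha> \<in> Aout" and m: "m \<in> Mv (t \<alpha>)"
  shows "Dq \<phi> (inj_comp \<alpha> m) = inj_comp \<alpha> (\<phi> (t \<alpha>) m)"
proof (rule DSd_eqI[where S=Aout and Z="\<lambda>\<alpha>. Mv (t \<alpha>)"])
  show "Dq \<phi> (inj_comp \<alpha> m) \<in> DSd Aout (\<lambda>\<alpha>. Mv (t \<alpha>))" using Dq_X[OF g inj_comp_X[OF a m]] unfolding X_def .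
  have "\<phi> (t \<alpha>) m \<in> Mv (t \<alpha>)" using good_Aout[OF g a] m by blast
  then show "inj_comp \<alpha> (\<phi> (t \<alpha>) m) \<in> DSd Aout (\<lambda>\<alpha>. Mv (t \<alpha>))" using inj_comp_X[OF a] unfolding X_def by blast
  fix \<beta> assume b: "\<beta> \<in> Aout"
  show "comp \<beta> (Dq \<phi> (inj_comp \<alpha> m)) = comp \<beta> (inj_comp \<alpha> (\<phi> (t \<alpha>) m))"
  proof (cases "\<beta> = \<alpha>")
    case False
    have "\<phi> (t \<beta>) 0 = 0" using good_Aout[OF g b] lin_0 Aout_sub[OF b] by blast
    then show ?thesis unfolding Dq_def using b False by simp
  qed (simp add: Dq_def a)
qed

definition "psi_of \<phi> j = (if j = i then Gq \<phi> else (\<lambda>f. emb (\<phi> j (unemb f))))"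

lemma psi_of_E:
  assumes \<phi>: "\<phi> \<in> E"
  shows "psi_of \<phi> \<in> E'"
  unfolding endos_def
proof (intro CollectI conjI ballI)
  fix j assume j: "j \<in> V"
  show "lin_on (Nv j) (psi_of \<phi> j)"
  proof (cases "j = i")
    case True
    then show ?thesis unfolding psi_of_def using Gq_lin[OF E_good[OF \<phi>]] Nv_i by simp
  next
    case False
    then show ?thesis unfolding psi_of_def Nv_ne[OF False] using lin_conj_emb[OF endo_lin[OF \<phi> j]] by simp
  qed
  show "psi_of \<phi> j ` Nv j \<subseteq> Nv j"
  proof (cases "j = i")
    case True
    then show ?thesis unfolding psi_of_def using Gq_into[OF E_good[OF \<phi>]] Nv_i by auto
  next
    case False
    show ?thesis
    proof
      fix y assume "y \<in> psi_of \<phi> j ` Nv j"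
      then obtain m where m: "m \<in> Mv j" "y = emb (\<phi> j m)" unfolding psi_of_def Nv_ne[OF False] using False by auto
      then show "y \<in> Nv j" unfolding Nv_ne[OF False] using endo_into[OF \<phi> j] by auto
    qed
  qed
next
  fix \<alpha> x assume \<alpha>: "\<alpha> \<in> A" and x: "x \<in> Nv (rev_s i s t \<alpha>)"
  show "psi_of \<phi> (rev_t i s t \<alpha>) (Na \<alpha> x) = Na \<alpha> (psi_of \<phi> (rev_s i s t \<alpha>) x)"
  proof (cases "s \<alpha> = i")
    case True
    note r = rev_o[OF \<alpha> True]
    have a: "\<alpha> \<in> Aout" using \<alpha> True unfolding Aout_def by simp
    obtain m where m: "m \<in> Mv (t \<alpha>)" "x = emb m" using x r Nv_ne t_ne[OF \<alpha>] by auto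
    have "psi_of \<phi> i (Na \<alpha> x) = Gq \<phi> (proj (inj_comp \<alpha> m))"
      unfolding psi_of_def Na_o[OF True] using m by simp
    also have "\<dots> = proj (Dq \<phi> (inj_comp \<alpha> m))" using eqv_src[OF \<phi> inj_comp_X[OF a m(1)]] by simp
    also have "\<dots> = proj (inj_comp \<alpha> (\<phi> (t \<alpha>) m))" using Dq_inj_comp[OF E_good[OF \<phi>] a m(1)] by simp
    also have "\<dots> = Na \<alpha> (psi_of \<phi> (t \<alpha>) x)"
      unfolding psi_of_def Na_o[OF True] using t_ne[OF \<alpha>] m by simp
    finally show ?thesis using r by simp
  next
    case False
    note r = rev_x[OF \<alpha> False]
    have tn: "t \<alpha> \<noteq> i" using t_ne[OF \<alpha>] .
    obtain m where m: "m \<in> Mv (s \<alpha>)" "x = emb m" using x r Nv_ne False by auto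
    have "psi_of \<phi> (t \<alpha>) (Na \<alpha> x) = emb (\<phi> (t \<alpha>) (Ma \<alpha> m))"
      unfolding psi_of_def Na_x[OF False] using tn m by simp
    moreover have "Na \<alpha> (psi_of \<phi> (s \<alpha>) x) = emb (Ma \<alpha> (\<phi> (s \<alpha>) m))"
      unfolding psi_of_def Na_x[OF False] using False m by simp
    ultimately show ?thesis using r endo_comm[OF \<phi> \<alpha> m(1)] by simp
  qed
qed

definition "psi' \<psi> j m = unemb (\<psi> j (emb m))"

lemma psi'_emb:
  assumes \<psi>: "\<psi> \<in> E'" and j: "j \<in> V" "j \<noteq> i" and m: "m \<in> Mv j"
  shows "\<psi> j (emb m) = emb (psi' \<psi> j m) \<and> psi' \<psi> j m \<in> Mv j"
proof -
  have "emb m \<in> Nv j" using m Nv_ne[OF j(2)] by simp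
  then have "\<psi> j (emb m) \<in> emb ` Mv j" using E'_D(2)[OF \<psi> j(1)] Nv_ne[OF j(2)] by metis
  then obtain m' where "m' \<in> Mv j" "\<psi> j (emb m) = emb m'" by blast
  then show ?thesis unfolding psi'_def by simp
qed

lemma psi'_good: "\<psi> \<in> E' \<Longrightarrow> good (psi' \<psi>)"
  unfolding good_def
proof (intro ballI impI conjI)
  fix j assume \<psi>: "\<psi> \<in> E'" and j: "j \<in> V" "j \<noteq> i"
  have l: "lin_on (emb ` Mv j) (\<psi> j)" using E'_D(1)[OF \<psi> j(1)] Nv_ne[OF j(2)] by simp
  show "lin_on (Mv j) (psi' \<psi> j)"
  proof (rule lin_intro)
    fix x y assume "x \<in> Mv j" "y \<in> Mv j"
    then show "psi' \<psi> j (x + y) = psi' \<psi> j x + psi' \<psi> j y"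
      unfolding psi'_def using lin_add[OF l, of "emb x" "emb y"] by simp
  next
    fix c x assume "x \<in> Mv j"
    then show "psi' \<psi> j (\<lambda>u. c * x u) = (\<lambda>u. c * psi' \<psi> j x u)"
      unfolding psi'_def using lin_scale[OF l, of "emb x" c] by simp
  qed
  show "psi' \<psi> j ` Mv j \<subseteq> Mv j" using psi'_emb[OF \<psi> j] by blast
qed

lemma psi_proj:
  assumes \<psi>: "\<psi> \<in> E'" and p: "p \<in> X"
  shows "\<psi> i (proj p) = proj (Dq (psi' \<psi>) p)"
proof -
  have g: "good (psi' \<psi>)" by (rule psi'_good[OF \<psi>])
  define q where "q \<alpha> = inj_comp \<alpha> (comp \<alpha> p)" for \<alpha>
  have qX: "q \<alpha> \<in> X" if "\<alpha> \<in> Aout" for \<alpha> unfolding q_def using inj_comp_X[OF that X_comp[OF p that]] .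
  have pd: "p = (\<Sum>\<alpha>\<in>Aout. q \<alpha>)" unfolding q_def using DSd_decomp[OF finAout] p unfolding X_def by blast
  have lC: "lin_on Cc (\<psi> i)" using E'_D(1)[OF \<psi> iV] Nv_i by simp
  have "proj p = (\<Sum>\<alpha>\<in>Aout. proj (q \<alpha>))" using lin_sum[OF X_sub proj_lin, of Aout q] qX pd by simp
  then have "\<psi> i (proj p) = (\<Sum>\<alpha>\<in>Aout. \<psi> i (proj (q \<alpha>)))"
    using lin_sum[OF Cc_sub lC, of Aout "\<lambda>\<alpha>. proj (q \<alpha>)"] proj_spec qX by simp
  also have "\<dots> = (\<Sum>\<alpha>\<in>Aout. proj (inj_comp \<alpha> (psi' \<psi> (t \<alpha>) (comp \<alpha> p))))"
  proof (rule sum.cong)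
    fix \<alpha> assume a: "\<alpha> \<in> Aout"
    have \<alpha>: "\<alpha> \<in> A" "s \<alpha> = i" using Aout_A a by auto
    note r = rev_o[OF \<alpha>]
    have tn: "t \<alpha> \<noteq> i" "t \<alpha> \<in> V" using t_ne[OF \<alpha>(1)] st_V[OF \<alpha>(1)] by auto
    have m: "comp \<alpha> p \<in> Mv (t \<alpha>)" using X_comp[OF p a] .
    have "emb (comp \<alpha> p) \<in> Nv (rev_s i s t \<alpha>)" using r Nv_ne[OF tn(1)] m by simp
    from E'_D(3)[OF \<psi> \<alpha>(1) this]
    have "\<psi> i (proj (q \<alpha>)) = Na \<alpha> (\<psi> (t \<alpha>) (emb (comp \<alpha> p)))"
      using r Na_o[OF \<alpha>(2)] unfolding q_def by simp
    also have "\<dots> = proj (inj_comp \<alpha> (psi' \<psi> (t \<alpha>) (comp \<alpha> p)))"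
      using psi'_emb[OF \<psi> tn(2) tn(1) m] Na_o[OF \<alpha>(2)] by simp
    finally show "\<psi> i (proj (q \<alpha>)) = proj (inj_comp \<alpha> (psi' \<psi> (t \<alpha>) (comp \<alpha> p)))" .
  qed simp
  also have "\<dots> = proj (\<Sum>\<alpha>\<in>Aout. inj_comp \<alpha> (psi' \<psi> (t \<alpha>) (comp \<alpha> p)))"
  proof (rule lin_sum[OF X_sub proj_lin, symmetric])
    fix \<alpha> assume a: "\<alpha> \<in> Aout"
    have "psi' \<psi> (t \<alpha>) (comp \<alpha> p) \<in> Mv (t \<alpha>)" using good_Aout[OF g a] X_comp[OF p a] by blast
    then show "inj_comp \<alpha> (psi' \<psi> (t \<alpha>) (comp \<alpha> p)) \<in> X" using inj_comp_X[OF a] by blast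
  qed
  also have "(\<Sum>\<alpha>\<in>Aout. inj_comp \<alpha> (psi' \<psi> (t \<alpha>) (comp \<alpha> p))) = Dq (psi' \<psi>) p"
  proof -
    have "Dq (psi' \<psi>) p = (\<Sum>\<alpha>\<in>Aout. inj_comp \<alpha> (comp \<alpha> (Dq (psi' \<psi>) p)))"
      using DSd_decomp[OF finAout] Dq_X[OF g p] unfolding X_def by blast
    also have "\<dots> = (\<Sum>\<alpha>\<in>Aout. inj_comp \<alpha> (psi' \<psi> (t \<alpha>) (comp \<alpha> p)))"
      by (rule sum.cong) (simp_all add: Dq_def)
    finally show ?thesis by simp
  qed
  finally show ?thesis .
qed

definition "Phi \<psi> m = (THE m'. m' \<in> Mv i \<and> io m' = Dq (psi' \<psi>) (io m))"

lemma Phi_spec: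
  assumes \<psi>: "\<psi> \<in> E'" and m: "m \<in> Mv i"
  shows "Phi \<psi> m \<in> Mv i \<and> io (Phi \<psi> m) = Dq (psi' \<psi>) (io m)"
proof -
  have g: "good (psi' \<psi>)" by (rule psi'_good[OF \<psi>])
  have X1: "Dq (psi' \<psi>) (io m) \<in> X" using Dq_X[OF g io_X[OF m]] .
  have lC: "lin_on Cc (\<psi> i)" using E'_D(1)[OF \<psi> iV] Nv_i by simp
  have "proj (Dq (psi' \<psi>) (io m)) = \<psi> i (proj (io m))" using psi_proj[OF \<psi> io_X[OF m]] by simp
  also have "\<dots> = \<psi> i 0" using proj_I m by simp
  also have "\<dots> = 0" using lin_0[OF Cc_sub lC] .
  finally have "proj (Dq (psi' \<psi>) (io m)) = 0" .
  then have "Dq (psi' \<psi>) (io m) \<in> {p\<in>X. proj p = 0}" using X1 by simp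
  then have "Dq (psi' \<psi>) (io m) \<in> I" by (simp only: proj_ker)
  then obtain m' where m'0: "Dq (psi' \<psi>) (io m) = io m'" "m' \<in> Mv i" by (rule imageE)
  then have m': "m' \<in> Mv i" "io m' = Dq (psi' \<psi>) (io m)" by simp_all
  have "Phi \<psi> m = m'" unfolding Phi_def
  proof (rule the_equality)
    show "m' \<in> Mv i \<and> io m' = Dq (psi' \<psi>) (io m)" using m' by simp
    fix m'' assume "m'' \<in> Mv i \<and> io m'' = Dq (psi' \<psi>) (io m)"
    then show "m'' = m'" using m' inj unfolding inj_on_def by metis
  qed
  then show ?thesis using m' by simp
qed

lemma Phi_lin:
  assumes \<psi>: "\<psi> \<in> E'"
  shows "lin_on (Mv i) (Phi \<psi>)"
proof (rule lin_intro)
  have g: "good (psi' \<psi>)" by (rule psi'_good[OF \<psi>])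
  fix x y assume x: "x \<in> Mv i" and y: "y \<in> Mv i"
  have xy: "x + y \<in> Mv i" using subspace_add[OF Mv_sub[OF iV] x y] .
  have "io (Phi \<psi> (x + y)) = Dq (psi' \<psi>) (io (x + y))" using Phi_spec[OF \<psi> xy] by simp
  also have "\<dots> = Dq (psi' \<psi>) (io x) + Dq (psi' \<psi>) (io y)"
    using lin_add[OF io_lin x y] lin_add[OF Dq_lin[OF g] io_X[OF x] io_X[OF y]] by simp
  also have "\<dots> = io (Phi \<psi> x + Phi \<psi> y)"
    using Phi_spec[OF \<psi> x] Phi_spec[OF \<psi> y] lin_add[OF io_lin] by simp
  finally have "io (Phi \<psi> (x + y)) = io (Phi \<psi> x + Phi \<psi> y)" .
  moreover have "Phi \<psi> x + Phi \<psi> y \<in> Mv i" using subspace_add[OF Mv_sub[OF iV]] Phi_spec[OF \<psi> x] Phi_spec[OF \<psi> y] by blast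
  ultimately show "Phi \<psi> (x + y) = Phi \<psi> x + Phi \<psi> y" using inj Phi_spec[OF \<psi> xy] unfolding inj_on_def by blast
next
  have g: "good (psi' \<psi>)" by (rule psi'_good[OF \<psi>])
  fix c x assume x: "x \<in> Mv i"
  have cx: "(\<lambda>u. c * x u) \<in> Mv i" using subspace_scale[OF Mv_sub[OF iV] x] .
  have "io (Phi \<psi> (\<lambda>u. c * x u)) = Dq (psi' \<psi>) (io (\<lambda>u. c * x u))" using Phi_spec[OF \<psi> cx] by simp
  also have "\<dots> = (\<lambda>u. c * Dq (psi' \<psi>) (io x) u)"
    using lin_scale[OF io_lin x] lin_scale[OF Dq_lin[OF g] io_X[OF x]] by simp
  also have "\<dots> = io (\<lambda>u. c * Phi \<psi> x u)"
    using Phi_spec[OF \<psi> x] lin_scale[OF io_lin] by simp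
  finally have "io (Phi \<psi> (\<lambda>u. c * x u)) = io (\<lambda>u. c * Phi \<psi> x u)" .
  moreover have "(\<lambda>u. c * Phi \<psi> x u) \<in> Mv i" using subspace_scale[OF Mv_sub[OF iV]] Phi_spec[OF \<psi> x] by blast
  ultimately show "Phi \<psi> (\<lambda>u. c * x u) = (\<lambda>u. c * Phi \<psi> x u)" using inj Phi_spec[OF \<psi> cx] unfolding inj_on_def by blast
qed

definition "phi_of \<psi> j = (if j = i then Phi \<psi> else psi' \<psi> j)"

lemma Dq_phi_of: "Dq (phi_of \<psi>) = Dq (psi' \<psi>)"
  unfolding Dq_def by (rule Dact_cong) (simp add: phi_of_def t_ne Aout_A)

lemma phi_of_E:
  assumes \<psi>: "\<psi> \<in> E'"
  shows "phi_of \<psi> \<in> E"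
  unfolding endos_def
proof (intro CollectI conjI ballI)
  have g: "good (psi' \<psi>)" by (rule psi'_good[OF \<psi>])
  fix j assume j: "j \<in> V"
  show "lin_on (Mv j) (phi_of \<psi> j)"
  proof (cases "j = i")
    case True
    have "phi_of \<psi> j = Phi \<psi>" unfolding phi_of_def using True by simp
    then show ?thesis using Phi_lin[OF \<psi>] True by simp
  next
    case False
    then show ?thesis unfolding phi_of_def using g j unfolding good_def by simp
  qed
  show "phi_of \<psi> j ` Mv j \<subseteq> Mv j"
  proof (cases "j = i")
    case True
    have "phi_of \<psi> j = Phi \<psi>" unfolding phi_of_def using True by simp
    then show ?thesis using Phi_spec[OF \<psi>] True by auto
  next
    case False
    then show ?thesis unfolding phi_of_def using g j unfolding good_def by simp
  qed
next
  have g: "good (psi' \<psi>)" by (rule psi'_good[OF \<psi>])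
  fix \<alpha> x assume \<alpha>: "\<alpha> \<in> A" and x: "x \<in> Mv (s \<alpha>)"
  have tn: "t \<alpha> \<noteq> i" "t \<alpha> \<in> V" using t_ne[OF \<alpha>] st_V[OF \<alpha>] by auto
  show "phi_of \<psi> (t \<alpha>) (Ma \<alpha> x) = Ma \<alpha> (phi_of \<psi> (s \<alpha>) x)"
  proof (cases "s \<alpha> = i")
    case True
    have a: "\<alpha> \<in> Aout" using \<alpha> True unfolding Aout_def by simp
    have xi: "x \<in> Mv i" using x True by simp
    have "Ma \<alpha> (phi_of \<psi> (s \<alpha>) x) = comp \<alpha> (io (Phi \<psi> x))" unfolding phi_of_def using True a by simp
    also have "\<dots> = comp \<alpha> (Dq (psi' \<psi>) (io x))" using Phi_spec[OF \<psi> xi] by simp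
    also have "\<dots> = psi' \<psi> (t \<alpha>) (Ma \<alpha> x)" unfolding Dq_def using a by simp
    finally show ?thesis unfolding phi_of_def using tn by simp
  next
    case False
    note r = rev_x[OF \<alpha> False]
    have "emb x \<in> Nv (rev_s i s t \<alpha>)" using r Nv_ne[OF False] x by simp
    from E'_D(3)[OF \<psi> \<alpha> this] have "\<psi> (t \<alpha>) (emb (Ma \<alpha> x)) = Na \<alpha> (\<psi> (s \<alpha>) (emb x))"
      using r Na_x[OF False] by simp
    also have "\<dots> = emb (Ma \<alpha> (psi' \<psi> (s \<alpha>) x))"
      using psi'_emb[OF \<psi> st_V(1)[OF \<alpha>] False x] Na_x[OF False] by simp
    finally have "psi' \<psi> (t \<alpha>) (Ma \<alpha> x) = Ma \<alpha> (psi' \<psi> (s \<alpha>) x)" unfolding psi'_def by simp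
    then show ?thesis unfolding phi_of_def using False tn by simp
  qed
qed

lemma dim_ne:
  assumes j: "j \<in> V" "j \<noteq> i"
  shows "mod_length (esub V A (rev_s i s t) (rev_t i s t) Nv Na j) = mod_length (esub V A s t Mv Ma j)"
proof -
  have "has_chain (sm (Mv j) E (\<lambda>\<phi>. \<phi> j)) n = has_chain (sm (emb ` Mv j) E' (\<lambda>\<psi>. \<psi> j)) n" for n
  proof (rule sm_iso[OF Mv_sub[OF j(1)] lin_emb _ refl])
    show "inj_on emb (Mv j)" by (rule inj_onI) (rule emb_inj)
    show "\<forall>e\<in>E. (\<lambda>\<phi>. \<phi> j) e ` Mv j \<subseteq> Mv j" using endo_into j(1) by blast
    show "\<forall>e\<in>E. \<exists>e'\<in>E'. \<forall>x\<in>Mv j. emb (e j x) = e' j (emb x)"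
    proof
      fix \<phi> assume \<phi>: "\<phi> \<in> E"
      show "\<exists>e'\<in>E'. \<forall>x\<in>Mv j. emb (\<phi> j x) = e' j (emb x)"
        by (rule bexI[OF _ psi_of_E[OF \<phi>]]) (simp add: psi_of_def j(2))
    qed
    show "\<forall>e'\<in>E'. \<exists>e\<in>E. \<forall>x\<in>Mv j. e' j (emb x) = emb (e j x)"
    proof
      fix \<psi> assume \<psi>: "\<psi> \<in> E'"
      show "\<exists>e\<in>E. \<forall>x\<in>Mv j. \<psi> j (emb x) = emb (e j x)"
        by (rule bexI[OF _ phi_of_E[OF \<psi>]]) (simp add: phi_of_def j(2) psi'_emb[OF \<psi> j])
    qed
  qed
  then show ?thesis unfolding esub_gen Nv_ne[OF j(2)] by (intro mod_length_cong) simp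
qed

lemma dim_i:
  "int (mod_length (esub V A (rev_s i s t) (rev_t i s t) Nv Na i)) =
     (\<Sum>\<alpha>\<in>Aout. int (mod_length (esub V A s t Mv Ma (t \<alpha>)))) - int (mod_length (esub V A s t Mv Ma i))"
proof -
  have "sm Cc E' (\<lambda>\<psi>. \<psi> i) = sm Cc E Gq"
  proof (rule sm_same)
    show "\<forall>e\<in>E'. \<exists>e'\<in>E. \<forall>x\<in>Cc. e i x = Gq e' x"
    proof
      fix \<psi> assume \<psi>: "\<psi> \<in> E'"
      have "\<psi> i x = Gq (phi_of \<psi>) x" if x: "x \<in> Cc" for x
      proof -
        have "x \<in> X" using x Cc_X by blast
        then have "\<psi> i (proj x) = proj (Dq (psi' \<psi>) x)" by (rule psi_proj[OF \<psi>])
        then show ?thesis using proj_C[OF x] unfolding Gq_def Dq_phi_of by simp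
      qed
      then show "\<exists>e'\<in>E. \<forall>x\<in>Cc. \<psi> i x = Gq e' x" using phi_of_E[OF \<psi>] by blast
    qed
    show "\<forall>e'\<in>E. \<exists>e\<in>E'. \<forall>x\<in>Cc. Gq e' x = e i x"
    proof
      fix \<phi> assume \<phi>: "\<phi> \<in> E"
      show "\<exists>e\<in>E'. \<forall>x\<in>Cc. Gq \<phi> x = e i x"
        by (rule bexI[OF _ psi_of_E[OF \<phi>]]) (simp add: psi_of_def)
    qed
  qed
  then have e1: "mod_length (esub V A (rev_s i s t) (rev_t i s t) Nv Na i) = mod_length (sm Cc E Gq)"
    using esub_gen[of V A "rev_s i s t" "rev_t i s t" Nv Na i] Nv_i by simp
  have e2: "mod_length (sm X E Dq) = mod_length (sm I E Dq) + mod_length (sm Cc E Gq)"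
    using len_add by blast
  have e3: "mod_length (sm X E Dq) = (\<Sum>\<alpha>\<in>Aout. mod_length (sm (Mv (t \<alpha>)) E (\<lambda>\<phi>. \<phi> (t \<alpha>))))"
    using len_X by blast
  have e4: "esub V A s t Mv Ma j = sm (Mv j) E (\<lambda>\<phi>. \<phi> j)" for j by (rule esub_gen)
  have e5: "mod_length (sm I E Dq) = mod_length (sm (Mv i) E (\<lambda>\<phi>. \<phi> i))"
    by (rule mod_length_cong) (rule len_I[symmetric])
  have h: "mod_length (sm Cc E Gq) + mod_length (sm (Mv i) E (\<lambda>\<phi>. \<phi> i)) =
     (\<Sum>\<alpha>\<in>Aout. mod_length (sm (Mv (t \<alpha>)) E (\<lambda>\<phi>. \<phi> (t \<alpha>))))"
    using e2 e3 e5 by simp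
  have "int (mod_length (sm Cc E Gq) + mod_length (sm (Mv i) E (\<lambda>\<phi>. \<phi> i))) =
     int (\<Sum>\<alpha>\<in>Aout. mod_length (sm (Mv (t \<alpha>)) E (\<lambda>\<phi>. \<phi> (t \<alpha>))))" using h by simp
  then have "int (mod_length (sm Cc E Gq)) + int (mod_length (esub V A s t Mv Ma i)) =
      (\<Sum>\<alpha>\<in>Aout. int (mod_length (esub V A s t Mv Ma (t \<alpha>))))"
    unfolding e4 by (simp only: of_nat_add of_nat_sum)
  then show ?thesis unfolding e1 by linarith
qed

end



theorem lemma3:
  fixes V :: "'v set" and A :: "'a set" and s t :: "'a \<Rightarrow> 'v"
    and Mv :: "'v \<Rightarrow> ('w \<Rightarrow> 'k::field) set" and Ma :: "'a \<Rightarrow> ('w \<Rightarrow> 'k) \<Rightarrow> ('w \<Rightarrow> 'k)"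
    and i :: 'v
  assumes "finite_quiver V A s t"
    and "connected_quiver V A s t"
    and "no_oriented_cycles V A s t"
    and "generic V A s t Mv Ma"
  shows "(is_sink V A s t i \<longrightarrow>
            Dim V A (rev_s i s t) (rev_t i s t)
                (sink_space V A s t Mv Ma i) (sink_map V A s t Mv Ma i)
              = refl_vec V A s t i (Dim V A s t Mv Ma))
       \<and> (is_source V A s t i \<longrightarrow>
            Dim V A (rev_s i s t) (rev_t i s t)
                (source_space V A s t Mv Ma i) (source_map V A s t Mv Ma i)
              = refl_vec V A s t i (Dim V A s t Mv Ma))"
proof (intro conjI impI)
  assume sk: "is_sink V A s t i"
  interpret S: gsink V A s t Mv Ma i
    by unfold_locales (use assms sk in auto)
  show "Dim V A (rev_s i s t) (rev_t i s t) (sink_space V A s t Mv Ma i) (sink_map V A s t Mv Ma i)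
      = refl_vec V A s t i (Dim V A s t Mv Ma)"
  proof (rule ext)
    fix j
    show "Dim V A (rev_s i s t) (rev_t i s t) (sink_space V A s t Mv Ma i) (sink_map V A s t Mv Ma i) j
      = refl_vec V A s t i (Dim V A s t Mv Ma) j"
    proof (cases "j = i")
      case True
      have set: "{\<alpha>\<in>A. s \<alpha> = i \<or> t \<alpha> = i} = S.Ain" unfolding S.Ain_def using S.s_ne by auto
      have "(\<Sum>\<alpha>\<in>{\<alpha>\<in>A. s \<alpha> = i \<or> t \<alpha> = i}. Dim V A s t Mv Ma (if s \<alpha> = i then t \<alpha> else s \<alpha>))
          = (\<Sum>\<alpha>\<in>S.Ain. int (mod_length (esub V A s t Mv Ma (s \<alpha>))))"
        unfolding set
      proof (rule sum.cong)
        fix \<alpha> assume a: "\<alpha> \<in> S.Ain"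
        then have "\<alpha> \<in> A" using S.Ain_A by blast
        then show "Dim V A s t Mv Ma (if s \<alpha> = i then t \<alpha> else s \<alpha>) = int (mod_length (esub V A s t Mv Ma (s \<alpha>)))"
          using S.s_ne S.st_V unfolding Dim_def by simp
      qed simp
      then show ?thesis using True S.dim_i S.iV unfolding refl_vec_def Dim_def by simp
    next
      case False
      then show ?thesis using S.dim_ne unfolding refl_vec_def Dim_def by simp
    qed
  qed
next
  assume so: "is_source V A s t i"
  interpret T: gsource V A s t Mv Ma i
    by unfold_locales (use assms so in auto)
  show "Dim V A (rev_s i s t) (rev_t i s t) (source_space V A s t Mv Ma i) (source_map V A s t Mv Ma i)
      = refl_vec V A s t i (Dim V A s t Mv Ma)"
  proof (rule ext)
    fix j
    show "Dim V A (rev_s i s t) (rev_t i s t) (source_space V A s t Mv Ma i) (source_map V A s t Mv Ma i) j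
      = refl_vec V A s t i (Dim V A s t Mv Ma) j"
    proof (cases "j = i")
      case True
      have set: "{\<alpha>\<in>A. s \<alpha> = i \<or> t \<alpha> = i} = T.Aout" unfolding T.Aout_def using T.t_ne by auto
      have "(\<Sum>\<alpha>\<in>{\<alpha>\<in>A. s \<alpha> = i \<or> t \<alpha> = i}. Dim V A s t Mv Ma (if s \<alpha> = i then t \<alpha> else s \<alpha>))
          = (\<Sum>\<alpha>\<in>T.Aout. int (mod_length (esub V A s t Mv Ma (t \<alpha>))))"
        unfolding set
      proof (rule sum.cong)
        fix \<alpha> assume a: "\<alpha> \<in> T.Aout"
        then have "\<alpha> \<in> A" "s \<alpha> = i" using T.Aout_A by blast+
        then show "Dim V A s t Mv Ma (if s \<alpha> = i then t \<alpha> else s \<alpha>) = int (mod_length (esub V A s t Mv Ma (t \<alpha>)))"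
          using T.st_V unfolding Dim_def by simp
      qed simp
      then show ?thesis using True T.dim_i T.iV unfolding refl_vec_def Dim_def by simp
    next
      case False
      then show ?thesis using T.dim_ne unfolding refl_vec_def Dim_def by simp
    qed
  qed
qed


end
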